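(* Let $F|R$ be an extension of ordered fields with canonical valuation $v$ and assume that $vR$ is a convex subgroup of $vF$. Then the injective maps $\tilde\iota:\mathcal C(R)\to\mathcal C(F)$ that are continuous with respect to the full topologies and compatible with restriction are exactly the maps constructed as follows: for a non-ball cut $C=(D,E)$ of $R$, $\tilde\iota(C)$ is one of $D^{+}_F$ or $E^{-}_F$; if $C$ is the lower edge $B_0^-$ (resp. upper edge $B_0^+$) in $R$ of a ball $B_0\neq R$ with ball complement $(D,E)$ in $R$, then $\tilde\iota(C)=D^{+}_F$ (resp. $E^{-}_F$); and $\tilde\iota((\emptyset,R))=R^{-}_F$, $\tilde\iota((R,\emptyset))=R^{+}_F$.
   Context: The canonical valuation $v$ of an ordered field has as valuation ring the convex hull of $\mathbb Z$. For an ordered field $K$, a cut is a pair $(D,E)$ with $D<E$, $D\cup E=K$; $\mathcal C(K)$ is the set of cuts, ordered by $(D_1,E_1)<(D_2,E_2)$ iff $D_1\subsetneq D_2$. For nonempty $A\subseteq K$, $A^+=(D,K\setminus D)$ with $D$ the smallest initial segment containing $A$, and $A^-=(K\setminus E,E)$ with $E$ the smallest final segment containing $A$; for $A\subseteq R$, $A^{\pm}_F$ are these cuts taken in $F$. For $a\in K$ and a final segment $S$ of $vK$ (possibly empty), $B_S(a,K)=\{b\in K\mid v(a-b)\in S\cup\{\infty\}\}$ is a ball; a ball complement of a ball $B$ is $(D,E)$ with $D<B<E$, $D\cup B\cup E=K$. A cut is a ball cut if it is $B^+$ (upper edge) or $B^-$ (lower edge) of a ball $B$, otherwise a non-ball cut.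 Two cuts are equivalent if equal or the lower and upper edge of the same ball; a subset of $\mathcal C(K)$ is full if closed under equivalence. The interval topology on $\mathcal C(K)$ has basic open sets $(C_1,C_2)$, $(C_1,(K,\emptyset)]$, $[(\emptyset,K),C_2)$; the full topology consists of all full sets open in the interval topology. Restriction of a cut $(D',E')$ of $F$ to $R$ is $(D'\cap R,E'\cap R)$; $\tilde\iota$ is compatible with restriction if the restriction of $\tilde\iota(C)$ is $C$ for all $C$. *)

theory Defs
  imports "HOL-Analysis.Analysis"
begin

text \<open>The big ordered field F is modelled as a type of class linordered_field (F = UNIV);
the subfield R is a subset of it carrying the induced order.\<close>

definition subfield :: "'a::linordered_field set \<Rightarrow> bool" where
  "subfield R \<longleftrightarrow> 0 \<in> R \<and> 1 \<in> R \<and>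
     (\<forall>x\<in>R. \<forall>y\<in>R. x + y \<in> R \<and> x - y \<in> R \<and> x * y \<in> R) \<and>
     (\<forall>x\<in>R. inverse x \<in> R)"

text \<open>Canonical valuation: valuation ring = convex hull of the integers.\<close>
definition can_val_ring :: "'a::linordered_field set" where
  "can_val_ring = {x. \<exists>n::nat. \<bar>x\<bar> \<le> of_nat n}"

text \<open>val_le a b  means  v(a) \<le> v(b)  (with v(0) = \<infinity>).\<close>
definition val_le :: "'a::linordered_field \<Rightarrow> 'a \<Rightarrow> bool" where
  "val_le a b \<longleftrightarrow> b = 0 \<or> (a \<noteq> 0 \<and> b / a \<in> can_val_ring)"

text \<open>vR is a convex subset (subgroup) of vF.\<close>
definition val_convex :: "'a::linordered_field set \<Rightarrow> bool" where
  "val_convex R \<longleftrightarrow> (\<forall>a1\<in>R - {0}. \<forall>a2\<in>R - {0}. \<forall>b. b \<noteq> 0 \<and> val_le a1 b \<and> val_le b a2 \<longrightarrow>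
      (\<exists>c\<in>R - {0}. val_le c b \<and> val_le b c))"

text \<open>A final segment S of vK, represented by the (v-saturated) set of nonzero elements of K
  whose value lies in S.\<close>
definition final_seg :: "'a::linordered_field set \<Rightarrow> 'a set \<Rightarrow> bool" where
  "final_seg K S \<longleftrightarrow> S \<subseteq> K - {0} \<and> (\<forall>x\<in>S. \<forall>y\<in>K - {0}. val_le x y \<longrightarrow> y \<in> S)"

text \<open>B_S(a,K) = {b \<in> K. v(a-b) \<in> S \<union> {\<infinity>}}\<close>
definition ball_S :: "'a::linordered_field set \<Rightarrow> 'a set \<Rightarrow> 'a \<Rightarrow> 'a set" where
  "ball_S K S a = {b\<in>K. a - b = 0 \<or> a - b \<in> S}"

definition is_ball :: "'a::linordered_field set \<Rightarrow> 'a set \<Rightarrow> bool" where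
  "is_ball K B \<longleftrightarrow> (\<exists>a\<in>K. \<exists>S. final_seg K S \<and> B = ball_S K S a)"

definition ball_compl :: "'a::linordered_field set \<Rightarrow> 'a set \<Rightarrow> 'a set \<Rightarrow> 'a set \<Rightarrow> bool" where
  "ball_compl K B D E \<longleftrightarrow> (\<forall>d\<in>D. \<forall>b\<in>B. d < b) \<and> (\<forall>b\<in>B. \<forall>e\<in>E. b < e) \<and> D \<union> B \<union> E = K"

definition cuts :: "'a::linordered_field set \<Rightarrow> ('a set \<times> 'a set) set" where
  "cuts K = {(D, E). (\<forall>d\<in>D. \<forall>e\<in>E. d < e) \<and> D \<union> E = K}"

definition cut_less :: "('a set \<times> 'a set) \<Rightarrow> ('a set \<times> 'a set) \<Rightarrow> bool" where
  "cut_less C1 C2 \<longleftrightarrow> fst C1 \<subset> fst C2"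

definition upper_cut :: "'a::linordered_field set \<Rightarrow> 'a set \<Rightarrow> ('a set \<times> 'a set)" where
  "upper_cut K A = (let D = {x\<in>K. \<exists>a\<in>A. x \<le> a} in (D, K - D))"

definition lower_cut :: "'a::linordered_field set \<Rightarrow> 'a set \<Rightarrow> ('a set \<times> 'a set)" where
  "lower_cut K A = (let E = {x\<in>K. \<exists>a\<in>A. a \<le> x} in (K - E, E))"

definition ball_cut :: "'a::linordered_field set \<Rightarrow> ('a set \<times> 'a set) \<Rightarrow> bool" where
  "ball_cut K C \<longleftrightarrow> (\<exists>B. is_ball K B \<and> (C = upper_cut K B \<or> C = lower_cut K B))"

definition cut_equiv :: "'a::linordered_field set \<Rightarrow> ('a set \<times> 'a set) \<Rightarrow> ('a set \<times> 'a set) \<Rightarrow> bool" where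
  "cut_equiv K C1 C2 \<longleftrightarrow> C1 = C2 \<or>
     (\<exists>B. is_ball K B \<and> {C1, C2} = {lower_cut K B, upper_cut K B})"

definition full_set :: "'a::linordered_field set \<Rightarrow> ('a set \<times> 'a set) set \<Rightarrow> bool" where
  "full_set K U \<longleftrightarrow> U \<subseteq> cuts K \<and> (\<forall>C1\<in>U. \<forall>C2\<in>cuts K. cut_equiv K C1 C2 \<longrightarrow> C2 \<in> U)"

definition interval_top :: "'a::linordered_field set \<Rightarrow> ('a set \<times> 'a set) topology" where
  "interval_top K = topology_generated_by
     ({{C\<in>cuts K. cut_less C1 C \<and> cut_less C C2} | C1 C2. C1 \<in> cuts K \<and> C2 \<in> cuts K}
      \<union> {{C\<in>cuts K. cut_less C1 C} | C1. C1 \<in> cuts K}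
      \<union> {{C\<in>cuts K. cut_less C C2} | C2. C2 \<in> cuts K})"

definition full_top :: "'a::linordered_field set \<Rightarrow> ('a set \<times> 'a set) topology" where
  "full_top K = topology (\<lambda>U. openin (interval_top K) U \<and> full_set K U)"

definition restrict_cut :: "'a set \<Rightarrow> ('a set \<times> 'a set) \<Rightarrow> ('a set \<times> 'a set)" where
  "restrict_cut R C = (fst C \<inter> R, snd C \<inter> R)"

end

theory Submission
  imports Defs
begin

lemma val_le_iff: "a \<noteq> 0 \<Longrightarrow> val_le a b \<longleftrightarrow> (\<exists>n::nat. \<bar>b\<bar> \<le> of_nat n * \<bar>a\<bar>)"
proof -
  assume a: "a \<noteq> 0"
  have "\<bar>b / a\<bar> \<le> of_nat n \<longleftrightarrow> \<bar>b\<bar> \<le> of_nat n * \<bar>a\<bar>" for n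
    using a by (simp add: abs_divide divide_le_eq)
  thus ?thesis using a unfolding val_le_def can_val_ring_def
    by (auto intro: exI[of _ 0])
qed

lemma not_val_le: "\<not> val_le a b \<longleftrightarrow> b \<noteq> 0 \<and> (a = 0 \<or> (\<forall>n::nat. of_nat n * \<bar>a\<bar> < \<bar>b\<bar>))"
proof (cases "a = 0")
  case True thus ?thesis by (simp add: val_le_def)
next
  case False
  have "val_le a b \<longleftrightarrow> (\<exists>n::nat. \<bar>b\<bar> \<le> of_nat n * \<bar>a\<bar>)" using False by (rule val_le_iff)
  moreover have "b = 0 \<Longrightarrow> val_le a b" by (simp add: val_le_def)
  moreover have "\<not> (\<forall>n::nat. of_nat n * \<bar>a\<bar> < \<bar>0::'a\<bar>)" by (metis abs_zero mult_zero_left of_nat_0 order_less_irrefl)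
  ultimately show ?thesis using False by (auto simp: not_le)
qed

lemma val_le_0 [simp]: "val_le a 0" by (simp add: val_le_def)

lemma val_le_nz: "val_le a b \<Longrightarrow> b \<noteq> 0 \<Longrightarrow> a \<noteq> 0"
  by (simp add: val_le_def)

lemma val_le_trans: "val_le a b \<Longrightarrow> val_le b c \<Longrightarrow> val_le a c"
proof (cases "c = 0")
  case False
  assume ab: "val_le a b" and bc: "val_le b c"
  hence b: "b \<noteq> 0" using False val_le_nz by blast
  hence a: "a \<noteq> 0" using ab val_le_nz by blast
  obtain m::nat where m: "\<bar>c\<bar> \<le> of_nat m * \<bar>b\<bar>" using bc b val_le_iff by blast
  obtain n::nat where n: "\<bar>b\<bar> \<le> of_nat n * \<bar>a\<bar>" using ab a val_le_iff by blast
  have "of_nat m * \<bar>b\<bar> \<le> of_nat m * (of_nat n * \<bar>a\<bar>)" using n by (simp add: mult_left_mono)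
  hence "\<bar>c\<bar> \<le> of_nat (m*n) * \<bar>a\<bar>" using m by (simp add: mult.assoc)
  thus ?thesis using a val_le_iff by blast
qed simp

lemma val_le_abs_le: "a \<noteq> 0 \<Longrightarrow> \<bar>b\<bar> \<le> \<bar>a\<bar> \<Longrightarrow> val_le a b"
  using val_le_iff[of a b] by (metis mult_1 of_nat_1)

lemma val_le_total: "val_le a b \<or> val_le b a"
proof (cases "a = 0 \<or> b = 0")
  case True thus ?thesis by auto
next
  case False thus ?thesis using val_le_abs_le[of a b] val_le_abs_le[of b a] by linarith
qed

lemma val_le_refl: "val_le a a"
  by (cases "a = 0") (auto intro: val_le_abs_le)

lemma val_le_cong: "\<bar>a\<bar> = \<bar>a'\<bar> \<Longrightarrow> \<bar>b\<bar> = \<bar>b'\<bar> \<Longrightarrow> val_le a b = val_le a' b'"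
proof (cases "a = 0")
  case True
  assume h: "\<bar>a\<bar> = \<bar>a'\<bar>" "\<bar>b\<bar> = \<bar>b'\<bar>"
  hence "a' = 0" using True by simp
  moreover have "b = 0 \<longleftrightarrow> b' = 0" using h(2) by (metis abs_eq_0)
  ultimately show ?thesis using True by (simp add: val_le_def)
next
  case False
  assume h: "\<bar>a\<bar> = \<bar>a'\<bar>" "\<bar>b\<bar> = \<bar>b'\<bar>"
  hence "a' \<noteq> 0" using False by auto
  thus ?thesis using False h by (simp add: val_le_iff)
qed

lemma val_le_scale: "val_le a (of_nat n * a)"
  by (cases "a = 0") (auto simp: val_le_iff abs_mult intro: exI[of _ n])

lemma val_le_scale2: "n > 0 \<Longrightarrow> val_le (a / of_nat n) a"
proof (cases "a = 0")
  case False
  assume n: "n > 0"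
  have "\<bar>a\<bar> = of_nat n * \<bar>a / of_nat n\<bar>" using n by (simp add: abs_divide)
  moreover have "a / of_nat n \<noteq> 0" using False n by simp
  ultimately show ?thesis by (subst val_le_iff) (auto intro!: exI[of _ n])
qed simp

lemma not_val_le_lt: "\<not> val_le a b \<Longrightarrow> \<bar>a\<bar> < \<bar>b\<bar>"
  using not_val_le[of a b] by (metis abs_zero abs_not_less_zero mult_1 of_nat_1 zero_less_abs_iff)

lemma not_val_le_lt2: "\<not> val_le a b \<Longrightarrow> of_nat n * \<bar>a\<bar> < \<bar>b\<bar>"
  using not_val_le[of a b] by auto

lemma fs_sat: "final_seg K S \<Longrightarrow> s \<in> S \<Longrightarrow> t \<in> K \<Longrightarrow> t \<noteq> 0 \<Longrightarrow> val_le s t \<Longrightarrow> t \<in> S"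
  unfolding final_seg_def by blast

lemma fs_sub: "final_seg K S \<Longrightarrow> S \<subseteq> K - {0}"
  unfolding final_seg_def by blast

lemma fs_notin: "final_seg K S \<Longrightarrow> s \<in> S \<Longrightarrow> t \<in> K \<Longrightarrow> t \<noteq> 0 \<Longrightarrow> t \<notin> S \<Longrightarrow> \<not> val_le s t"
  using fs_sat by blast



lemma sf_0: "subfield R \<Longrightarrow> 0 \<in> R" by (simp add: subfield_def)
lemma sf_1: "subfield R \<Longrightarrow> 1 \<in> R" by (simp add: subfield_def)
lemma sf_add: "subfield R \<Longrightarrow> x \<in> R \<Longrightarrow> y \<in> R \<Longrightarrow> x + y \<in> R" by (simp add: subfield_def)
lemma sf_diff: "subfield R \<Longrightarrow> x \<in> R \<Longrightarrow> y \<in> R \<Longrightarrow> x - y \<in> R" by (simp add: subfield_def)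
lemma sf_mult: "subfield R \<Longrightarrow> x \<in> R \<Longrightarrow> y \<in> R \<Longrightarrow> x * y \<in> R" by (simp add: subfield_def)
lemma sf_inv: "subfield R \<Longrightarrow> x \<in> R \<Longrightarrow> inverse x \<in> R" by (simp add: subfield_def)
lemma sf_uminus: "subfield R \<Longrightarrow> x \<in> R \<Longrightarrow> - x \<in> R"
  using sf_diff[of R 0 x] sf_0 by auto
lemma sf_divide: "subfield R \<Longrightarrow> x \<in> R \<Longrightarrow> y \<in> R \<Longrightarrow> x / y \<in> R"
  by (simp add: divide_inverse sf_mult sf_inv)
lemma sf_of_nat: "subfield R \<Longrightarrow> of_nat n \<in> R"
  by (induction n) (auto simp: sf_0 sf_1 sf_add)
lemma sf_abs: "subfield R \<Longrightarrow> x \<in> R \<Longrightarrow> \<bar>x\<bar> \<in> R"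
  by (simp add: abs_if sf_uminus)
lemma subfield_UNIV: "subfield (UNIV :: 'a::linordered_field set)"
  by (simp add: subfield_def)

definition dc :: "'a::linordered_field set \<Rightarrow> 'a set \<Rightarrow> 'a set" where
  "dc K A = {x\<in>K. \<exists>a\<in>A. x \<le> a}"
definition uc :: "'a::linordered_field set \<Rightarrow> 'a set \<Rightarrow> 'a set" where
  "uc K A = {x\<in>K. \<exists>a\<in>A. a \<le> x}"

lemma upper_cut_eq: "upper_cut K A = (dc K A, K - dc K A)"
  by (simp add: upper_cut_def dc_def Let_def)
lemma lower_cut_eq: "lower_cut K A = (K - uc K A, uc K A)"
  by (simp add: lower_cut_def uc_def Let_def)

lemma cuts_iff: "(D, E) \<in> cuts K \<longleftrightarrow> (\<forall>d\<in>D. \<forall>e\<in>E. d < e) \<and> D \<union> E = K"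
  by (simp add: cuts_def)

lemma cutsD: "Z \<in> cuts K \<Longrightarrow> snd Z = K - fst Z \<and> fst Z \<subseteq> K"
  unfolding cuts_def by (cases Z) auto

lemma cut_eqI: "Z1 \<in> cuts K \<Longrightarrow> Z2 \<in> cuts K \<Longrightarrow> fst Z1 = fst Z2 \<Longrightarrow> Z1 = Z2"
proof -
  assume a: "Z1 \<in> cuts K" "Z2 \<in> cuts K" "fst Z1 = fst Z2"
  have "snd Z1 = snd Z2" using cutsD[OF a(1)] cutsD[OF a(2)] a(3) by simp
  thus ?thesis using a(3) by (rule prod_eqI[rotated])
qed

lemma cut_down: "Z \<in> cuts K \<Longrightarrow> x \<in> fst Z \<Longrightarrow> y \<in> K \<Longrightarrow> y \<le> x \<Longrightarrow> y \<in> fst Z"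
proof -
  assume a: "Z \<in> cuts K" "x \<in> fst Z" "y \<in> K" "y \<le> x"
  obtain D E where Z: "Z = (D, E)" by (cases Z)
  have "y \<notin> E" using a Z unfolding cuts_def by fastforce
  thus ?thesis using a Z unfolding cuts_def by auto
qed

lemma cut_up: "Z \<in> cuts K \<Longrightarrow> x \<in> snd Z \<Longrightarrow> y \<in> K \<Longrightarrow> x \<le> y \<Longrightarrow> y \<in> snd Z"
proof -
  assume a: "Z \<in> cuts K" "x \<in> snd Z" "y \<in> K" "x \<le> y"
  obtain D E where Z: "Z = (D, E)" by (cases Z)
  have "y \<notin> D" using a Z unfolding cuts_def by fastforce
  thus ?thesis using a Z unfolding cuts_def by auto
qed

lemma cut_lt: "Z \<in> cuts K \<Longrightarrow> x \<in> fst Z \<Longrightarrow> y \<in> snd Z \<Longrightarrow> x < y"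
  unfolding cuts_def by (cases Z) auto

lemma cut_fst_snd: "Z \<in> cuts K \<Longrightarrow> x \<in> K \<Longrightarrow> x \<notin> fst Z \<Longrightarrow> x \<in> snd Z"
  using cutsD by blast

lemma cut_linear: "Z1 \<in> cuts K \<Longrightarrow> Z2 \<in> cuts K \<Longrightarrow> fst Z1 \<subseteq> fst Z2 \<or> fst Z2 \<subseteq> fst Z1"
proof (rule ccontr)
  assume z: "Z1 \<in> cuts K" "Z2 \<in> cuts K" and n: "\<not> (fst Z1 \<subseteq> fst Z2 \<or> fst Z2 \<subseteq> fst Z1)"
  then obtain x y where x: "x \<in> fst Z1" "x \<notin> fst Z2" and y: "y \<in> fst Z2" "y \<notin> fst Z1" by blast
  have "x \<in> K" "y \<in> K" using x y z cutsD by blast+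
  show False
  proof (cases "x \<le> y")
    case True thus False using cut_down[OF z(2) y(1) \<open>x\<in>K\<close>] x by blast
  next
    case False thus False using cut_down[OF z(1) x(1) \<open>y\<in>K\<close>] y by auto
  qed
qed

lemma upper_cut_cuts: "upper_cut K A \<in> cuts K"
proof -
  have "d < e" if hd: "d \<in> dc K A" and he: "e \<in> K - dc K A" for d e
  proof (rule ccontr)
    assume "\<not> d < e"
    hence "e \<le> d" by simp
    moreover obtain a where "a \<in> A" "d \<le> a" using hd by (auto simp: dc_def)
    ultimately have "e \<in> dc K A" using he by (auto simp: dc_def intro: order.trans)
    thus False using he by blast
  qed
  moreover have "dc K A \<subseteq> K" by (auto simp: dc_def)
  ultimately show ?thesis unfolding upper_cut_eq cuts_def by auto
qed

lemma lower_cut_cuts: "lower_cut K A \<in> cuts K"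
proof -
  have "d < e" if he: "e \<in> uc K A" and hd: "d \<in> K - uc K A" for d e
  proof (rule ccontr)
    assume "\<not> d < e"
    hence "e \<le> d" by simp
    moreover obtain a where "a \<in> A" "a \<le> e" using he by (auto simp: uc_def)
    ultimately have "d \<in> uc K A" using hd by (auto simp: uc_def intro: order.trans)
    thus False using hd by blast
  qed
  moreover have "uc K A \<subseteq> K" by (auto simp: uc_def)
  ultimately show ?thesis unfolding lower_cut_eq cuts_def by auto
qed

lemma fst_upper_cut: "fst (upper_cut K A) = dc K A" by (simp add: upper_cut_eq)
lemma snd_upper_cut: "snd (upper_cut K A) = K - dc K A" by (simp add: upper_cut_eq)
lemma fst_lower_cut: "fst (lower_cut K A) = K - uc K A" by (simp add: lower_cut_eq)
lemma snd_lower_cut: "snd (lower_cut K A) = uc K A" by (simp add: lower_cut_eq)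

definition lo :: "'a::linordered_field set \<times> 'a set \<Rightarrow> 'a set \<times> 'a set" where
  "lo C = upper_cut UNIV (fst C)"
definition hi :: "'a::linordered_field set \<times> 'a set \<Rightarrow> 'a set \<times> 'a set" where
  "hi C = lower_cut UNIV (snd C)"

lemma lo_cuts: "lo C \<in> cuts UNIV" by (simp add: lo_def upper_cut_cuts)
lemma hi_cuts: "hi C \<in> cuts UNIV" by (simp add: hi_def lower_cut_cuts)

lemma fst_lo: "fst (lo C) = {y. \<exists>d\<in>fst C. y \<le> d}" by (simp add: lo_def fst_upper_cut dc_def)
lemma fst_hi: "fst (hi C) = {y. \<forall>e\<in>snd C. y < e}"
  by (auto simp: hi_def fst_lower_cut uc_def not_le)

lemma restrict_lo: "C \<in> cuts R \<Longrightarrow> restrict_cut R (lo C) = C"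
proof -
  assume C: "C \<in> cuts R"
  have "fst (lo C) \<inter> R = fst C"
  proof
    show "fst (lo C) \<inter> R \<subseteq> fst C"
    proof
      fix y assume "y \<in> fst (lo C) \<inter> R"
      then obtain d where "d \<in> fst C" "y \<le> d" "y \<in> R" by (auto simp: fst_lo)
      thus "y \<in> fst C" using cut_down[OF C] by blast
    qed
    show "fst C \<subseteq> fst (lo C) \<inter> R" using cutsD[OF C] by (auto simp: fst_lo)
  qed
  moreover have "snd (lo C) = UNIV - fst (lo C)" using lo_cuts cutsD by blast
  moreover have "snd C = R - fst C" using C cutsD by blast
  ultimately show ?thesis unfolding restrict_cut_def by (intro prod_eqI) auto
qed

lemma restrict_hi: "C \<in> cuts R \<Longrightarrow> restrict_cut R (hi C) = C"
proof -
  assume C: "C \<in> cuts R"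
  have "snd (hi C) \<inter> R = snd C"
  proof
    show "snd (hi C) \<inter> R \<subseteq> snd C"
    proof
      fix y assume "y \<in> snd (hi C) \<inter> R"
      then obtain e where "e \<in> snd C" "e \<le> y" "y \<in> R" by (auto simp: hi_def snd_lower_cut uc_def)
      thus "y \<in> snd C" using cut_up[OF C] by blast
    qed
    show "snd C \<subseteq> snd (hi C) \<inter> R" using cutsD[OF C] by (auto simp: hi_def snd_lower_cut uc_def)
  qed
  moreover have "fst (hi C) = UNIV - snd (hi C)" using hi_cuts cutsD by blast
  moreover have "fst C = R - snd C" using C cutsD by blast
  ultimately show ?thesis unfolding restrict_cut_def by (intro prod_eqI) auto
qed

lemma squeeze:
  assumes C: "C \<in> cuts R" and Z: "Z \<in> cuts UNIV" and r: "restrict_cut R Z = C"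
  shows "fst (lo C) \<subseteq> fst Z" "fst Z \<subseteq> fst (hi C)"
proof -
  have f: "fst C = fst Z \<inter> R" and s: "snd C = snd Z \<inter> R" using r by (auto simp: restrict_cut_def)
  show "fst (lo C) \<subseteq> fst Z"
  proof
    fix y assume "y \<in> fst (lo C)"
    then obtain d where "d \<in> fst C" "y \<le> d" by (auto simp: fst_lo)
    thus "y \<in> fst Z" using f cut_down[OF Z, of d y] by blast
  qed
  show "fst Z \<subseteq> fst (hi C)"
  proof
    fix y assume "y \<in> fst Z"
    thus "y \<in> fst (hi C)" using s cut_lt[OF Z, of y] by (auto simp: fst_hi)
  qed
qed

lemma fst_mono_strict:
  assumes Z1: "Z1 \<in> cuts UNIV" and Z2: "Z2 \<in> cuts UNIV" and r1: "r \<in> snd Z1" and r2: "r \<in> fst Z2"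
  shows "fst Z1 \<subset> fst Z2"
proof -
  have "fst Z1 \<subseteq> fst Z2"
  proof
    fix y assume "y \<in> fst Z1"
    hence "y < r" using cut_lt[OF Z1] r1 by blast
    thus "y \<in> fst Z2" using cut_down[OF Z2 r2, of y] by simp
  qed
  moreover have "r \<notin> fst Z1" using r1 cutsD[OF Z1] by blast
  ultimately show ?thesis using r2 by blast
qed



lemma ball_mem: "b \<in> ball_S K S a \<longleftrightarrow> b \<in> K \<and> (a - b = 0 \<or> a - b \<in> S)"
  by (simp add: ball_S_def)

lemma ball_sub: "ball_S K S a \<subseteq> K" by (auto simp: ball_S_def)

lemma ball_center: "a \<in> K \<Longrightarrow> a \<in> ball_S K S a" by (simp add: ball_S_def)

lemma fs_abs: "final_seg K S \<Longrightarrow> u \<in> S \<Longrightarrow> w \<in> K \<Longrightarrow> \<bar>w\<bar> = \<bar>u\<bar> \<Longrightarrow> w \<in> S"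
proof -
  assume a: "final_seg K S" "u \<in> S" "w \<in> K" "\<bar>w\<bar> = \<bar>u\<bar>"
  have "u \<noteq> 0" using a fs_sub by blast
  hence "w \<noteq> 0" using a by auto
  moreover have "val_le u w" using a \<open>u \<noteq> 0\<close> by (intro val_le_abs_le) simp_all
  ultimately show ?thesis using fs_sat[OF a(1,2,3)] by blast
qed

lemma fs_add:
  assumes S: "final_seg K S" and K: "subfield K"
    and u: "u \<in> K" "u = 0 \<or> u \<in> S" and w: "w \<in> K" "w = 0 \<or> w \<in> S"
  shows "u + w = 0 \<or> u + w \<in> S"
proof (cases "u + w = 0")
  case False
  have uw: "u + w \<in> K" using u w K sf_add by blast
  show ?thesis
  proof (cases "\<bar>w\<bar> \<le> \<bar>u\<bar>")
    case True
    hence "u \<noteq> 0" using False by auto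
    hence uS: "u \<in> S" using u by blast
    have "\<bar>u + w\<bar> \<le> of_nat 2 * \<bar>u\<bar>" using True by simp
    hence "val_le u (u + w)" using \<open>u \<noteq> 0\<close> val_le_iff by blast
    thus ?thesis using fs_sat[OF S uS uw False] by blast
  next
    case F: False
    hence "w \<noteq> 0" by auto
    hence wS: "w \<in> S" using w by blast
    have "\<bar>u + w\<bar> \<le> of_nat 2 * \<bar>w\<bar>" using F by simp
    hence "val_le w (u + w)" using \<open>w \<noteq> 0\<close> val_le_iff by blast
    thus ?thesis using fs_sat[OF S wS uw False] by blast
  qed
qed simp

lemma fs_neg: "final_seg K S \<Longrightarrow> subfield K \<Longrightarrow> u \<in> S \<Longrightarrow> - u \<in> S"
  using fs_abs[of K S u "-u"] fs_sub[of K S] sf_uminus[of K u] by auto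

lemma ball_recenter:
  assumes S: "final_seg K S" and K: "subfield K" and b: "b \<in> ball_S K S a"
  shows "ball_S K S b = ball_S K S a"
proof -
  have bK: "b \<in> K" and ab: "a - b = 0 \<or> a - b \<in> S" using b by (auto simp: ball_S_def)
  have aK: "a \<in> K"
  proof (cases "a - b = 0")
    case True thus ?thesis using bK by simp
  next
    case False hence "a - b \<in> K" using ab fs_sub[OF S] by blast
    hence "(a - b) + b \<in> K" using sf_add[OF K _ bK] by blast
    thus ?thesis by simp
  qed
  have ba: "b - a = 0 \<or> b - a \<in> S" using ab fs_neg[OF S K, of "a - b"] by auto
  have abK: "a - b \<in> K" "b - a \<in> K" using aK bK K sf_diff by blast+
  show ?thesis
  proof (rule set_eqI)
    fix z
    show "z \<in> ball_S K S b \<longleftrightarrow> z \<in> ball_S K S a"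
    proof
      assume "z \<in> ball_S K S b"
      hence z: "z \<in> K" "b - z = 0 \<or> b - z \<in> S" by (auto simp: ball_S_def)
      have "b - z \<in> K" using z bK K sf_diff by blast
      from fs_add[OF S K abK(1) ab this z(2)] have "a - z = 0 \<or> a - z \<in> S" by simp
      thus "z \<in> ball_S K S a" using z by (simp add: ball_S_def)
    next
      assume "z \<in> ball_S K S a"
      hence z: "z \<in> K" "a - z = 0 \<or> a - z \<in> S" by (auto simp: ball_S_def)
      have "a - z \<in> K" using z aK K sf_diff by blast
      from fs_add[OF S K abK(2) ba this z(2)] have "b - z = 0 \<or> b - z \<in> S" by simp
      thus "z \<in> ball_S K S b" using z by (simp add: ball_S_def)
    qed
  qed
qed

lemma ball_lt_out:
  assumes S: "final_seg K S" and K: "subfield K" and aK: "a \<in> K"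
    and b: "b \<in> ball_S K S a" and z: "z \<in> K" "z \<notin> ball_S K S a"
  shows "\<bar>a - b\<bar> < \<bar>a - z\<bar>"
proof -
  have az: "a - z \<noteq> 0" "a - z \<notin> S" using z by (auto simp: ball_S_def)
  show ?thesis
  proof (cases "a - b = 0")
    case True thus ?thesis using az by simp
  next
    case False
    hence abS: "a - b \<in> S" using b by (auto simp: ball_S_def)
    have "a - z \<in> K" using aK z K sf_diff by blast
    hence "\<not> val_le (a - b) (a - z)" using fs_notin[OF S abS _ az(1) az(2)] by blast
    thus ?thesis by (rule not_val_le_lt)
  qed
qed

lemma ball_convex:
  assumes S: "final_seg K S" and K: "subfield K" and aK: "a \<in> K"
    and b1: "b1 \<in> ball_S K S a" and b2: "b2 \<in> ball_S K S a" and z: "z \<in> K" "b1 \<le> z" "z \<le> b2"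
  shows "z \<in> ball_S K S a"
proof (rule ccontr)
  assume n: "z \<notin> ball_S K S a"
  have "\<bar>a - b1\<bar> < \<bar>a - z\<bar>" "\<bar>a - b2\<bar> < \<bar>a - z\<bar>"
    using ball_lt_out[OF S K aK _ z(1) n] b1 b2 by blast+
  thus False using z by linarith
qed

lemma fs_comparable:
  assumes "final_seg K S1" "final_seg K S2"
  shows "S1 \<subseteq> S2 \<or> S2 \<subseteq> S1"
proof (rule ccontr)
  assume "\<not> (S1 \<subseteq> S2 \<or> S2 \<subseteq> S1)"
  then obtain s1 s2 where s: "s1 \<in> S1" "s1 \<notin> S2" "s2 \<in> S2" "s2 \<notin> S1" by blast
  have k: "s1 \<in> K - {0}" "s2 \<in> K - {0}" using s assms fs_sub by blast+
  show False
  proof (cases "val_le s1 s2")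
    case True thus False using fs_sat[OF assms(1) s(1), of s2] k s by blast
  next
    case False hence "val_le s2 s1" using val_le_total by blast
    thus False using fs_sat[OF assms(2) s(3), of s1] k s by blast
  qed
qed

lemma ball_mono: "S1 \<subseteq> S2 \<Longrightarrow> ball_S K S1 c \<subseteq> ball_S K S2 c"
  by (auto simp: ball_S_def)

lemma ball_nested:
  assumes S1: "final_seg K S1" and S2: "final_seg K S2" and K: "subfield K"
    and c1: "c \<in> ball_S K S1 a1" and c2: "c \<in> ball_S K S2 a2"
  shows "ball_S K S1 a1 \<subseteq> ball_S K S2 a2 \<or> ball_S K S2 a2 \<subseteq> ball_S K S1 a1"
proof -
  have "ball_S K S1 a1 = ball_S K S1 c" "ball_S K S2 a2 = ball_S K S2 c"
    using ball_recenter[OF S1 K c1] ball_recenter[OF S2 K c2] by simp_all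
  thus ?thesis using fs_comparable[OF S1 S2] ball_mono by metis
qed

definition bD :: "'a::linordered_field set \<Rightarrow> 'a set \<Rightarrow> 'a set" where
  "bD K B = {x\<in>K. \<forall>b\<in>B. x < b}"
definition bE :: "'a::linordered_field set \<Rightarrow> 'a set \<Rightarrow> 'a set" where
  "bE K B = {x\<in>K. \<forall>b\<in>B. b < x}"

lemma ball_compl_exists:
  assumes S: "final_seg K S" and K: "subfield K" and aK: "a \<in> K"
  shows "ball_compl K (ball_S K S a) (bD K (ball_S K S a)) (bE K (ball_S K S a))"
proof -
  let ?B = "ball_S K S a"
  have "x \<in> bD K ?B \<or> x \<in> ?B \<or> x \<in> bE K ?B" if x: "x \<in> K" for x
  proof (cases "x \<in> ?B")
    case False
    have lt: "\<bar>a - b\<bar> < \<bar>a - x\<bar>" if "b \<in> ?B" for b using ball_lt_out[OF S K aK that x False] .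
    show ?thesis
    proof (cases "x < a")
      case True
      hence "\<forall>b\<in>?B. x < b" using lt by fastforce
      thus ?thesis using x by (simp add: bD_def)
    next
      case F: False
      hence "x \<noteq> a" using False aK ball_center by metis
      hence "\<forall>b\<in>?B. b < x" using lt F by fastforce
      thus ?thesis using x by (simp add: bE_def)
    qed
  qed simp
  moreover have "bD K ?B \<subseteq> K" "bE K ?B \<subseteq> K" "?B \<subseteq> K" by (auto simp: bD_def bE_def ball_sub)
  ultimately show ?thesis unfolding ball_compl_def bD_def bE_def by blast
qed

lemma ball_compl_unique:
  assumes "ball_compl K B D E" "B \<noteq> {}" "B \<subseteq> K"
  shows "D = bD K B" "E = bE K B"
proof -
  have h: "\<forall>d\<in>D. \<forall>b\<in>B. d < b" "\<forall>b\<in>B. \<forall>e\<in>E. b < e" "D \<union> B \<union> E = K"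
    using assms(1) unfolding ball_compl_def by blast+
  obtain b0 where b0: "b0 \<in> B" using assms(2) by blast
  show "D = bD K B"
  proof
    show "D \<subseteq> bD K B" using h by (auto simp: bD_def)
    show "bD K B \<subseteq> D"
    proof
      fix x assume x: "x \<in> bD K B"
      hence "x \<in> K" "x < b0" using b0 by (auto simp: bD_def)
      moreover have "x \<notin> B" using x by (auto simp: bD_def)
      moreover have "x \<notin> E" using h(2) b0 \<open>x < b0\<close> by (meson less_asym)
      ultimately show "x \<in> D" using h(3) by blast
    qed
  qed
  show "E = bE K B"
  proof
    show "E \<subseteq> bE K B" using h by (auto simp: bE_def)
    show "bE K B \<subseteq> E"
    proof
      fix x assume x: "x \<in> bE K B"
      hence "x \<in> K" "b0 < x" using b0 by (auto simp: bE_def)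
      moreover have "x \<notin> B" using x by (auto simp: bE_def)
      moreover have "x \<notin> D" using h(1) b0 \<open>b0 < x\<close> by (meson less_asym)
      ultimately show "x \<in> E" using h(3) by blast
    qed
  qed
qed

lemma lower_cut_compl:
  assumes "ball_compl K B D E" "B \<noteq> {}" "B \<subseteq> K"
  shows "lower_cut K B = (D, B \<union> E)"
proof -
  have h: "\<forall>d\<in>D. \<forall>b\<in>B. d < b" "\<forall>b\<in>B. \<forall>e\<in>E. b < e" "D \<union> B \<union> E = K"
    using assms(1) unfolding ball_compl_def by blast+
  obtain b0 where b0: "b0 \<in> B" using assms(2) by blast
  have u: "uc K B = B \<union> E"
  proof
    show "uc K B \<subseteq> B \<union> E"
    proof
      fix x assume "x \<in> uc K B"
      then obtain b where "b \<in> B" "b \<le> x" "x \<in> K" by (auto simp: uc_def)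
      hence "x \<notin> D" using h(1) by (meson leD)
      thus "x \<in> B \<union> E" using h(3) \<open>x \<in> K\<close> by blast
    qed
    show "B \<union> E \<subseteq> uc K B"
    proof
      fix x assume x: "x \<in> B \<union> E"
      hence "x \<in> K" using h(3) by blast
      moreover have "\<exists>b\<in>B. b \<le> x"
        using x b0 h(2) by (meson less_imp_le order_refl Un_iff)
      ultimately show "x \<in> uc K B" by (simp add: uc_def)
    qed
  qed
  have "D \<inter> B = {}" using h(1) by (meson disjoint_iff less_irrefl)
  moreover have "D \<inter> E = {}" using h(1,2) b0 by (meson disjoint_iff less_asym less_trans)
  ultimately have "K - (B \<union> E) = D" using h(3) by blast
  thus ?thesis using u by (simp add: lower_cut_eq)
qed

lemma upper_cut_compl:
  assumes "ball_compl K B D E" "B \<noteq> {}" "B \<subseteq> K"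
  shows "upper_cut K B = (D \<union> B, E)"
proof -
  have h: "\<forall>d\<in>D. \<forall>b\<in>B. d < b" "\<forall>b\<in>B. \<forall>e\<in>E. b < e" "D \<union> B \<union> E = K"
    using assms(1) unfolding ball_compl_def by blast+
  obtain b0 where b0: "b0 \<in> B" using assms(2) by blast
  have u: "dc K B = D \<union> B"
  proof
    show "dc K B \<subseteq> D \<union> B"
    proof
      fix x assume "x \<in> dc K B"
      then obtain b where "b \<in> B" "x \<le> b" "x \<in> K" by (auto simp: dc_def)
      hence "x \<notin> E" using h(2) by (meson leD)
      thus "x \<in> D \<union> B" using h(3) \<open>x \<in> K\<close> by blast
    qed
    show "D \<union> B \<subseteq> dc K B"
    proof
      fix x assume x: "x \<in> D \<union> B"
      hence "x \<in> K" using h(3) by blast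
      moreover have "\<exists>b\<in>B. x \<le> b"
        using x b0 h(1) by (meson less_imp_le order_refl Un_iff)
      ultimately show "x \<in> dc K B" by (simp add: dc_def)
    qed
  qed
  have "E \<inter> B = {}" using h(2) by (meson disjoint_iff less_irrefl)
  moreover have "D \<inter> E = {}" using h(1,2) b0 by (meson disjoint_iff less_asym less_trans)
  ultimately have "K - (D \<union> B) = E" using h(3) by blast
  thus ?thesis using u by (simp add: upper_cut_eq)
qed

lemma ball_singleton: "a \<in> K \<Longrightarrow> ball_S K {} a = {a}"
  by (auto simp: ball_S_def)

lemma ball_no_min:
  assumes S: "final_seg K S" and K: "subfield K" and aK: "a \<in> K" and ne: "S \<noteq> {}"
    and b: "b \<in> ball_S K S a"
  shows "\<exists>b'\<in>ball_S K S a. b' < b" "\<exists>b'\<in>ball_S K S a. b < b'"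
proof -
  obtain s where s: "s \<in> S" using ne by blast
  have sK: "s \<in> K" "s \<noteq> 0" using s fs_sub[OF S] by blast+
  have as: "\<bar>s\<bar> \<in> S" "- \<bar>s\<bar> \<in> S" using fs_abs[OF S s] sf_abs[OF K sK(1)] sf_uminus[OF K sf_abs[OF K sK(1)]] by auto
  have B: "ball_S K S b = ball_S K S a" using ball_recenter[OF S K b] .
  have bK: "b \<in> K" using b ball_sub by blast
  have "b - \<bar>s\<bar> \<in> K" using sf_diff[OF K bK sf_abs[OF K sK(1)]] .
  hence "b - \<bar>s\<bar> \<in> ball_S K S b" using as(1) by (simp add: ball_S_def)
  moreover have "b - \<bar>s\<bar> < b" using sK by simp
  ultimately show "\<exists>b'\<in>ball_S K S a. b' < b" using B by blast
  have "b + \<bar>s\<bar> \<in> K" using sf_add[OF K bK sf_abs[OF K sK(1)]] .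
  hence "b + \<bar>s\<bar> \<in> ball_S K S b" using as(2) by (simp add: ball_S_def)
  moreover have "b < b + \<bar>s\<bar>" using sK by simp
  ultimately show "\<exists>b'\<in>ball_S K S a. b < b'" using B by blast
qed

lemma fs_full: "final_seg K (K - {0})" by (auto simp: final_seg_def)

lemma ball_full: "subfield K \<Longrightarrow> a \<in> K \<Longrightarrow> ball_S K (K - {0}) a = K"
  by (auto simp: ball_S_def sf_diff)

lemma ball_neq_full:
  assumes S: "final_seg K S" and K: "subfield K" and aK: "a \<in> K" and ne: "ball_S K S a \<noteq> K"
  shows "\<exists>t\<in>K. t \<noteq> 0 \<and> t \<notin> S"
proof (rule ccontr)
  assume "\<not> ?thesis"
  hence "S = K - {0}" using fs_sub[OF S] by blast
  thus False using ne ball_full[OF K aK] by simp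
qed

lemma is_ball_K: "subfield K \<Longrightarrow> a \<in> K \<Longrightarrow> is_ball K K"
  unfolding is_ball_def using fs_full ball_full by metis

lemma lower_cut_self: "lower_cut K K = ({}, K)"
  by (auto simp: lower_cut_eq uc_def)
lemma upper_cut_self: "upper_cut K K = (K, {})"
  by (auto simp: upper_cut_eq dc_def)



lemma edges_lt:
  assumes "B \<noteq> {}"
  shows "fst (lower_cut UNIV B) \<subset> fst (upper_cut UNIV B)"
proof -
  obtain b where b: "b \<in> B" using assms by blast
  have "fst (lower_cut UNIV B) \<subseteq> fst (upper_cut UNIV B)"
  proof
    fix y assume "y \<in> fst (lower_cut UNIV B)"
    hence "y < b" using b by (auto simp: fst_lower_cut uc_def not_le)
    thus "y \<in> fst (upper_cut UNIV B)" using b by (auto simp: fst_upper_cut dc_def intro!: bexI[of _ b])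
  qed
  moreover have "b \<in> fst (upper_cut UNIV B)" "b \<notin> fst (lower_cut UNIV B)" using b
    by (auto simp: fst_upper_cut dc_def fst_lower_cut uc_def)
  ultimately show ?thesis by blast
qed

lemma edges_mono:
  assumes "B \<subseteq> B'"
  shows "fst (lower_cut UNIV B') \<subseteq> fst (lower_cut UNIV B)" "fst (upper_cut UNIV B) \<subseteq> fst (upper_cut UNIV B')"
  using assms by (auto simp: fst_lower_cut fst_upper_cut uc_def dc_def)

lemma ball_strict:
  assumes B: "is_ball UNIV B" and B0: "is_ball UNIV B0" and sub: "B \<subset> B0"
  shows "fst (lower_cut UNIV B0) \<subset> fst (lower_cut UNIV B)"
        "fst (upper_cut UNIV B) \<subset> fst (upper_cut UNIV B0)"
proof -
  have K: "subfield (UNIV::'a set)" by (rule subfield_UNIV)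
  obtain c S where S: "final_seg UNIV S" and Bc: "B = ball_S UNIV S c" using B by (auto simp: is_ball_def)
  obtain a0 S0 where S0: "final_seg UNIV S0" and Ba0: "B0 = ball_S UNIV S0 a0" using B0 by (auto simp: is_ball_def)
  have cB: "c \<in> B" using Bc ball_center by blast
  hence "c \<in> ball_S UNIV S0 a0" using sub Ba0 by blast
  hence B0c: "B0 = ball_S UNIV S0 c" using ball_recenter[OF S0 K] Ba0 by blast
  obtain z where z: "z \<in> B0" "z \<notin> B" using sub by blast
  have zc: "c - z \<noteq> 0" "c - z \<in> S0" "c - z \<notin> S"
    using z B0c Bc by (auto simp: ball_S_def)
  define w where "w = \<bar>c - z\<bar>"
  have w1: "-w \<in> S0" "w \<in> S0" using fs_abs[OF S0 zc(2)] by (auto simp: w_def)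
  have w2: "-w \<notin> S" "w \<notin> S"
  proof -
    show "-w \<notin> S"
    proof
      assume "-w \<in> S" thus False using fs_abs[OF S \<open>-w \<in> S\<close>, of "c - z"] zc(3) by (simp add: w_def)
    qed
    show "w \<notin> S"
    proof
      assume "w \<in> S" thus False using fs_abs[OF S \<open>w \<in> S\<close>, of "c - z"] zc(3) by (simp add: w_def)
    qed
  qed
  have wpos: "w > 0" using zc(1) by (simp add: w_def)
  have z1: "c + w \<in> B0" "c + w \<notin> B" using w1 w2 wpos B0c Bc by (auto simp: ball_S_def)
  have z2: "c - w \<in> B0" "c - w \<notin> B" using w1 w2 wpos B0c Bc by (auto simp: ball_S_def)
  have lt1: "\<bar>c - b\<bar> < w" if "b \<in> B" for b
    using ball_lt_out[OF S K _ _ _ z1(2)[unfolded Bc]] that Bc wpos by auto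
  have "fst (lower_cut UNIV B0) \<subseteq> fst (lower_cut UNIV B)" "fst (upper_cut UNIV B) \<subseteq> fst (upper_cut UNIV B0)"
    using edges_mono sub by blast+
  moreover have "c - w \<in> fst (lower_cut UNIV B)"
  proof -
    have "\<forall>b\<in>B. c - w < b"
    proof
      fix b assume "b \<in> B" hence "\<bar>c - b\<bar> < w" by (rule lt1)
      thus "c - w < b" by (simp add: abs_less_iff)
    qed
    thus ?thesis by (auto simp: fst_lower_cut uc_def not_le)
  qed
  moreover have "c - w \<notin> fst (lower_cut UNIV B0)" using z2 by (auto simp: fst_lower_cut uc_def)
  moreover have "c + w \<in> fst (upper_cut UNIV B0)" using z1 by (auto simp: fst_upper_cut dc_def)
  moreover have "c + w \<notin> fst (upper_cut UNIV B)"
  proof -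
    have "\<forall>b\<in>B. b < c + w"
    proof
      fix b assume "b \<in> B" hence "\<bar>c - b\<bar> < w" by (rule lt1)
      thus "b < c + w" by (simp add: abs_less_iff)
    qed
    thus ?thesis by (auto simp: fst_upper_cut dc_def not_le)
  qed
  ultimately show "fst (lower_cut UNIV B0) \<subset> fst (lower_cut UNIV B)"
        "fst (upper_cut UNIV B) \<subset> fst (upper_cut UNIV B0)" by blast+
qed

lemma ball_sep:
  assumes B: "is_ball UNIV B" and B0: "is_ball UNIV B0" and dis: "B \<inter> B0 = {}"
  shows "\<exists>m. ((\<forall>b\<in>B. b < m) \<and> (\<forall>b\<in>B0. m < b)) \<or> ((\<forall>b\<in>B0. b < m) \<and> (\<forall>b\<in>B. m < b))"
proof -
  have K: "subfield (UNIV::'a set)" by (rule subfield_UNIV)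
  obtain a S where S: "final_seg UNIV S" and Ba: "B = ball_S UNIV S a" using B by (auto simp: is_ball_def)
  obtain a0 S0 where S0: "final_seg UNIV S0" and Ba0: "B0 = ball_S UNIV S0 a0" using B0 by (auto simp: is_ball_def)
  have aB: "a \<in> B" "a0 \<in> B0" using Ba Ba0 ball_center by blast+
  have n: "a0 \<notin> B" "a \<notin> B0" using aB dis by blast+
  define m where "m = (a + a0) / 2"
  have ne: "a \<noteq> a0" using n aB by blast
  have mB: "m \<notin> B"
  proof
    assume "m \<in> B"
    hence "a - m \<in> S" using Ba ne by (auto simp: ball_S_def m_def field_simps)
    moreover have "val_le (a - m) (a - a0)"
    proof -
      have eq: "a - m = (a - a0) / of_nat 2" by (simp add: m_def field_simps)
      show ?thesis unfolding eq by (rule val_le_scale2) simp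
    qed
    ultimately have "a - a0 \<in> S" using fs_sat[OF S, of "a - m" "a - a0"] ne by simp
    thus False using n(1) Ba by (simp add: ball_S_def)
  qed
  have mB0: "m \<notin> B0"
  proof
    assume "m \<in> B0"
    hence "a0 - m \<in> S0" using Ba0 ne by (auto simp: ball_S_def m_def field_simps)
    moreover have "val_le (a0 - m) (a0 - a)"
    proof -
      have eq: "a0 - m = (a0 - a) / of_nat 2" by (simp add: m_def field_simps)
      show ?thesis unfolding eq by (rule val_le_scale2) simp
    qed
    ultimately have "a0 - a \<in> S0" using fs_sat[OF S0, of "a0 - m" "a0 - a"] ne by simp
    thus False using n(2) Ba0 by (simp add: ball_S_def)
  qed
  have l1: "\<bar>a - b\<bar> < \<bar>a - m\<bar>" if "b \<in> B" for b using ball_lt_out[OF S K _ _ _ mB[unfolded Ba]] that Ba by auto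
  have l2: "\<bar>a0 - b\<bar> < \<bar>a0 - m\<bar>" if "b \<in> B0" for b using ball_lt_out[OF S0 K _ _ _ mB0[unfolded Ba0]] that Ba0 by auto
  have h1: "b < m" if "\<bar>x - b\<bar> < \<bar>x - m\<bar>" "x < m" for x b
    using that by (auto simp: abs_less_iff abs_if split: if_splits)
  have h2: "m < b" if "\<bar>x - b\<bar> < \<bar>x - m\<bar>" "m < x" for x b
    using that by (auto simp: abs_less_iff abs_if split: if_splits)
  show ?thesis
  proof (cases "a < a0")
    case True
    hence "a < m" "m < a0" by (simp_all add: m_def field_simps)
    thus ?thesis using h1 h2 l1 l2 by blast
  next
    case False
    hence "a0 < a" using ne by simp
    hence "a0 < m" "m < a" by (simp_all add: m_def field_simps)
    thus ?thesis using h1 h2 l1 l2 by blast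
  qed
qed

lemma ball_nonempty: "is_ball K B \<Longrightarrow> B \<noteq> {}"
proof -
  assume "is_ball K B"
  then obtain a S where "a \<in> K" "B = ball_S K S a" by (auto simp: is_ball_def)
  thus ?thesis using ball_center[of a K S] by blast
qed

lemma sep_edges:
  assumes "\<forall>b\<in>X. b < m" "\<forall>b\<in>Y. m < b"
  shows "fst (upper_cut UNIV X) \<subset> fst (lower_cut UNIV Y)"
proof -
  have a: "fst (upper_cut UNIV X) \<subseteq> {y. y < m}" using assms(1) by (auto simp: fst_upper_cut dc_def)
  have b: "{y. y \<le> m} \<subseteq> fst (lower_cut UNIV Y)" using assms(2) by (auto simp: fst_lower_cut uc_def)
  have "m \<in> fst (lower_cut UNIV Y)" "m \<notin> fst (upper_cut UNIV X)" using a b by auto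
  moreover have "fst (upper_cut UNIV X) \<subseteq> fst (lower_cut UNIV Y)"
  proof
    fix x assume "x \<in> fst (upper_cut UNIV X)"
    hence "x \<le> m" using a by auto
    thus "x \<in> fst (lower_cut UNIV Y)" using b by auto
  qed
  ultimately show ?thesis by blast
qed

lemma ball_cases:
  assumes B: "is_ball UNIV B" and B0: "is_ball UNIV B0"
  shows "B = B0
    \<or> (fst (lower_cut UNIV B0) \<subset> fst (lower_cut UNIV B) \<and> fst (upper_cut UNIV B) \<subset> fst (upper_cut UNIV B0))
    \<or> (fst (lower_cut UNIV B) \<subset> fst (lower_cut UNIV B0) \<and> fst (upper_cut UNIV B0) \<subset> fst (upper_cut UNIV B))
    \<or> fst (upper_cut UNIV B) \<subset> fst (lower_cut UNIV B0)
    \<or> fst (upper_cut UNIV B0) \<subset> fst (lower_cut UNIV B)"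
proof (cases "B \<inter> B0 = {}")
  case True
  then obtain m where m: "((\<forall>b\<in>B. b < m) \<and> (\<forall>b\<in>B0. m < b)) \<or> ((\<forall>b\<in>B0. b < m) \<and> (\<forall>b\<in>B. m < b))"
    using ball_sep[OF B B0] by blast
  thus ?thesis
  proof
    assume "(\<forall>b\<in>B. b < m) \<and> (\<forall>b\<in>B0. m < b)"
    hence "fst (upper_cut UNIV B) \<subset> fst (lower_cut UNIV B0)" by (intro sep_edges) auto
    thus ?thesis by (rule disjI2[OF disjI2[OF disjI2[OF disjI1]]])
  next
    assume "(\<forall>b\<in>B0. b < m) \<and> (\<forall>b\<in>B. m < b)"
    hence "fst (upper_cut UNIV B0) \<subset> fst (lower_cut UNIV B)" by (intro sep_edges) auto
    thus ?thesis by (rule disjI2[OF disjI2[OF disjI2[OF disjI2]]])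
  qed
next
  case False
  then obtain c where c: "c \<in> B" "c \<in> B0" by blast
  obtain a S where S: "final_seg UNIV S" and Ba: "B = ball_S UNIV S a" using B unfolding is_ball_def by blast
  obtain a0 S0 where S0: "final_seg UNIV S0" and Ba0: "B0 = ball_S UNIV S0 a0" using B0 unfolding is_ball_def by blast
  have c1: "c \<in> ball_S UNIV S a" "c \<in> ball_S UNIV S0 a0" using c Ba Ba0 by simp_all
  have "B \<subseteq> B0 \<or> B0 \<subseteq> B" using ball_nested[OF S S0 subfield_UNIV c1] Ba Ba0 by simp
  moreover
  { assume "B \<subset> B0" hence ?thesis using ball_strict[OF B B0] by (intro disjI2[OF disjI1] conjI) }
  moreover
  { assume "B0 \<subset> B" hence ?thesis using ball_strict[OF B0 B] by (intro disjI2[OF disjI2[OF disjI1]] conjI) }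
  moreover
  { assume "B = B0" hence ?thesis by (rule disjI1) }
  ultimately show ?thesis by (metis psubsetI)
qed

definition int_set :: "'a::linordered_field set \<Rightarrow> ('a set \<times> 'a set) set" where
  "int_set B0 = {Z\<in>cuts UNIV. cut_less (lower_cut UNIV B0) Z} \<inter> {Z\<in>cuts UNIV. cut_less Z (upper_cut UNIV B0)}"
definition out_set :: "'a::linordered_field set \<Rightarrow> ('a set \<times> 'a set) set" where
  "out_set B0 = {Z\<in>cuts UNIV. cut_less Z (lower_cut UNIV B0)} \<union> {Z\<in>cuts UNIV. cut_less (upper_cut UNIV B0) Z}"

lemma full_setI:
  assumes "U \<subseteq> cuts K"
    and "\<And>B. is_ball K B \<Longrightarrow> lower_cut K B \<in> U \<or> upper_cut K B \<in> U \<Longrightarrow> lower_cut K B \<in> U \<and> upper_cut K B \<in> U"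
  shows "full_set K U"
  unfolding full_set_def cut_equiv_def
proof (intro conjI assms(1) ballI impI)
  fix C1 C2 assume h: "C1 \<in> U" "C2 \<in> cuts K" "C1 = C2 \<or> (\<exists>B. is_ball K B \<and> {C1, C2} = {lower_cut K B, upper_cut K B})"
  show "C2 \<in> U"
  proof (cases "C1 = C2")
    case False
    then obtain B where B: "is_ball K B" "{C1, C2} = {lower_cut K B, upper_cut K B}" using h by blast
    hence "C1 = lower_cut K B \<or> C1 = upper_cut K B" "C2 = lower_cut K B \<or> C2 = upper_cut K B" by (auto simp: doubleton_eq_iff)
    thus ?thesis using assms(2)[OF B(1)] h(1) by metis
  qed (use h in simp)
qed

lemma int_abs:
  fixes L H L0 H0 :: "'b set"
  assumes "L \<subset> H" "L0 \<subset> H0"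
    and "(L = L0 \<and> H = H0) \<or> (L0 \<subset> L \<and> H \<subset> H0) \<or> (L \<subset> L0 \<and> H0 \<subset> H) \<or> H \<subset> L0 \<or> H0 \<subset> L"
    and "(L0 \<subset> L \<and> L \<subset> H0) \<or> (L0 \<subset> H \<and> H \<subset> H0)"
  shows "(L0 \<subset> L \<and> L \<subset> H0) \<and> (L0 \<subset> H \<and> H \<subset> H0)"
  using assms by (smt (verit) order.strict_trans order.asym)

lemma out_abs:
  fixes L H L0 H0 :: "'b set"
  assumes "L \<subset> H" "L0 \<subset> H0"
    and "(L = L0 \<and> H = H0) \<or> (L0 \<subset> L \<and> H \<subset> H0) \<or> (L \<subset> L0 \<and> H0 \<subset> H) \<or> H \<subset> L0 \<or> H0 \<subset> L"
    and "(L \<subset> L0 \<or> H0 \<subset> L) \<or> (H \<subset> L0 \<or> H0 \<subset> H)"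
  shows "(L \<subset> L0 \<or> H0 \<subset> L) \<and> (H \<subset> L0 \<or> H0 \<subset> H)"
  using assms by (smt (verit) order.strict_trans order.asym)

lemma int_set_full: "is_ball UNIV B0 \<Longrightarrow> full_set UNIV (int_set B0)"
proof (rule full_setI)
  show "int_set B0 \<subseteq> cuts UNIV" by (auto simp: int_set_def)
  fix B assume B0: "is_ball UNIV B0" and B: "is_ball UNIV B"
    and h: "lower_cut UNIV B \<in> int_set B0 \<or> upper_cut UNIV B \<in> int_set B0"
  have e: "fst (lower_cut UNIV B) \<subset> fst (upper_cut UNIV B)" using edges_lt ball_nonempty[OF B] by blast
  have e0: "fst (lower_cut UNIV B0) \<subset> fst (upper_cut UNIV B0)" using edges_lt ball_nonempty[OF B0] by blast
  have c: "lower_cut UNIV B \<in> cuts UNIV" "upper_cut UNIV B \<in> cuts UNIV" by (auto simp: lower_cut_cuts upper_cut_cuts)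
  have bc: "(fst (lower_cut UNIV B) = fst (lower_cut UNIV B0) \<and> fst (upper_cut UNIV B) = fst (upper_cut UNIV B0))
    \<or> (fst (lower_cut UNIV B0) \<subset> fst (lower_cut UNIV B) \<and> fst (upper_cut UNIV B) \<subset> fst (upper_cut UNIV B0))
    \<or> (fst (lower_cut UNIV B) \<subset> fst (lower_cut UNIV B0) \<and> fst (upper_cut UNIV B0) \<subset> fst (upper_cut UNIV B))
    \<or> fst (upper_cut UNIV B) \<subset> fst (lower_cut UNIV B0)
    \<or> fst (upper_cut UNIV B0) \<subset> fst (lower_cut UNIV B)"
    using ball_cases[OF B B0] by metis
  have h': "(fst (lower_cut UNIV B0) \<subset> fst (lower_cut UNIV B) \<and> fst (lower_cut UNIV B) \<subset> fst (upper_cut UNIV B0))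
      \<or> (fst (lower_cut UNIV B0) \<subset> fst (upper_cut UNIV B) \<and> fst (upper_cut UNIV B) \<subset> fst (upper_cut UNIV B0))"
    using h unfolding int_set_def cut_less_def by blast
  from int_abs[OF e e0 bc h'] c show "lower_cut UNIV B \<in> int_set B0 \<and> upper_cut UNIV B \<in> int_set B0"
    unfolding int_set_def cut_less_def by blast
qed

lemma out_set_full: "is_ball UNIV B0 \<Longrightarrow> full_set UNIV (out_set B0)"
proof (rule full_setI)
  show "out_set B0 \<subseteq> cuts UNIV" by (auto simp: out_set_def)
  fix B assume B0: "is_ball UNIV B0" and B: "is_ball UNIV B"
    and h: "lower_cut UNIV B \<in> out_set B0 \<or> upper_cut UNIV B \<in> out_set B0"
  have e: "fst (lower_cut UNIV B) \<subset> fst (upper_cut UNIV B)" using edges_lt ball_nonempty[OF B] by blast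
  have e0: "fst (lower_cut UNIV B0) \<subset> fst (upper_cut UNIV B0)" using edges_lt ball_nonempty[OF B0] by blast
  have c: "lower_cut UNIV B \<in> cuts UNIV" "upper_cut UNIV B \<in> cuts UNIV" by (auto simp: lower_cut_cuts upper_cut_cuts)
  have bc: "(fst (lower_cut UNIV B) = fst (lower_cut UNIV B0) \<and> fst (upper_cut UNIV B) = fst (upper_cut UNIV B0))
    \<or> (fst (lower_cut UNIV B0) \<subset> fst (lower_cut UNIV B) \<and> fst (upper_cut UNIV B) \<subset> fst (upper_cut UNIV B0))
    \<or> (fst (lower_cut UNIV B) \<subset> fst (lower_cut UNIV B0) \<and> fst (upper_cut UNIV B0) \<subset> fst (upper_cut UNIV B))
    \<or> fst (upper_cut UNIV B) \<subset> fst (lower_cut UNIV B0)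
    \<or> fst (upper_cut UNIV B0) \<subset> fst (lower_cut UNIV B)"
    using ball_cases[OF B B0] by metis
  have h': "(fst (lower_cut UNIV B) \<subset> fst (lower_cut UNIV B0) \<or> fst (upper_cut UNIV B0) \<subset> fst (lower_cut UNIV B))
      \<or> (fst (upper_cut UNIV B) \<subset> fst (lower_cut UNIV B0) \<or> fst (upper_cut UNIV B0) \<subset> fst (upper_cut UNIV B))"
    using h unfolding out_set_def cut_less_def by blast
  from out_abs[OF e e0 bc h'] c show "lower_cut UNIV B \<in> out_set B0 \<and> upper_cut UNIV B \<in> out_set B0"
    unfolding out_set_def cut_less_def by blast
qed



definition ibasis :: "'a::linordered_field set \<Rightarrow> ('a set \<times> 'a set) set set" where
  "ibasis K = ({{C\<in>cuts K. cut_less C1 C \<and> cut_less C C2} | C1 C2. C1 \<in> cuts K \<and> C2 \<in> cuts K}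
      \<union> {{C\<in>cuts K. cut_less C1 C} | C1. C1 \<in> cuts K}
      \<union> {{C\<in>cuts K. cut_less C C2} | C2. C2 \<in> cuts K})"

lemma interval_top_eq: "interval_top K = topology_generated_by (ibasis K)"
  by (simp add: interval_top_def ibasis_def)

lemma open_basic1: "C1 \<in> cuts K \<Longrightarrow> openin (interval_top K) {C\<in>cuts K. cut_less C1 C}"
  unfolding interval_top_eq openin_topology_generated_by_iff
proof (rule generate_topology_on.Basis)
  assume "C1 \<in> cuts K"
  hence "{C\<in>cuts K. cut_less C1 C} \<in> {{C\<in>cuts K. cut_less C1 C} | C1. C1 \<in> cuts K}" by blast
  thus "{C\<in>cuts K. cut_less C1 C} \<in> ibasis K" unfolding ibasis_def by (rule UnI1[OF UnI2])
qed

lemma open_basic2: "C2 \<in> cuts K \<Longrightarrow> openin (interval_top K) {C\<in>cuts K. cut_less C C2}"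
  unfolding interval_top_eq openin_topology_generated_by_iff
proof (rule generate_topology_on.Basis)
  assume "C2 \<in> cuts K"
  hence "{C\<in>cuts K. cut_less C C2} \<in> {{C\<in>cuts K. cut_less C C2} | C2. C2 \<in> cuts K}" by blast
  thus "{C\<in>cuts K. cut_less C C2} \<in> ibasis K" unfolding ibasis_def by (rule UnI2)
qed

lemma bot_cut: "({}, K) \<in> cuts K" by (simp add: cuts_def)
lemma top_cut: "(K, {}) \<in> cuts K" by (simp add: cuts_def)

lemma open_cuts: "K \<noteq> {} \<Longrightarrow> openin (interval_top K) (cuts K)"
proof -
  assume K: "K \<noteq> {}"
  let ?A = "{C\<in>cuts K. cut_less ({}, K) C}" and ?B = "{C\<in>cuts K. cut_less C (K, {})}"
  have "cuts K \<subseteq> ?A \<union> ?B"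
  proof
    fix Z assume Z: "Z \<in> cuts K"
    have fK: "fst Z \<subseteq> K" using cutsD[OF Z] by blast
    show "Z \<in> ?A \<union> ?B"
    proof (cases "fst Z = {}")
      case True
      hence "cut_less Z (K, {})" using K fK by (auto simp: cut_less_def psubset_eq)
      thus ?thesis using Z by blast
    next
      case False
      hence "cut_less ({}, K) Z" by (simp add: cut_less_def psubset_eq)
      thus ?thesis using Z by blast
    qed
  qed
  hence eq: "cuts K = ?A \<union> ?B" by blast
  have o: "openin (interval_top K) (?A \<union> ?B)" by (rule openin_Un[OF open_basic1[OF bot_cut] open_basic2[OF top_cut]])
  show ?thesis using o by (simp only: eq[symmetric])
qed

lemma full_set_Int: "full_set K S \<Longrightarrow> full_set K T \<Longrightarrow> full_set K (S \<inter> T)"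
  unfolding full_set_def by blast

lemma full_set_Union: "(\<And>k. k \<in> Ks \<Longrightarrow> full_set K k) \<Longrightarrow> full_set K (\<Union>Ks)"
  unfolding full_set_def by blast

lemma istopology_full: "istopology (\<lambda>U. openin (interval_top K) U \<and> full_set K U)"
proof (simp only: istopology_def, rule conjI; intro allI impI)
  fix S T assume "openin (interval_top K) S \<and> full_set K S" "openin (interval_top K) T \<and> full_set K T"
  thus "openin (interval_top K) (S \<inter> T) \<and> full_set K (S \<inter> T)"
    using full_set_Int openin_Int by blast
next
  fix Ks assume h: "\<forall>k\<in>Ks. openin (interval_top K) k \<and> full_set K k"
  thus "openin (interval_top K) (\<Union>Ks) \<and> full_set K (\<Union>Ks)"
    using full_set_Union[of Ks K] openin_Union[of Ks "interval_top K"] by blast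
qed

lemma openin_full_top: "openin (full_top K) U \<longleftrightarrow> openin (interval_top K) U \<and> full_set K U"
  unfolding full_top_def using istopology_full topology_inverse' by metis

lemma topspace_full_top: "K \<noteq> {} \<Longrightarrow> topspace (full_top K) = cuts K"
proof -
  assume K: "K \<noteq> {}"
  have "openin (full_top K) (cuts K)" using open_cuts[OF K] by (simp add: openin_full_top full_set_def)
  hence "cuts K \<subseteq> topspace (full_top K)" by (rule openin_subset)
  moreover have "topspace (full_top K) \<subseteq> cuts K"
    unfolding topspace_def by (auto simp: openin_full_top full_set_def)
  ultimately show ?thesis by blast
qed

definition rightopen :: "'a::linordered_field set \<Rightarrow> ('a set \<times> 'a set) set \<Rightarrow> bool" where
  "rightopen K U \<longleftrightarrow> (\<forall>X\<in>U. fst X \<noteq> K \<longrightarrow> (\<exists>C2\<in>cuts K. fst X \<subset> fst C2 \<and>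
      (\<forall>Z\<in>cuts K. fst X \<subseteq> fst Z \<and> fst Z \<subset> fst C2 \<longrightarrow> Z \<in> U)))"
definition leftopen :: "'a::linordered_field set \<Rightarrow> ('a set \<times> 'a set) set \<Rightarrow> bool" where
  "leftopen K U \<longleftrightarrow> (\<forall>X\<in>U. fst X \<noteq> {} \<longrightarrow> (\<exists>L\<in>cuts K. fst L \<subset> fst X \<and>
      (\<forall>Z\<in>cuts K. fst L \<subset> fst Z \<and> fst Z \<subseteq> fst X \<longrightarrow> Z \<in> U)))"

lemma rightopenD: "rightopen K U \<Longrightarrow> X \<in> U \<Longrightarrow> fst X \<noteq> K \<Longrightarrow>
   \<exists>C2\<in>cuts K. fst X \<subset> fst C2 \<and> (\<forall>Z\<in>cuts K. fst X \<subseteq> fst Z \<and> fst Z \<subset> fst C2 \<longrightarrow> Z \<in> U)"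
  unfolding rightopen_def by blast
lemma leftopenD: "leftopen K U \<Longrightarrow> X \<in> U \<Longrightarrow> fst X \<noteq> {} \<Longrightarrow>
   \<exists>L\<in>cuts K. fst L \<subset> fst X \<and> (\<forall>Z\<in>cuts K. fst L \<subset> fst Z \<and> fst Z \<subseteq> fst X \<longrightarrow> Z \<in> U)"
  unfolding leftopen_def by blast

lemma gen_open_props:
  assumes "generate_topology_on (ibasis K) U"
  shows "U \<subseteq> cuts K \<and> rightopen K U \<and> leftopen K U"
  using assms
proof (induction rule: generate_topology_on.induct)
  case Empty thus ?case by (simp add: rightopen_def leftopen_def)
next
  case (Int a b)
  have IA: "a \<subseteq> cuts K" "rightopen K a" "leftopen K a" using Int.IH(1) by blast+
  have IB: "b \<subseteq> cuts K" "rightopen K b" "leftopen K b" using Int.IH(2) by blast+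
  have sub: "a \<inter> b \<subseteq> cuts K" using IA by blast
  have r: "rightopen K (a \<inter> b)"
    unfolding rightopen_def
  proof (intro ballI impI)
    fix X assume X: "X \<in> a \<inter> b" "fst X \<noteq> K"
    obtain C2 where C2: "C2 \<in> cuts K" "fst X \<subset> fst C2" "\<forall>Z\<in>cuts K. fst X \<subseteq> fst Z \<and> fst Z \<subset> fst C2 \<longrightarrow> Z \<in> a"
      using rightopenD[OF IA(2) _ X(2)] X(1) by blast
    obtain C2' where C2': "C2' \<in> cuts K" "fst X \<subset> fst C2'" "\<forall>Z\<in>cuts K. fst X \<subseteq> fst Z \<and> fst Z \<subset> fst C2' \<longrightarrow> Z \<in> b"
      using rightopenD[OF IB(2) _ X(2)] X(1) by blast
    show "\<exists>C2\<in>cuts K. fst X \<subset> fst C2 \<and> (\<forall>Z\<in>cuts K. fst X \<subseteq> fst Z \<and> fst Z \<subset> fst C2 \<longrightarrow> Z \<in> a \<inter> b)"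
    proof (cases "fst C2 \<subseteq> fst C2'")
      case True
      have "\<forall>Z\<in>cuts K. fst X \<subseteq> fst Z \<and> fst Z \<subset> fst C2 \<longrightarrow> Z \<in> a \<inter> b"
        using C2(3) C2'(3) True by blast
      thus ?thesis using C2(1,2) by blast
    next
      case False hence le: "fst C2' \<subseteq> fst C2" using cut_linear[OF C2(1) C2'(1)] by blast
      have "\<forall>Z\<in>cuts K. fst X \<subseteq> fst Z \<and> fst Z \<subset> fst C2' \<longrightarrow> Z \<in> a \<inter> b"
        using C2(3) C2'(3) le by blast
      thus ?thesis using C2'(1,2) by blast
    qed
  qed
  have l: "leftopen K (a \<inter> b)"
    unfolding leftopen_def
  proof (intro ballI impI)
    fix X assume X: "X \<in> a \<inter> b" "fst X \<noteq> {}"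
    obtain L where L: "L \<in> cuts K" "fst L \<subset> fst X" "\<forall>Z\<in>cuts K. fst L \<subset> fst Z \<and> fst Z \<subseteq> fst X \<longrightarrow> Z \<in> a"
      using leftopenD[OF IA(3) _ X(2)] X(1) by blast
    obtain L' where L': "L' \<in> cuts K" "fst L' \<subset> fst X" "\<forall>Z\<in>cuts K. fst L' \<subset> fst Z \<and> fst Z \<subseteq> fst X \<longrightarrow> Z \<in> b"
      using leftopenD[OF IB(3) _ X(2)] X(1) by blast
    show "\<exists>L\<in>cuts K. fst L \<subset> fst X \<and> (\<forall>Z\<in>cuts K. fst L \<subset> fst Z \<and> fst Z \<subseteq> fst X \<longrightarrow> Z \<in> a \<inter> b)"
    proof (cases "fst L \<subseteq> fst L'")
      case True
      have "\<forall>Z\<in>cuts K. fst L' \<subset> fst Z \<and> fst Z \<subseteq> fst X \<longrightarrow> Z \<in> a \<inter> b"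
        using L(3) L'(3) True by blast
      thus ?thesis using L'(1,2) by blast
    next
      case False hence le: "fst L' \<subseteq> fst L" using cut_linear[OF L(1) L'(1)] by blast
      have "\<forall>Z\<in>cuts K. fst L \<subset> fst Z \<and> fst Z \<subseteq> fst X \<longrightarrow> Z \<in> a \<inter> b"
        using L(3) L'(3) le by blast
      thus ?thesis using L(1,2) by blast
    qed
  qed
  show ?case using sub r l by blast
next
  case (UN Ks)
  have sub: "\<Union>Ks \<subseteq> cuts K" using UN.IH by blast
  have r: "rightopen K (\<Union>Ks)" unfolding rightopen_def
  proof (intro ballI impI)
    fix X assume X: "X \<in> \<Union>Ks" "fst X \<noteq> K"
    then obtain k where k: "k \<in> Ks" "X \<in> k" by blast
    have "rightopen K k" using UN.IH k(1) by blast
    then obtain C2 where "C2 \<in> cuts K" "fst X \<subset> fst C2" "\<forall>Z\<in>cuts K. fst X \<subseteq> fst Z \<and> fst Z \<subset> fst C2 \<longrightarrow> Z \<in> k"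
      using rightopenD[of K k X] k(2) X(2) by blast
    thus "\<exists>C2\<in>cuts K. fst X \<subset> fst C2 \<and> (\<forall>Z\<in>cuts K. fst X \<subseteq> fst Z \<and> fst Z \<subset> fst C2 \<longrightarrow> Z \<in> \<Union>Ks)"
      using k by blast
  qed
  have l: "leftopen K (\<Union>Ks)" unfolding leftopen_def
  proof (intro ballI impI)
    fix X assume X: "X \<in> \<Union>Ks" "fst X \<noteq> {}"
    then obtain k where k: "k \<in> Ks" "X \<in> k" by blast
    have "leftopen K k" using UN.IH k(1) by blast
    then obtain L where "L \<in> cuts K" "fst L \<subset> fst X" "\<forall>Z\<in>cuts K. fst L \<subset> fst Z \<and> fst Z \<subseteq> fst X \<longrightarrow> Z \<in> k"
      using leftopenD[of K k X] k(2) X(2) by blast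
    thus "\<exists>L\<in>cuts K. fst L \<subset> fst X \<and> (\<forall>Z\<in>cuts K. fst L \<subset> fst Z \<and> fst Z \<subseteq> fst X \<longrightarrow> Z \<in> \<Union>Ks)"
      using k by blast
  qed
  show ?case using sub r l by blast
next
  case (Basis s)
  have bot: "({}, K) \<in> cuts K" and top: "(K, {}) \<in> cuts K" by (rule bot_cut, rule top_cut)
  have fK: "fst X \<subseteq> K" if "X \<in> cuts K" for X using cutsD[OF that] by blast
  have "s \<in> {{C\<in>cuts K. cut_less C1 C \<and> cut_less C C2} | C1 C2. C1 \<in> cuts K \<and> C2 \<in> cuts K}
      \<or> s \<in> {{C\<in>cuts K. cut_less C1 C} | C1. C1 \<in> cuts K}
      \<or> s \<in> {{C\<in>cuts K. cut_less C C2} | C2. C2 \<in> cuts K}" using Basis unfolding ibasis_def by (simp only: Un_iff disj_assoc)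
  then consider (I) C1 C2 where "C1 \<in> cuts K" "C2 \<in> cuts K" "s = {C\<in>cuts K. cut_less C1 C \<and> cut_less C C2}"
    | (R) C1 where "C1 \<in> cuts K" "s = {C\<in>cuts K. cut_less C1 C}"
    | (L) C2 where "C2 \<in> cuts K" "s = {C\<in>cuts K. cut_less C C2}"
    by (elim disjE CollectE exE conjE) blast+
  thus ?case
  proof cases
    case I
    have r: "rightopen K s" unfolding rightopen_def
    proof (intro ballI impI)
      fix X assume "X \<in> s" "fst X \<noteq> K"
      thus "\<exists>C2\<in>cuts K. fst X \<subset> fst C2 \<and> (\<forall>Z\<in>cuts K. fst X \<subseteq> fst Z \<and> fst Z \<subset> fst C2 \<longrightarrow> Z \<in> s)"
        using I by (intro bexI[of _ C2]) (auto simp: cut_less_def)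
    qed
    have l: "leftopen K s" unfolding leftopen_def
    proof (intro ballI impI)
      fix X assume "X \<in> s" "fst X \<noteq> {}"
      thus "\<exists>L\<in>cuts K. fst L \<subset> fst X \<and> (\<forall>Z\<in>cuts K. fst L \<subset> fst Z \<and> fst Z \<subseteq> fst X \<longrightarrow> Z \<in> s)"
        using I by (intro bexI[of _ C1]) (auto simp: cut_less_def)
    qed
    show ?thesis using r l I by blast
  next
    case R
    have r: "rightopen K s" unfolding rightopen_def
    proof (intro ballI impI)
      fix X assume X: "X \<in> s" "fst X \<noteq> K"
      hence "fst X \<subset> K" using fK R by blast
      thus "\<exists>C2\<in>cuts K. fst X \<subset> fst C2 \<and> (\<forall>Z\<in>cuts K. fst X \<subseteq> fst Z \<and> fst Z \<subset> fst C2 \<longrightarrow> Z \<in> s)"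
        using R X top by (intro bexI[of _ "(K, {})"]) (auto simp: cut_less_def)
    qed
    have l: "leftopen K s" unfolding leftopen_def
    proof (intro ballI impI)
      fix X assume "X \<in> s" "fst X \<noteq> {}"
      thus "\<exists>L\<in>cuts K. fst L \<subset> fst X \<and> (\<forall>Z\<in>cuts K. fst L \<subset> fst Z \<and> fst Z \<subseteq> fst X \<longrightarrow> Z \<in> s)"
        using R by (intro bexI[of _ C1]) (auto simp: cut_less_def)
    qed
    show ?thesis using r l R by blast
  next
    case L
    have r: "rightopen K s" unfolding rightopen_def
    proof (intro ballI impI)
      fix X assume "X \<in> s" "fst X \<noteq> K"
      thus "\<exists>C2\<in>cuts K. fst X \<subset> fst C2 \<and> (\<forall>Z\<in>cuts K. fst X \<subseteq> fst Z \<and> fst Z \<subset> fst C2 \<longrightarrow> Z \<in> s)"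
        using L by (intro bexI[of _ C2]) (auto simp: cut_less_def)
    qed
    have l: "leftopen K s" unfolding leftopen_def
    proof (intro ballI impI)
      fix X assume X: "X \<in> s" "fst X \<noteq> {}"
      thus "\<exists>L\<in>cuts K. fst L \<subset> fst X \<and> (\<forall>Z\<in>cuts K. fst L \<subset> fst Z \<and> fst Z \<subseteq> fst X \<longrightarrow> Z \<in> s)"
        using L bot by (intro bexI[of _ "({}, K)"]) (auto simp: cut_less_def)
    qed
    show ?thesis using r l L by blast
  qed
qed

lemma open_props:
  "openin (interval_top K) U \<Longrightarrow> U \<subseteq> cuts K \<and> rightopen K U \<and> leftopen K U"
  using gen_open_props openin_topology_generated_by_iff interval_top_eq by metis

lemma open_intro:
  assumes K: "K \<noteq> {}" and sub: "U \<subseteq> cuts K"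
    and r: "\<And>X. X \<in> U \<Longrightarrow> fst X \<noteq> K \<Longrightarrow> \<exists>C2\<in>cuts K. fst X \<subset> fst C2 \<and>
      (\<forall>Z\<in>cuts K. fst X \<subseteq> fst Z \<and> fst Z \<subset> fst C2 \<longrightarrow> Z \<in> U)"
    and l: "\<And>X. X \<in> U \<Longrightarrow> fst X \<noteq> {} \<Longrightarrow> \<exists>L\<in>cuts K. fst L \<subset> fst X \<and>
      (\<forall>Z\<in>cuts K. fst L \<subset> fst Z \<and> fst Z \<subseteq> fst X \<longrightarrow> Z \<in> U)"
  shows "openin (interval_top K) U"
proof (subst openin_subopen, intro ballI)
  fix X assume X: "X \<in> U"
  have XK: "X \<in> cuts K" using X sub by blast
  obtain A where A: "openin (interval_top K) A" "X \<in> A"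
      "\<forall>Z\<in>A. fst Z \<subseteq> fst X \<longrightarrow> Z \<in> U" "A \<subseteq> cuts K"
  proof (cases "fst X = {}")
    case True
    show ?thesis
    proof (rule that[OF open_cuts[OF K] XK])
      show "\<forall>Z\<in>cuts K. fst Z \<subseteq> fst X \<longrightarrow> Z \<in> U"
      proof (intro ballI impI)
        fix Z assume "Z \<in> cuts K" "fst Z \<subseteq> fst X"
        hence "Z = X" using True cut_eqI[OF _ XK] by blast
        thus "Z \<in> U" using X by simp
      qed
    qed simp
  next
    case False
    then obtain L where L: "L \<in> cuts K" "fst L \<subset> fst X" "\<forall>Z\<in>cuts K. fst L \<subset> fst Z \<and> fst Z \<subseteq> fst X \<longrightarrow> Z \<in> U"
      using l[OF X] by blast
    show ?thesis by (rule that[OF open_basic1[OF L(1)]]) (use L XK in \<open>auto simp: cut_less_def\<close>)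
  qed
  obtain B where B: "openin (interval_top K) B" "X \<in> B"
      "\<forall>Z\<in>B. fst X \<subseteq> fst Z \<longrightarrow> Z \<in> U" "B \<subseteq> cuts K"
  proof (cases "fst X = K")
    case True
    show ?thesis
    proof (rule that[OF open_cuts[OF K] XK])
      show "\<forall>Z\<in>cuts K. fst X \<subseteq> fst Z \<longrightarrow> Z \<in> U"
      proof (intro ballI impI)
        fix Z assume Z: "Z \<in> cuts K" "fst X \<subseteq> fst Z"
        hence "fst Z = fst X" using True cutsD[OF Z(1)] by blast
        hence "Z = X" using cut_eqI[OF Z(1) XK] by blast
        thus "Z \<in> U" using X by simp
      qed
    qed simp
  next
    case False
    then obtain C2 where C2: "C2 \<in> cuts K" "fst X \<subset> fst C2" "\<forall>Z\<in>cuts K. fst X \<subseteq> fst Z \<and> fst Z \<subset> fst C2 \<longrightarrow> Z \<in> U"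
      using r[OF X] by blast
    show ?thesis by (rule that[OF open_basic2[OF C2(1)]]) (use C2 XK in \<open>auto simp: cut_less_def\<close>)
  qed
  have "A \<inter> B \<subseteq> U"
  proof
    fix Z assume Z: "Z \<in> A \<inter> B"
    hence "Z \<in> cuts K" using A by blast
    hence "fst Z \<subseteq> fst X \<or> fst X \<subseteq> fst Z" using cut_linear[OF _ XK] by blast
    thus "Z \<in> U" using A(3) B(3) Z by blast
  qed
  thus "\<exists>T. openin (interval_top K) T \<and> X \<in> T \<and> T \<subseteq> U"
    using A B by (intro exI[of _ "A \<inter> B"]) auto
qed



lemma gap_edges:
  assumes G: "G = {y. (\<forall>d\<in>D. d < y) \<and> (\<forall>e\<in>E. y < e)}" and ne: "G \<noteq> {}"
  shows "lower_cut UNIV G = upper_cut UNIV D" "upper_cut UNIV G = lower_cut UNIV E"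
proof -
  obtain g0 where g0: "g0 \<in> G" using ne by blast
  have "fst (lower_cut UNIV G) = fst (upper_cut UNIV D)"
  proof (rule set_eqI, rule iffI)
    fix y assume "y \<in> fst (lower_cut UNIV G)"
    hence y: "\<forall>g\<in>G. y < g" by (auto simp: fst_lower_cut uc_def not_le)
    show "y \<in> fst (upper_cut UNIV D)"
    proof (rule ccontr)
      assume "y \<notin> fst (upper_cut UNIV D)"
      hence yd: "\<forall>d\<in>D. d < y" by (auto simp: fst_upper_cut dc_def not_le)
      show False
      proof (cases "\<forall>e\<in>E. y < e")
        case True hence "y \<in> G" using yd G by blast
        thus False using y by blast
      next
        case False then obtain e where "e \<in> E" "e \<le> y" by (auto simp: not_less)
        moreover have "g0 < e" using g0 G \<open>e \<in> E\<close> by blast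
        ultimately show False using y g0 by force
      qed
    qed
  next
    fix y assume "y \<in> fst (upper_cut UNIV D)"
    then obtain d where "d \<in> D" "y \<le> d" by (auto simp: fst_upper_cut dc_def)
    hence "\<forall>g\<in>G. y < g" using G by force
    thus "y \<in> fst (lower_cut UNIV G)" by (auto simp: fst_lower_cut uc_def not_le)
  qed
  thus "lower_cut UNIV G = upper_cut UNIV D" using cut_eqI lower_cut_cuts upper_cut_cuts by blast
  have "fst (upper_cut UNIV G) = fst (lower_cut UNIV E)"
  proof (rule set_eqI, rule iffI)
    fix y assume "y \<in> fst (lower_cut UNIV E)"
    hence y: "\<forall>e\<in>E. y < e" by (auto simp: fst_lower_cut uc_def not_le)
    show "y \<in> fst (upper_cut UNIV G)"
    proof (cases "\<forall>d\<in>D. d < y")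
      case True hence "y \<in> G" using y G by blast
      thus ?thesis by (auto simp: fst_upper_cut dc_def)
    next
      case False then obtain d where "d \<in> D" "y \<le> d" by (auto simp: not_less)
      moreover have "d < g0" using g0 G \<open>d \<in> D\<close> by blast
      ultimately show ?thesis using g0 by (auto simp: fst_upper_cut dc_def intro!: bexI[of _ g0])
    qed
  next
    fix y assume "y \<in> fst (upper_cut UNIV G)"
    then obtain g where "g \<in> G" "y \<le> g" by (auto simp: fst_upper_cut dc_def)
    hence "\<forall>e\<in>E. y < e" using G by force
    thus "y \<in> fst (lower_cut UNIV E)" by (auto simp: fst_lower_cut uc_def not_le)
  qed
  thus "upper_cut UNIV G = lower_cut UNIV E" using cut_eqI lower_cut_cuts upper_cut_cuts by blast
qed

lemma lo_le_hi: "C \<in> cuts R \<Longrightarrow> fst (lo C) \<subseteq> fst (hi C)"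
proof
  fix y assume C: "C \<in> cuts R" and "y \<in> fst (lo C)"
  then obtain d where "d \<in> fst C" "y \<le> d" by (auto simp: fst_lo)
  thus "y \<in> fst (hi C)" using cut_lt[OF C] by (force simp: fst_hi)
qed

lemma gap_empty:
  assumes C: "C \<in> cuts R" and G: "{y. (\<forall>d\<in>fst C. d < y) \<and> (\<forall>e\<in>snd C. y < e)} = {}"
  shows "lo C = hi C"
proof -
  have "fst (hi C) \<subseteq> fst (lo C)"
  proof
    fix y assume y: "y \<in> fst (hi C)"
    show "y \<in> fst (lo C)"
    proof (rule ccontr)
      assume "y \<notin> fst (lo C)"
      hence "\<forall>d\<in>fst C. d < y" by (auto simp: fst_lo not_le)
      moreover have "\<forall>e\<in>snd C. y < e" using y by (simp add: fst_hi)
      ultimately show False using G by blast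
    qed
  qed
  thus ?thesis using lo_le_hi[OF C] cut_eqI[OF lo_cuts hi_cuts] by blast
qed

lemma not_ball_cut_ne:
  assumes R: "subfield R" and C: "(D, E) \<in> cuts R" and nb: "\<not> ball_cut R (D, E)"
  shows "D \<noteq> {}" "E \<noteq> {}"
proof -
  have b: "is_ball R R" using is_ball_K[OF R sf_0[OF R]] .
  have u: "D \<union> E = R" using C by (simp add: cuts_def)
  show "D \<noteq> {}"
  proof
    assume "D = {}" hence "(D, E) = lower_cut R R" using u by (simp add: lower_cut_self)
    thus False using nb b by (auto simp: ball_cut_def)
  qed
  show "E \<noteq> {}"
  proof
    assume "E = {}" hence "(D, E) = upper_cut R R" using u by (simp add: upper_cut_self)
    thus False using nb b by (auto simp: ball_cut_def)
  qed
qed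

lemma grid:
  fixes d u h :: "'a::linordered_field"
  assumes "d \<le> u" "h > 0" "u < d + of_nat n * h"
  shows "\<exists>k<n. d + of_nat k * h \<le> u \<and> u < d + of_nat (Suc k) * h"
  using assms(3)
proof (induction n)
  case 0 thus ?case using assms(1) by simp
next
  case (Suc n)
  show ?case
  proof (cases "u < d + of_nat n * h")
    case True thus ?thesis using Suc.IH by (metis less_Suc_eq)
  next
    case False thus ?thesis using Suc.prems by (intro exI[of _ n]) (auto simp: not_less)
  qed
qed


lemma gap_far:
  assumes R: "subfield R" and C: "(D, E) \<in> cuts R"
    and x: "x \<in> {y. (\<forall>d\<in>D. d < y) \<and> (\<forall>e\<in>E. y < e)}" and y: "y \<in> {y. (\<forall>d\<in>D. d < y) \<and> (\<forall>e\<in>E. y < e)}"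
    and xy: "x \<noteq> y" and d: "d \<in> D" and e: "e \<in> E"
  shows "\<not> val_le (x - y) (e - d)"
proof
  assume v: "val_le (x - y) (e - d)"
  have xy0: "x - y \<noteq> 0" using xy by simp
  obtain N :: nat where N: "\<bar>e - d\<bar> \<le> of_nat N * \<bar>x - y\<bar>" using v xy0 val_le_iff by blast
  define u where "u = min x y"
  define w where "w = max x y"
  have uw: "w - u = \<bar>x - y\<bar>" by (simp add: u_def w_def abs_if)
  have du: "d < u" using x y d by (simp add: u_def)
  have we: "w < e" using x y e by (simp add: w_def)
  have uG: "\<forall>d'\<in>D. d' < u" using x y by (simp add: u_def)
  have wG: "\<forall>e'\<in>E. w < e'" using x y by (simp add: w_def)
  define h where "h = (e - d) / of_nat (Suc N)"
  have uw2: "u \<le> w" by (simp add: u_def w_def)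
  have ed: "d < e" using du we uw2 by linarith
  have sp: "(0::'a) < of_nat (Suc N)" by (rule of_nat_0_less_iff[THEN iffD2]) simp
  have hpos: "h > 0" unfolding h_def using ed sp by (intro divide_pos_pos) simp_all
  have sn: "of_nat (Suc N) \<noteq> (0::'a)" using sp by linarith
  have eh: "e = d + of_nat (Suc N) * h" unfolding h_def using sn by (simp add: field_simps)
  have hlt: "h < \<bar>x - y\<bar>"
  proof -
    have "of_nat (Suc N) * h = e - d" using eh by simp
    also have "\<dots> \<le> of_nat N * \<bar>x - y\<bar>" using N ed by simp
    also have "\<dots> < of_nat (Suc N) * \<bar>x - y\<bar>" using xy0 by (simp add: algebra_simps)
    finally show ?thesis by (simp only: mult_less_cancel_left_pos of_nat_0_less_iff zero_less_Suc)
  qed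
  obtain k where k: "k < Suc N" "d + of_nat k * h \<le> u" "u < d + of_nat (Suc k) * h"
  proof -
    have "u < d + of_nat (Suc N) * h" using eh uw2 we by linarith
    thus ?thesis using grid[of d u h "Suc N"] du hpos that by fastforce
  qed
  define r where "r = d + of_nat (Suc k) * h"
  have dR: "d \<in> R" "e \<in> R" using C d e by (auto simp: cuts_def)
  have hR: "h \<in> R" unfolding h_def using sf_divide[OF R sf_diff[OF R dR(2) dR(1)] sf_of_nat[OF R]] .
  have rR: "r \<in> R" unfolding r_def using sf_add[OF R dR(1) sf_mult[OF R sf_of_nat[OF R] hR]] .
  have ur: "u < r" using k(3) by (simp add: r_def)
  have rw: "r < w"
  proof -
    have "r = d + of_nat k * h + h" by (simp add: r_def algebra_simps)
    thus ?thesis using k(2) hlt uw by simp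
  qed
  have "r \<notin> D" using uG ur by force
  moreover have "r \<notin> E" using wG rw by force
  moreover have "r \<in> D \<union> E" using C rR by (simp add: cuts_def)
  ultimately show False by blast
qed



lemma ballcut_from_d:
  assumes R: "subfield R" and C: "(D, E) \<in> cuts R"
    and x: "x \<in> {y. (\<forall>d\<in>D. d < y) \<and> (\<forall>e\<in>E. y < e)}" and y: "y \<in> {y. (\<forall>d\<in>D. d < y) \<and> (\<forall>e\<in>E. y < e)}"
    and xy: "x \<noteq> y" and d: "d \<in> D" and n: "\<bar>x - d\<bar> \<le> of_nat n * \<bar>x - y\<bar>"
  shows "ball_cut R (D, E)"
proof -
  have DR: "D \<subseteq> R" and ER: "E \<subseteq> R" and DE: "D \<union> E = R" and lt: "\<forall>a\<in>D. \<forall>b\<in>E. a < b"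
    using C by (auto simp: cuts_def)
  have dR: "d \<in> R" using d DR by blast
  define Sd where "Sd = {w\<in>R - {0}. \<forall>e\<in>E. \<not> val_le w (e - d)}"
  have fs: "final_seg R Sd" unfolding final_seg_def
  proof (intro conjI ballI impI)
    show "Sd \<subseteq> R - {0}" by (auto simp: Sd_def)
    fix w w' assume w: "w \<in> Sd" and w': "w' \<in> R - {0}" and v: "val_le w w'"
    have "\<not> val_le w' (e - d)" if "e \<in> E" for e
      using w that val_le_trans[OF v, of "e - d"] by (auto simp: Sd_def)
    thus "w' \<in> Sd" using w' by (auto simp: Sd_def)
  qed
  define B where "B = ball_S R Sd d"
  have BD: "B \<subseteq> D"
  proof
    fix z assume z: "z \<in> B"
    hence zR: "z \<in> R" and zz: "d - z = 0 \<or> d - z \<in> Sd" by (auto simp: B_def ball_S_def)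
    show "z \<in> D"
    proof (cases "d - z = 0")
      case True thus ?thesis using d by simp
    next
      case False
      hence "\<forall>e\<in>E. \<not> val_le (d - z) (e - d)" using zz by (simp add: Sd_def)
      have "\<forall>e\<in>E. z < e"
      proof
        fix e assume e: "e \<in> E"
        hence "\<bar>d - z\<bar> < \<bar>e - d\<bar>" using not_val_le_lt \<open>\<forall>e\<in>E. \<not> val_le (d - z) (e - d)\<close> by blast
        moreover have "d < e" using lt d e by blast
        moreover have "- (d - z) \<le> \<bar>d - z\<bar>" by (rule abs_ge_minus_self)
        ultimately show "z < e" by simp
      qed
      hence "z \<notin> E" by blast
      thus ?thesis using zR DE by blast
    qed
  qed
  have DB: "D \<subseteq> dc R B"
  proof
    fix d' assume d': "d' \<in> D"
    have d'R: "d' \<in> R" using d' DR by blast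
    show "d' \<in> dc R B"
    proof (cases "d' \<le> d")
      case True thus ?thesis using d'R ball_center[OF dR] by (auto simp: dc_def B_def)
    next
      case False
      have xd: "d' < x" using x d' by blast
      have "\<not> val_le (d - d') (e - d)" if e: "e \<in> E" for e
      proof -
        have far: "\<not> val_le (x - y) (e - d)" using gap_far[OF R C x y xy d e] .
        have ne: "e - d \<noteq> 0" using lt d e by force
        have "of_nat m * \<bar>d - d'\<bar> < \<bar>e - d\<bar>" for m
        proof -
          have "\<bar>d - d'\<bar> \<le> \<bar>x - d\<bar>" using False xd by simp
          hence "of_nat m * \<bar>d - d'\<bar> \<le> of_nat m * \<bar>x - d\<bar>" by (simp add: mult_left_mono)
          also have "\<dots> \<le> of_nat m * (of_nat n * \<bar>x - y\<bar>)" using n by (simp add: mult_left_mono)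
          also have "\<dots> = of_nat (m * n) * \<bar>x - y\<bar>" by (simp add: mult.assoc)
          also have "\<dots> < \<bar>e - d\<bar>" using not_val_le_lt2[OF far] .
          finally show ?thesis .
        qed
        thus ?thesis using ne by (simp add: not_val_le)
      qed
      hence "d - d' \<in> Sd" using False sf_diff[OF R dR d'R] by (auto simp: Sd_def)
      hence "d' \<in> B" using d'R by (simp add: B_def ball_S_def)
      thus ?thesis using d'R by (auto simp: dc_def)
    qed
  qed
  have "dc R B \<subseteq> D"
  proof
    fix z assume "z \<in> dc R B"
    then obtain b where "b \<in> B" "z \<le> b" "z \<in> R" by (auto simp: dc_def)
    thus "z \<in> D" using cut_down[OF C, of b z, unfolded fst_conv] BD by blast
  qed
  hence dcB: "dc R B = D" using DB by blast
  have "R - D = E" using cutsD[OF C] by simp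
  hence "upper_cut R B = (D, E)" using dcB by (simp add: upper_cut_eq)
  moreover have "is_ball R B" unfolding is_ball_def B_def using dR fs by blast
  ultimately show ?thesis unfolding ball_cut_def by (intro exI[of _ B]) simp
qed

lemma ballcut_from_e:
  assumes R: "subfield R" and C: "(D, E) \<in> cuts R"
    and x: "x \<in> {y. (\<forall>d\<in>D. d < y) \<and> (\<forall>e\<in>E. y < e)}" and y: "y \<in> {y. (\<forall>d\<in>D. d < y) \<and> (\<forall>e\<in>E. y < e)}"
    and xy: "x \<noteq> y" and e: "e \<in> E" and n: "\<bar>e - x\<bar> \<le> of_nat n * \<bar>x - y\<bar>"
  shows "ball_cut R (D, E)"
proof -
  have DR: "D \<subseteq> R" and ER: "E \<subseteq> R" and DE: "D \<union> E = R" and lt: "\<forall>a\<in>D. \<forall>b\<in>E. a < b"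
    using C by (auto simp: cuts_def)
  have eR: "e \<in> R" using e ER by blast
  define Se where "Se = {w\<in>R - {0}. \<forall>d\<in>D. \<not> val_le w (e - d)}"
  have fs: "final_seg R Se" unfolding final_seg_def
  proof (intro conjI ballI impI)
    show "Se \<subseteq> R - {0}" by (auto simp: Se_def)
    fix w w' assume w: "w \<in> Se" and w': "w' \<in> R - {0}" and v: "val_le w w'"
    have "\<not> val_le w' (e - d)" if "d \<in> D" for d
      using w that val_le_trans[OF v, of "e - d"] by (auto simp: Se_def)
    thus "w' \<in> Se" using w' by (auto simp: Se_def)
  qed
  define B where "B = ball_S R Se e"
  have BE: "B \<subseteq> E"
  proof
    fix z assume z: "z \<in> B"
    hence zR: "z \<in> R" and zz: "e - z = 0 \<or> e - z \<in> Se" by (auto simp: B_def ball_S_def)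
    show "z \<in> E"
    proof (cases "e - z = 0")
      case True thus ?thesis using e by simp
    next
      case False
      hence "\<forall>d\<in>D. \<not> val_le (e - z) (e - d)" using zz by (simp add: Se_def)
      have "\<forall>d\<in>D. d < z"
      proof
        fix d assume d: "d \<in> D"
        hence "\<bar>e - z\<bar> < \<bar>e - d\<bar>" using not_val_le_lt \<open>\<forall>d\<in>D. \<not> val_le (e - z) (e - d)\<close> by blast
        moreover have "d < e" using lt d e by blast
        moreover have "e - z \<le> \<bar>e - z\<bar>" by (rule abs_ge_self)
        ultimately show "d < z" by simp
      qed
      hence "z \<notin> D" by blast
      thus ?thesis using zR DE by blast
    qed
  qed
  have EB: "E \<subseteq> uc R B"
  proof
    fix e' assume e': "e' \<in> E"
    have e'R: "e' \<in> R" using e' ER by blast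
    show "e' \<in> uc R B"
    proof (cases "e \<le> e'")
      case True thus ?thesis using e'R ball_center[OF eR] by (auto simp: uc_def B_def)
    next
      case False
      have xe: "x < e'" using x e' by blast
      have "\<not> val_le (e - e') (e - d)" if d: "d \<in> D" for d
      proof -
        have far: "\<not> val_le (x - y) (e - d)" using gap_far[OF R C x y xy d e] .
        have ne: "e - d \<noteq> 0" using lt d e by force
        have "of_nat m * \<bar>e - e'\<bar> < \<bar>e - d\<bar>" for m
        proof -
          have "\<bar>e - e'\<bar> \<le> \<bar>e - x\<bar>" using False xe by simp
          hence "of_nat m * \<bar>e - e'\<bar> \<le> of_nat m * \<bar>e - x\<bar>" by (simp add: mult_left_mono)
          also have "\<dots> \<le> of_nat m * (of_nat n * \<bar>x - y\<bar>)" using n by (simp add: mult_left_mono)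
          also have "\<dots> = of_nat (m * n) * \<bar>x - y\<bar>" by (simp add: mult.assoc)
          also have "\<dots> < \<bar>e - d\<bar>" using not_val_le_lt2[OF far] .
          finally show ?thesis .
        qed
        thus ?thesis using ne by (simp add: not_val_le)
      qed
      hence "e - e' \<in> Se" using False sf_diff[OF R eR e'R] by (auto simp: Se_def)
      hence "e' \<in> B" using e'R by (simp add: B_def ball_S_def)
      thus ?thesis using e'R by (auto simp: uc_def)
    qed
  qed
  have "uc R B \<subseteq> E"
  proof
    fix z assume "z \<in> uc R B"
    then obtain b where "b \<in> B" "b \<le> z" "z \<in> R" by (auto simp: uc_def)
    thus "z \<in> E" using cut_up[OF C, of b z, unfolded snd_conv] BE by blast
  qed
  hence ucB: "uc R B = E" using EB by blast
  have "R - E = D" using cutsD[OF C] DE by auto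
  hence "lower_cut R B = (D, E)" using ucB by (simp add: lower_cut_eq)
  moreover have "is_ball R B" unfolding is_ball_def B_def using eR fs by blast
  ultimately show ?thesis unfolding ball_cut_def by (intro exI[of _ B]) simp
qed



lemma nonball_gap:
  assumes R: "subfield R" and C: "(D, E) \<in> cuts R" and nb: "\<not> ball_cut R (D, E)"
  shows "lo (D, E) = hi (D, E) \<or> (\<exists>G. is_ball UNIV G \<and> lower_cut UNIV G = lo (D, E) \<and> upper_cut UNIV G = hi (D, E))"
proof -
  define G where "G = {y. (\<forall>d\<in>D. d < y) \<and> (\<forall>e\<in>E. y < e)}"
  show ?thesis
  proof (cases "G = {}")
    case True
    hence "lo (D, E) = hi (D, E)" using gap_empty[OF C] by (simp add: G_def)
    thus ?thesis by blast
  next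
    case False
    then obtain x where x: "x \<in> G" by blast
    define S where "S = {z. z \<noteq> 0 \<and> (\<forall>d\<in>D. \<not> val_le z (x - d)) \<and> (\<forall>e\<in>E. \<not> val_le z (e - x))}"
    have fs: "final_seg UNIV S" unfolding final_seg_def
    proof (intro conjI ballI impI)
      show "S \<subseteq> UNIV - {0}" by (auto simp: S_def)
      fix w w' assume w: "w \<in> S" and w': "w' \<in> UNIV - {0}" and v: "val_le w w'"
      have "\<not> val_le w' (x - d)" if "d \<in> D" for d
        using w that val_le_trans[OF v, of "x - d"] by (auto simp: S_def)
      moreover have "\<not> val_le w' (e - x)" if "e \<in> E" for e
        using w that val_le_trans[OF v, of "e - x"] by (auto simp: S_def)
      ultimately show "w' \<in> S" using w' by (auto simp: S_def)
    qed
    have xG: "x \<in> {y. (\<forall>d\<in>D. d < y) \<and> (\<forall>e\<in>E. y < e)}" using x by (simp add: G_def)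
    have "G = ball_S UNIV S x"
    proof (rule set_eqI, rule iffI)
      fix y assume y: "y \<in> G"
      show "y \<in> ball_S UNIV S x"
      proof (cases "y = x")
        case True thus ?thesis by (simp add: ball_S_def)
      next
        case False
        have yG: "y \<in> {y. (\<forall>d\<in>D. d < y) \<and> (\<forall>e\<in>E. y < e)}" using y by (simp add: G_def)
        have xy0: "x - y \<noteq> 0" using False by simp
        have "\<not> val_le (x - y) (x - d)" if d: "d \<in> D" for d
        proof
          assume "val_le (x - y) (x - d)"
          then obtain n :: nat where "\<bar>x - d\<bar> \<le> of_nat n * \<bar>x - y\<bar>" using val_le_iff xy0 by blast
          hence "ball_cut R (D, E)" using ballcut_from_d[OF R C xG yG _ d] False by metis
          thus False using nb by blast
        qed
        moreover have "\<not> val_le (x - y) (e - x)" if e: "e \<in> E" for e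
        proof
          assume "val_le (x - y) (e - x)"
          then obtain n :: nat where "\<bar>e - x\<bar> \<le> of_nat n * \<bar>x - y\<bar>" using val_le_iff xy0 by blast
          hence "ball_cut R (D, E)" using ballcut_from_e[OF R C xG yG _ e] False by metis
          thus False using nb by blast
        qed
        ultimately have "x - y \<in> S" using xy0 by (simp add: S_def)
        thus ?thesis by (simp add: ball_S_def)
      qed
    next
      fix y assume y: "y \<in> ball_S UNIV S x"
      show "y \<in> G"
      proof (cases "y = x")
        case True thus ?thesis using x by simp
      next
        case False
        hence yS: "x - y \<in> S" using y by (simp add: ball_S_def)
        have "\<forall>d\<in>D. d < y"
        proof
          fix d assume d: "d \<in> D"
          have "\<bar>x - y\<bar> < \<bar>x - d\<bar>" using yS d not_val_le_lt by (auto simp: S_def)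
          moreover have "d < x" using xG d by blast
          moreover have "x - y \<le> \<bar>x - y\<bar>" by (rule abs_ge_self)
          ultimately show "d < y" by simp
        qed
        moreover have "\<forall>e\<in>E. y < e"
        proof
          fix e assume e: "e \<in> E"
          have "\<bar>x - y\<bar> < \<bar>e - x\<bar>" using yS e not_val_le_lt by (auto simp: S_def)
          moreover have "x < e" using xG e by blast
          moreover have "- (x - y) \<le> \<bar>x - y\<bar>" by (rule abs_ge_minus_self)
          ultimately show "y < e" by simp
        qed
        ultimately show ?thesis by (simp add: G_def)
      qed
    qed
    hence "is_ball UNIV G" unfolding is_ball_def using fs by blast
    moreover have "lower_cut UNIV G = lo (D, E)" "upper_cut UNIV G = hi (D, E)"
      using gap_edges[OF G_def False] by (simp_all add: lo_def hi_def)
    ultimately show ?thesis by blast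
  qed
qed



lemma conv_core:
  assumes R: "subfield R" and cv: "val_convex R" and c: "c \<in> S" and SR: "S \<subseteq> R - {0}"
    and t: "t \<in> R" "t \<noteq> 0" "t \<notin> S" and b: "b > 0"
    and h1: "\<forall>s\<in>S. \<forall>m::nat. of_nat m * \<bar>s\<bar> < b"
    and h2: "\<forall>s\<in>R. s \<noteq> 0 \<longrightarrow> s \<notin> S \<longrightarrow> (\<forall>m::nat. of_nat m * b < \<bar>s\<bar>)"
  shows False
proof -
  have cR: "c \<in> R - {0}" using c SR by blast
  have "of_nat 1 * b < \<bar>t\<bar>" using h2 t by blast
  hence "b < \<bar>t\<bar>" by simp
  hence v1: "val_le t b" using t b by (intro val_le_abs_le) auto
  have "of_nat 1 * \<bar>c\<bar> < b" using h1 c by blast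
  hence "\<bar>c\<bar> < b" by simp
  hence v2: "val_le b c" using b by (intro val_le_abs_le) auto
  obtain c' where c': "c' \<in> R - {0}" "val_le c' b" "val_le b c'"
  proof -
    have tR: "t \<in> R - {0}" using t by blast
    have "b \<noteq> 0" using b by simp
    hence "\<exists>c\<in>R - {0}. val_le c b \<and> val_le b c"
      using cv tR cR v1 v2 unfolding val_convex_def by blast
    thus ?thesis using that by blast
  qed
  show False
  proof (cases "c' \<in> S")
    case True
    obtain n :: nat where n: "\<bar>b\<bar> \<le> of_nat n * \<bar>c'\<bar>" using c' val_le_iff by blast
    have "of_nat (Suc n) * \<bar>c'\<bar> < b" using h1 True by blast
    moreover have "of_nat n * \<bar>c'\<bar> \<le> of_nat (Suc n) * \<bar>c'\<bar>" by (simp add: mult_right_mono)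
    ultimately show False using n b by simp
  next
    case False
    have b0: "b \<noteq> 0" using b by simp
    obtain n :: nat where n: "\<bar>c'\<bar> \<le> of_nat n * \<bar>b\<bar>" using c'(3) val_le_iff b0 by blast
    have "of_nat n * b < \<bar>c'\<bar>" using h2 c' False by blast
    thus False using n b by simp
  qed
qed

lemma ball_compl_facts:
  assumes "ball_compl K B D E"
  shows "\<forall>d\<in>D. \<forall>b\<in>B. d < b" "\<forall>b\<in>B. \<forall>e\<in>E. b < e" "D \<union> B \<union> E = K"
  using assms unfolding ball_compl_def by blast+

lemma fs_mult_nat:
  assumes S: "final_seg R S" and R: "subfield R" and s: "s \<in> S" and m: "m > 0"
  shows "of_nat m * \<bar>s\<bar> \<in> S"
proof -
  have sR: "s \<in> R" "s \<noteq> 0" using s fs_sub[OF S] by blast+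
  have "val_le s (of_nat m * \<bar>s\<bar>)" using sR by (subst val_le_iff) (auto simp: abs_mult)
  moreover have "of_nat m * \<bar>s\<bar> \<in> R" using sf_mult[OF R sf_of_nat[OF R] sf_abs[OF R sR(1)]] .
  moreover have "of_nat m * \<bar>s\<bar> \<noteq> 0" using sR m by simp
  ultimately show ?thesis using fs_sat[OF S s] by blast
qed

lemma fs_div_nat:
  assumes S: "final_seg R S" and R: "subfield R" and s: "s \<in> R" "s \<noteq> 0" "s \<notin> S" and m: "m > 0"
  shows "\<bar>s\<bar> / of_nat m \<notin> S" "- (\<bar>s\<bar> / of_nat m) \<notin> S"
proof -
  have v: "val_le (\<bar>s\<bar> / of_nat m) s"
  proof -
    have "val_le (\<bar>s\<bar> / of_nat m) \<bar>s\<bar>" using val_le_scale2[OF m] .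
    thus ?thesis using val_le_cong[of "\<bar>s\<bar> / of_nat m" "\<bar>s\<bar> / of_nat m" "\<bar>s\<bar>" s] by simp
  qed
  show "\<bar>s\<bar> / of_nat m \<notin> S" using fs_sat[OF S _ s(1,2) v] s(3) by blast
  have v': "val_le (- (\<bar>s\<bar> / of_nat m)) s" using v val_le_cong[of "- (\<bar>s\<bar> / of_nat m)" "\<bar>s\<bar> / of_nat m" s s] by simp
  show "- (\<bar>s\<bar> / of_nat m) \<notin> S" using fs_sat[OF S _ s(1,2) v'] s(3) by blast
qed

lemma ball_lohi_lower:
  assumes R: "subfield R" and cv: "val_convex R" and S: "final_seg R S" and aR: "a \<in> R"
    and ne: "S \<noteq> {}" and nf: "ball_S R S a \<noteq> R" and bc: "ball_compl R (ball_S R S a) D E"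
  shows "upper_cut UNIV D = lower_cut UNIV (ball_S R S a \<union> E)"
proof -
  let ?B = "ball_S R S a"
  note h = ball_compl_facts[OF bc]
  obtain t where t: "t \<in> R" "t \<noteq> 0" "t \<notin> S" using ball_neq_full[OF S R aR nf] by blast
  obtain c where c: "c \<in> S" using ne by blast
  have aB: "a \<in> ?B" using ball_center[OF aR] .
  have "fst (lower_cut UNIV (?B \<union> E)) \<subseteq> fst (upper_cut UNIV D)"
  proof
    fix y assume "y \<in> fst (lower_cut UNIV (?B \<union> E))"
    hence y: "\<forall>x\<in>?B \<union> E. y < x" by (auto simp: fst_lower_cut uc_def not_le)
    show "y \<in> fst (upper_cut UNIV D)"
    proof (rule ccontr)
      assume "y \<notin> fst (upper_cut UNIV D)"
      hence yd: "\<forall>d\<in>D. d < y" by (auto simp: fst_upper_cut dc_def not_le)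
      have ya: "y < a" using y aB by blast
      have h1: "\<forall>s\<in>S. \<forall>m::nat. of_nat m * \<bar>s\<bar> < a - y"
      proof (intro ballI allI)
        fix s m assume s: "s \<in> S"
        show "of_nat m * \<bar>s\<bar> < a - y"
        proof (cases "m = 0")
          case True thus ?thesis using ya by simp
        next
          case False
          have sR: "s \<in> R" using s fs_sub[OF S] by blast
          have inS: "of_nat m * \<bar>s\<bar> \<in> S" using fs_mult_nat[OF S R s] False by simp
          have "a - of_nat m * \<bar>s\<bar> \<in> R" using sf_diff[OF R aR sf_mult[OF R sf_of_nat[OF R] sf_abs[OF R sR]]] .
          hence "a - of_nat m * \<bar>s\<bar> \<in> ?B" using inS by (simp add: ball_S_def)
          hence "y < a - of_nat m * \<bar>s\<bar>" using y by blast
          thus ?thesis by simp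
        qed
      qed
      have h2: "\<forall>s\<in>R. s \<noteq> 0 \<longrightarrow> s \<notin> S \<longrightarrow> (\<forall>m::nat. of_nat m * (a - y) < \<bar>s\<bar>)"
      proof (intro ballI impI allI)
        fix s m assume s: "s \<in> R" "s \<noteq> 0" "s \<notin> S"
        show "of_nat m * (a - y) < \<bar>s\<bar>"
        proof (cases "m = 0")
          case True thus ?thesis using s by simp
        next
          case False
          define q where "q = \<bar>s\<bar> / of_nat m"
          have qR: "q \<in> R" unfolding q_def using sf_divide[OF R sf_abs[OF R s(1)] sf_of_nat[OF R]] .
          have qpos: "q > 0" using s False by (simp add: q_def)
          have qS: "q \<notin> S" using fs_div_nat[OF S R s] False by (simp add: q_def)
          have aqR: "a - q \<in> R" using sf_diff[OF R aR qR] .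
          have "a - q \<notin> ?B" using qS qpos by (simp add: ball_S_def)
          moreover have "a - q \<notin> E" using h(2) aB qpos by force
          ultimately have "a - q \<in> D" using h(3) aqR by blast
          hence "a - q < y" using yd by blast
          hence "a - y < q" by simp
          hence "of_nat m * (a - y) < of_nat m * q" using False by simp
          thus ?thesis using False by (simp add: q_def)
        qed
      qed
      show False using conv_core[OF R cv c fs_sub[OF S] t _ h1 h2] ya by simp
    qed
  qed
  moreover have "fst (upper_cut UNIV D) \<subseteq> fst (lower_cut UNIV (?B \<union> E))"
  proof
    fix y assume "y \<in> fst (upper_cut UNIV D)"
    then obtain d where d: "d \<in> D" "y \<le> d" by (auto simp: fst_upper_cut dc_def)
    have "\<forall>x\<in>?B \<union> E. d < x" using h d aB by (meson Un_iff less_trans)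
    hence "\<forall>x\<in>?B \<union> E. y < x" using d(2) by (meson le_less_trans)
    thus "y \<in> fst (lower_cut UNIV (?B \<union> E))" by (auto simp: fst_lower_cut uc_def not_le)
  qed
  ultimately show ?thesis using cut_eqI[OF upper_cut_cuts lower_cut_cuts] by blast
qed

lemma ball_lohi_upper:
  assumes R: "subfield R" and cv: "val_convex R" and S: "final_seg R S" and aR: "a \<in> R"
    and ne: "S \<noteq> {}" and nf: "ball_S R S a \<noteq> R" and bc: "ball_compl R (ball_S R S a) D E"
  shows "upper_cut UNIV (D \<union> ball_S R S a) = lower_cut UNIV E"
proof -
  let ?B = "ball_S R S a"
  note h = ball_compl_facts[OF bc]
  obtain t where t: "t \<in> R" "t \<noteq> 0" "t \<notin> S" using ball_neq_full[OF S R aR nf] by blast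
  obtain c where c: "c \<in> S" using ne by blast
  have aB: "a \<in> ?B" using ball_center[OF aR] .
  have "fst (lower_cut UNIV E) \<subseteq> fst (upper_cut UNIV (D \<union> ?B))"
  proof
    fix y assume "y \<in> fst (lower_cut UNIV E)"
    hence y: "\<forall>x\<in>E. y < x" by (auto simp: fst_lower_cut uc_def not_le)
    show "y \<in> fst (upper_cut UNIV (D \<union> ?B))"
    proof (rule ccontr)
      assume "y \<notin> fst (upper_cut UNIV (D \<union> ?B))"
      hence yd: "\<forall>d\<in>D \<union> ?B. d < y" by (auto simp: fst_upper_cut dc_def not_le)
      have ya: "a < y" using yd aB by blast
      have h1: "\<forall>s\<in>S. \<forall>m::nat. of_nat m * \<bar>s\<bar> < y - a"
      proof (intro ballI allI)
        fix s m assume s: "s \<in> S"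
        show "of_nat m * \<bar>s\<bar> < y - a"
        proof (cases "m = 0")
          case True thus ?thesis using ya by simp
        next
          case False
          have sR: "s \<in> R" using s fs_sub[OF S] by blast
          have inS: "- (of_nat m * \<bar>s\<bar>) \<in> S" using fs_neg[OF S R fs_mult_nat[OF S R s]] False by simp
          have "a + of_nat m * \<bar>s\<bar> \<in> R" using sf_add[OF R aR sf_mult[OF R sf_of_nat[OF R] sf_abs[OF R sR]]] .
          hence "a + of_nat m * \<bar>s\<bar> \<in> ?B" using inS by (simp add: ball_S_def)
          hence "a + of_nat m * \<bar>s\<bar> < y" using yd by blast
          thus ?thesis by simp
        qed
      qed
      have h2: "\<forall>s\<in>R. s \<noteq> 0 \<longrightarrow> s \<notin> S \<longrightarrow> (\<forall>m::nat. of_nat m * (y - a) < \<bar>s\<bar>)"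
      proof (intro ballI impI allI)
        fix s m assume s: "s \<in> R" "s \<noteq> 0" "s \<notin> S"
        show "of_nat m * (y - a) < \<bar>s\<bar>"
        proof (cases "m = 0")
          case True thus ?thesis using s by simp
        next
          case False
          define q where "q = \<bar>s\<bar> / of_nat m"
          have qR: "q \<in> R" unfolding q_def using sf_divide[OF R sf_abs[OF R s(1)] sf_of_nat[OF R]] .
          have qpos: "q > 0" using s False by (simp add: q_def)
          have qS: "- q \<notin> S" using fs_div_nat[OF S R s] False by (simp add: q_def)
          have aqR: "a + q \<in> R" using sf_add[OF R aR qR] .
          have "a + q \<notin> ?B" using qS qpos by (simp add: ball_S_def)
          moreover have "a + q \<notin> D" using h(1) aB qpos by force
          ultimately have "a + q \<in> E" using h(3) aqR by blast
          hence "y < a + q" using y by blast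
          hence "y - a < q" by simp
          hence "of_nat m * (y - a) < of_nat m * q" using False by simp
          thus ?thesis using False by (simp add: q_def)
        qed
      qed
      show False using conv_core[OF R cv c fs_sub[OF S] t _ h1 h2] ya by simp
    qed
  qed
  moreover have "fst (upper_cut UNIV (D \<union> ?B)) \<subseteq> fst (lower_cut UNIV E)"
  proof
    fix y assume "y \<in> fst (upper_cut UNIV (D \<union> ?B))"
    then obtain d where d: "d \<in> D \<union> ?B" "y \<le> d" by (auto simp: fst_upper_cut dc_def)
    have "\<forall>x\<in>E. d < x" using h d aB by (meson Un_iff less_trans)
    hence "\<forall>x\<in>E. y < x" using d(2) by (meson le_less_trans)
    thus "y \<in> fst (lower_cut UNIV E)" by (auto simp: fst_lower_cut uc_def not_le)
  qed
  ultimately show ?thesis using cut_eqI[OF upper_cut_cuts lower_cut_cuts] by blast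
qed



lemma nat_scale_lt:
  fixes q w :: "'a::linordered_field"
  assumes "of_nat (Suc n) * q \<le> of_nat n * w" "w > 0"
  shows "q < w"
proof (rule ccontr)
  assume "\<not> q < w" hence "w \<le> q" by simp
  hence "of_nat (Suc n) * w \<le> of_nat (Suc n) * q" by (simp add: mult_left_mono)
  hence "of_nat (Suc n) * w \<le> of_nat n * w" using assms(1) by linarith
  thus False using assms(2) by (simp add: algebra_simps)
qed

lemma far_from_ball:
  assumes R: "subfield R" and S: "final_seg R S" and aR: "a \<in> R"
    and bc: "ball_compl R (ball_S R S a) D E"
    and y: "\<forall>d\<in>D. d < y" "\<forall>e\<in>E. y < e" and ya: "y \<noteq> a"
    and r: "r \<in> R" "r \<notin> ball_S R S a" and n: "\<bar>a - r\<bar> \<le> of_nat n * \<bar>a - y\<bar>"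
  shows False
proof -
  let ?B = "ball_S R S a"
  note h = ball_compl_facts[OF bc]
  have aB: "a \<in> ?B" using ball_center[OF aR] .
  have ra: "a - r \<noteq> 0" using r aB by auto
  define q where "q = \<bar>a - r\<bar> / of_nat (Suc n)"
  have sp: "(0::'a) < of_nat (Suc n)" by (rule of_nat_0_less_iff[THEN iffD2]) simp
  have qR: "q \<in> R" unfolding q_def using sf_divide[OF R sf_abs[OF R sf_diff[OF R aR r(1)]] sf_of_nat[OF R]] .
  have qpos: "q > 0" unfolding q_def using ra sp by (intro divide_pos_pos) simp_all
  have qeq: "of_nat (Suc n) * q = \<bar>a - r\<bar>" unfolding q_def using sp by simp
  have qlt: "q < \<bar>a - y\<bar>" using nat_scale_lt[of n q "\<bar>a - y\<bar>"] qeq n ya by simp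
  have vq: "val_le (x::'a) (a - r)" if "\<bar>x\<bar> = q" for x
  proof -
    have "x \<noteq> 0" using that qpos by auto
    moreover have "\<bar>a - r\<bar> \<le> of_nat (Suc n) * \<bar>x\<bar>" using qeq that by simp
    ultimately show ?thesis using val_le_iff by blast
  qed
  have notS: "x \<notin> S" if "\<bar>x\<bar> = q" for x
  proof
    assume "x \<in> S"
    hence "a - r \<in> S" using fs_sat[OF S _ sf_diff[OF R aR r(1)] ra vq[OF that]] by blast
    thus False using r by (simp add: ball_S_def)
  qed
  have p: "a + q \<notin> ?B" "a - q \<notin> ?B"
    using notS[of "-q"] notS[of q] qpos by (auto simp: ball_S_def)
  have "a + q \<in> R" "a - q \<in> R" using sf_add[OF R aR qR] sf_diff[OF R aR qR] by auto
  moreover have "a + q \<notin> D" using h(1) aB qpos by force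
  moreover have "a - q \<notin> E" using h(2) aB qpos by force
  ultimately have qq: "a + q \<in> E" "a - q \<in> D" using h(3) p by blast+
  show False
  proof (cases "a < y")
    case True
    hence "y < a + q" using y(2) qq(1) by blast
    thus False using qlt True by simp
  next
    case False
    hence "y < a" using ya by simp
    moreover have "a - q < y" using y(1) qq(2) by blast
    ultimately show False using qlt by simp
  qed
qed

lemma ball_hull:
  assumes R: "subfield R" and S: "final_seg R S" and aR: "a \<in> R"
    and bc: "ball_compl R (ball_S R S a) D E"
  shows "\<exists>G. is_ball UNIV G \<and> lower_cut UNIV G = upper_cut UNIV D \<and> upper_cut UNIV G = lower_cut UNIV E"
proof -
  let ?B = "ball_S R S a"
  note h = ball_compl_facts[OF bc]
  have aB: "a \<in> ?B" using ball_center[OF aR] .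
  define G where "G = {y. (\<forall>d\<in>D. d < y) \<and> (\<forall>e\<in>E. y < e)}"
  have aG: "a \<in> G" using h aB by (simp add: G_def)
  define S' where "S' = {z. z \<noteq> 0 \<and> (\<forall>d\<in>D. \<not> val_le z (a - d)) \<and> (\<forall>e\<in>E. \<not> val_le z (e - a))}"
  have fs: "final_seg UNIV S'" unfolding final_seg_def
  proof (intro conjI ballI impI)
    show "S' \<subseteq> UNIV - {0}" by (auto simp: S'_def)
    fix w w' assume w: "w \<in> S'" and w': "w' \<in> UNIV - {0}" and v: "val_le w w'"
    have "\<not> val_le w' (a - d)" if "d \<in> D" for d
      using w that val_le_trans[OF v, of "a - d"] by (auto simp: S'_def)
    moreover have "\<not> val_le w' (e - a)" if "e \<in> E" for e
      using w that val_le_trans[OF v, of "e - a"] by (auto simp: S'_def)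
    ultimately show "w' \<in> S'" using w' by (auto simp: S'_def)
  qed
  have DR: "D \<subseteq> R" "E \<subseteq> R" using h(3) by blast+
  have DB: "d \<notin> ?B" if "d \<in> D" for d using h(1) that by blast
  have EB: "e \<notin> ?B" if "e \<in> E" for e using h(2) that by blast
  have "G = ball_S UNIV S' a"
  proof (rule set_eqI, rule iffI)
    fix y assume y: "y \<in> G"
    show "y \<in> ball_S UNIV S' a"
    proof (cases "y = a")
      case True thus ?thesis by (simp add: ball_S_def)
    next
      case False
      have ay0: "a - y \<noteq> 0" using False by simp
      have yy: "\<forall>d\<in>D. d < y" "\<forall>e\<in>E. y < e" using y by (simp_all add: G_def)
      have "\<not> val_le (a - y) (a - d)" if d: "d \<in> D" for d
      proof
        assume "val_le (a - y) (a - d)"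
        then obtain n :: nat where "\<bar>a - d\<bar> \<le> of_nat n * \<bar>a - y\<bar>" using val_le_iff ay0 by blast
        thus False using far_from_ball[OF R S aR bc yy False _ DB[OF d]] DR d by blast
      qed
      moreover have "\<not> val_le (a - y) (e - a)" if e: "e \<in> E" for e
      proof
        assume "val_le (a - y) (e - a)"
        then obtain n :: nat where "\<bar>e - a\<bar> \<le> of_nat n * \<bar>a - y\<bar>" using val_le_iff ay0 by blast
        hence "\<bar>a - e\<bar> \<le> of_nat n * \<bar>a - y\<bar>" by (simp add: abs_minus_commute)
        thus False using far_from_ball[OF R S aR bc yy False _ EB[OF e]] DR e by blast
      qed
      ultimately have "a - y \<in> S'" using ay0 by (simp add: S'_def)
      thus ?thesis by (simp add: ball_S_def)
    qed
  next
    fix y assume y: "y \<in> ball_S UNIV S' a"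
    show "y \<in> G"
    proof (cases "y = a")
      case True thus ?thesis using aG by simp
    next
      case False
      hence yS: "a - y \<in> S'" using y by (simp add: ball_S_def)
      have "\<forall>d\<in>D. d < y"
      proof
        fix d assume d: "d \<in> D"
        have "\<bar>a - y\<bar> < \<bar>a - d\<bar>" using yS d not_val_le_lt by (auto simp: S'_def)
        moreover have "d < a" using h(1) aB d by blast
        moreover have "a - y \<le> \<bar>a - y\<bar>" by (rule abs_ge_self)
        ultimately show "d < y" by simp
      qed
      moreover have "\<forall>e\<in>E. y < e"
      proof
        fix e assume e: "e \<in> E"
        have "\<bar>a - y\<bar> < \<bar>e - a\<bar>" using yS e not_val_le_lt by (auto simp: S'_def)
        moreover have "a < e" using h(2) aB e by blast
        moreover have "- (a - y) \<le> \<bar>a - y\<bar>" by (rule abs_ge_minus_self)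
        ultimately show "y < e" by simp
      qed
      ultimately show ?thesis by (simp add: G_def)
    qed
  qed
  hence "is_ball UNIV G" unfolding is_ball_def using fs by blast
  moreover have "G \<noteq> {}" using aG by blast
  ultimately show ?thesis using gap_edges[OF G_def] by blast
qed



lemma hull_ball:
  assumes R: "subfield R"
  shows "\<exists>H. is_ball UNIV H \<and> lower_cut UNIV H = lower_cut UNIV R \<and> upper_cut UNIV H = upper_cut UNIV R"
proof -
  define S' where "S' = {z::'a. z \<noteq> 0 \<and> (\<exists>r\<in>R - {0}. val_le r z)}"
  have fs: "final_seg UNIV S'" unfolding final_seg_def
  proof (intro conjI ballI impI)
    show "S' \<subseteq> UNIV - {0}" by (auto simp: S'_def)
    fix w w' assume w: "w \<in> S'" and w': "w' \<in> UNIV - {0}" and v: "val_le w w'"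
    obtain r where "r \<in> R - {0}" "val_le r w" using w by (auto simp: S'_def)
    hence "val_le r w'" "r \<in> R - {0}" using val_le_trans v by blast+
    thus "w' \<in> S'" using w' by (auto simp: S'_def)
  qed
  define H where "H = ball_S UNIV S' 0"
  have hb: "\<exists>r\<in>R. \<bar>h\<bar> \<le> r" if h: "h \<in> H" for h
  proof (cases "h = 0")
    case True thus ?thesis using sf_0[OF R] by (intro bexI[of _ 0]) auto
  next
    case False
    hence "- h \<in> S'" using h by (simp add: H_def ball_S_def)
    then obtain r where r: "r \<in> R" "r \<noteq> 0" "val_le r (- h)" by (auto simp: S'_def)
    then obtain n :: nat where "\<bar>- h\<bar> \<le> of_nat n * \<bar>r\<bar>" using val_le_iff by blast
    moreover have "of_nat n * \<bar>r\<bar> \<in> R" using sf_mult[OF R sf_of_nat[OF R] sf_abs[OF R r(1)]] .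
    ultimately show ?thesis by auto
  qed
  have rh: "r \<in> H" if r: "r \<in> R" for r
  proof (cases "r = 0")
    case True thus ?thesis by (simp add: H_def ball_S_def)
  next
    case False
    have "val_le r (- r)" using False by (intro val_le_abs_le) auto
    hence "- r \<in> S'" using False r by (auto simp: S'_def)
    thus ?thesis by (simp add: H_def ball_S_def)
  qed
  have uc: "uc UNIV H = uc UNIV R"
  proof (rule set_eqI, rule iffI)
    fix y assume "y \<in> uc UNIV H"
    then obtain h where h: "h \<in> H" "h \<le> y" by (auto simp: uc_def)
    obtain r where r: "r \<in> R" "\<bar>h\<bar> \<le> r" using hb[OF h(1)] by blast
    have "- r \<in> R" using sf_uminus[OF R r(1)] .
    moreover have "- r \<le> y"
    proof -
      have "- \<bar>h\<bar> \<le> h" by (simp add: abs_le_iff[symmetric] abs_minus_cancel)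
      thus ?thesis using r(2) h(2) by linarith
    qed
    ultimately show "y \<in> uc UNIV R" by (auto simp: uc_def)
  next
    fix y assume "y \<in> uc UNIV R"
    then obtain r where "r \<in> R" "r \<le> y" by (auto simp: uc_def)
    thus "y \<in> uc UNIV H" using rh by (auto simp: uc_def)
  qed
  have dc: "dc UNIV H = dc UNIV R"
  proof (rule set_eqI, rule iffI)
    fix y assume "y \<in> dc UNIV H"
    then obtain h where h: "h \<in> H" "y \<le> h" by (auto simp: dc_def)
    obtain r where r: "r \<in> R" "\<bar>h\<bar> \<le> r" using hb[OF h(1)] by blast
    have "h \<le> \<bar>h\<bar>" by (rule abs_ge_self)
    hence "y \<le> r" using r(2) h(2) by linarith
    thus "y \<in> dc UNIV R" using r(1) by (auto simp: dc_def)
  next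
    fix y assume "y \<in> dc UNIV R"
    then obtain r where "r \<in> R" "y \<le> r" by (auto simp: dc_def)
    thus "y \<in> dc UNIV H" using rh by (auto simp: dc_def)
  qed
  have "is_ball UNIV H" unfolding is_ball_def H_def using fs by blast
  thus ?thesis using uc dc by (intro exI[of _ H]) (simp add: lower_cut_eq upper_cut_eq)
qed

lemma bmax_ball:
  assumes R: "subfield R" and aR: "a \<in> R"
  shows "\<exists>G. is_ball UNIV G \<and> lower_cut UNIV G = upper_cut UNIV {x\<in>R. x < a}
            \<and> upper_cut UNIV G = lower_cut UNIV {x\<in>R. a < x}"
proof -
  define D0 where "D0 = {x\<in>R. x < a}"
  define E0 where "E0 = {x\<in>R. a < x}"
  define G where "G = {y. (\<forall>d\<in>D0. d < y) \<and> (\<forall>e\<in>E0. y < e)}"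
  have aG: "a \<in> G" by (simp add: G_def D0_def E0_def)
  define Sm where "Sm = {z::'a. z \<noteq> 0 \<and> (\<forall>r\<in>R - {0}. \<not> val_le z r)}"
  have fs: "final_seg UNIV Sm" unfolding final_seg_def
  proof (intro conjI ballI impI)
    show "Sm \<subseteq> UNIV - {0}" by (auto simp: Sm_def)
    fix w w' assume w: "w \<in> Sm" and w': "w' \<in> UNIV - {0}" and v: "val_le w w'"
    have "\<not> val_le w' r" if "r \<in> R - {0}" for r
      using w that val_le_trans[OF v, of r] by (auto simp: Sm_def)
    thus "w' \<in> Sm" using w' by (auto simp: Sm_def)
  qed
  have "G = ball_S UNIV Sm a"
  proof (rule set_eqI, rule iffI)
    fix y assume y: "y \<in> G"
    show "y \<in> ball_S UNIV Sm a"
    proof (cases "y = a")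
      case True thus ?thesis by (simp add: ball_S_def)
    next
      case False
      have ay0: "a - y \<noteq> 0" using False by simp
      have "\<not> val_le (a - y) r" if r: "r \<in> R" "r \<noteq> 0" for r
      proof
        assume "val_le (a - y) r"
        then obtain n :: nat where n: "\<bar>r\<bar> \<le> of_nat n * \<bar>a - y\<bar>" using val_le_iff ay0 by blast
        define q where "q = \<bar>r\<bar> / of_nat (Suc n)"
        have sp: "(0::'a) < of_nat (Suc n)" by (rule of_nat_0_less_iff[THEN iffD2]) simp
        have qR: "q \<in> R" unfolding q_def using sf_divide[OF R sf_abs[OF R r(1)] sf_of_nat[OF R]] .
        have qpos: "q > 0" unfolding q_def using r sp by (intro divide_pos_pos) simp_all
        have qeq: "of_nat (Suc n) * q = \<bar>r\<bar>" unfolding q_def using sp by simp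
        have qlt: "q < \<bar>a - y\<bar>" using nat_scale_lt[of n q "\<bar>a - y\<bar>"] qeq n ay0 by simp
        have "a - q \<in> D0" "a + q \<in> E0" using qpos sf_diff[OF R aR qR] sf_add[OF R aR qR]
          by (auto simp: D0_def E0_def)
        hence "a - q < y" "y < a + q" using y by (auto simp: G_def)
        thus False using qlt by (simp add: abs_if split: if_splits)
      qed
      hence "a - y \<in> Sm" using ay0 by (simp add: Sm_def)
      thus ?thesis by (simp add: ball_S_def)
    qed
  next
    fix y assume y: "y \<in> ball_S UNIV Sm a"
    show "y \<in> G"
    proof (cases "y = a")
      case True thus ?thesis using aG by simp
    next
      case False
      hence yS: "a - y \<in> Sm" using y by (simp add: ball_S_def)
      have "\<forall>d\<in>D0. d < y"
      proof
        fix d assume d: "d \<in> D0"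
        hence "a - d \<in> R" "a - d \<noteq> 0" using sf_diff[OF R aR] by (auto simp: D0_def)
        hence "\<not> val_le (a - y) (a - d)" using yS by (auto simp: Sm_def)
        hence "\<bar>a - y\<bar> < \<bar>a - d\<bar>" by (rule not_val_le_lt)
        moreover have "d < a" using d by (simp add: D0_def)
        moreover have "a - y \<le> \<bar>a - y\<bar>" by (rule abs_ge_self)
        ultimately show "d < y" by simp
      qed
      moreover have "\<forall>e\<in>E0. y < e"
      proof
        fix e assume e: "e \<in> E0"
        hence "e - a \<in> R" "e - a \<noteq> 0" using sf_diff[OF R _ aR] by (auto simp: E0_def)
        hence "\<not> val_le (a - y) (e - a)" using yS by (auto simp: Sm_def)
        hence "\<bar>a - y\<bar> < \<bar>e - a\<bar>" by (rule not_val_le_lt)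
        moreover have "a < e" using e by (simp add: E0_def)
        moreover have "- (a - y) \<le> \<bar>a - y\<bar>" by (rule abs_ge_minus_self)
        ultimately show "y < e" by simp
      qed
      ultimately show ?thesis by (simp add: G_def)
    qed
  qed
  hence "is_ball UNIV G" unfolding is_ball_def using fs by blast
  moreover have "G \<noteq> {}" using aG by blast
  ultimately have "is_ball UNIV G \<and> lower_cut UNIV G = upper_cut UNIV D0 \<and> upper_cut UNIV G = lower_cut UNIV E0"
    using gap_edges[OF G_def] by blast
  thus ?thesis unfolding D0_def E0_def by blast
qed



lemma fst_lower_single: "fst (lower_cut R {e}) = {x\<in>R. x < e}"
  by (auto simp: fst_lower_cut uc_def)
lemma fst_upper_single: "fst (upper_cut R {d}) = {x\<in>R. x \<le> d}"
  by (auto simp: fst_upper_cut dc_def)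

lemma min_cut:
  assumes C: "(D, E) \<in> cuts R" and m: "m \<in> E" "\<forall>e\<in>E. m \<le> e"
  shows "(D, E) = lower_cut R {m}"
proof (rule cut_eqI[OF C lower_cut_cuts])
  have "D = {x\<in>R. x < m}"
  proof
    show "D \<subseteq> {x\<in>R. x < m}" using C m by (auto simp: cuts_def)
    show "{x\<in>R. x < m} \<subseteq> D"
    proof
      fix x assume "x \<in> {x\<in>R. x < m}"
      hence "x \<in> R" "x \<notin> E" using m by force+
      thus "x \<in> D" using C by (auto simp: cuts_def)
    qed
  qed
  thus "fst (D, E) = fst (lower_cut R {m})" by (simp add: fst_lower_single)
qed

lemma max_cut:
  assumes C: "(D, E) \<in> cuts R" and m: "m \<in> D" "\<forall>d\<in>D. d \<le> m"
  shows "(D, E) = upper_cut R {m}"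
proof (rule cut_eqI[OF C upper_cut_cuts])
  have "D = {x\<in>R. x \<le> m}"
  proof
    show "D \<subseteq> {x\<in>R. x \<le> m}" using C m by (auto simp: cuts_def)
    show "{x\<in>R. x \<le> m} \<subseteq> D"
    proof
      fix x assume x: "x \<in> {x\<in>R. x \<le> m}"
      thus "x \<in> D" using cut_down[OF C, of m x] m by simp
    qed
  qed
  thus "fst (D, E) = fst (upper_cut R {m})" by (simp add: fst_upper_single)
qed

lemma is_ball_single: "a \<in> K \<Longrightarrow> is_ball K {a}"
  unfolding is_ball_def using ball_singleton[of a K] by (auto simp: final_seg_def intro!: bexI[of _ a] exI[of _ "{}"])

lemma mid_bounds:
  assumes Z: "Z \<in> cuts R" and ne: "fst Z \<noteq> {}" "snd Z \<noteq> {}"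
  shows "fst (lower_cut UNIV R) \<subseteq> fst (lo Z)" "fst (hi Z) \<subseteq> fst (upper_cut UNIV R)"
proof -
  have sub: "fst Z \<subseteq> R" "snd Z \<subseteq> R" using cutsD[OF Z] by auto
  obtain d where d: "d \<in> fst Z" using ne by blast
  obtain e where e: "e \<in> snd Z" using ne by blast
  show "fst (lower_cut UNIV R) \<subseteq> fst (lo Z)"
  proof
    fix y assume "y \<in> fst (lower_cut UNIV R)"
    hence "y < d" using d sub by (auto simp: fst_lower_cut uc_def not_le)
    thus "y \<in> fst (lo Z)" using d by (auto simp: fst_lo intro!: bexI[of _ d])
  qed
  show "fst (hi Z) \<subseteq> fst (upper_cut UNIV R)"
  proof
    fix y assume "y \<in> fst (hi Z)"
    hence "y < e" using e by (simp add: fst_hi)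
    thus "y \<in> fst (upper_cut UNIV R)" using e sub by (auto simp: fst_upper_cut dc_def intro!: bexI[of _ e])
  qed
qed

lemma open_int_set: "is_ball UNIV B0 \<Longrightarrow> openin (full_top UNIV) (int_set B0)"
  unfolding openin_full_top
  using int_set_full[of B0] openin_Int[OF open_basic1[OF lower_cut_cuts] open_basic2[OF upper_cut_cuts]]
  by (simp add: int_set_def)

lemma open_out_set: "is_ball UNIV B0 \<Longrightarrow> openin (full_top UNIV) (out_set B0)"
  unfolding openin_full_top
  using out_set_full[of B0] openin_Un[OF open_basic2[OF lower_cut_cuts] open_basic1[OF upper_cut_cuts]]
  by (simp add: out_set_def)

lemma bD_single: "bD R {a} = {x\<in>R. x < a}" by (auto simp: bD_def)
lemma bE_single: "bE R {a} = {x\<in>R. a < x}" by (auto simp: bE_def)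



lemma equivI: "is_ball K G \<Longrightarrow> cut_equiv K (lower_cut K G) (upper_cut K G)"
  unfolding cut_equiv_def by blast
lemma equivI2: "is_ball K G \<Longrightarrow> cut_equiv K (upper_cut K G) (lower_cut K G)"
  unfolding cut_equiv_def by (metis insert_commute)

lemma fullD: "full_set K U \<Longrightarrow> X \<in> U \<Longrightarrow> Y \<in> cuts K \<Longrightarrow> cut_equiv K X Y \<Longrightarrow> Y \<in> U"
  unfolding full_set_def by blast

lemma ball_data:
  assumes R: "subfield R" and B: "is_ball R B" and nf: "B \<noteq> R"
  shows "\<exists>a S. a \<in> R \<and> final_seg R S \<and> B = ball_S R S a \<and> ball_compl R B (bD R B) (bE R B)
     \<and> lower_cut R B = (bD R B, B \<union> bE R B) \<and> upper_cut R B = (bD R B \<union> B, bE R B)"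
proof -
  obtain a S where a: "a \<in> R" "final_seg R S" "B = ball_S R S a" using B by (auto simp: is_ball_def)
  have bc: "ball_compl R B (bD R B) (bE R B)" using ball_compl_exists[OF a(2) R a(1)] a(3) by simp
  have ne: "B \<noteq> {}" using ball_nonempty[OF B] .
  have sub: "B \<subseteq> R" using a(3) ball_sub by blast
  show ?thesis using a bc lower_cut_compl[OF bc ne sub] upper_cut_compl[OF bc ne sub] by blast
qed

context
  fixes R :: "'a::linordered_field set" and \<iota> :: "'a set \<times> 'a set \<Rightarrow> 'a set \<times> 'a set"
  assumes R: "subfield R" and cv: "val_convex R" and im: "\<iota> \<in> cuts R \<rightarrow> cuts UNIV"
    and P1: "\<forall>D E. (D, E) \<in> cuts R \<and> \<not> ball_cut R (D, E) \<longrightarrow>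
              \<iota> (D, E) = upper_cut UNIV D \<or> \<iota> (D, E) = lower_cut UNIV E"
    and P2: "\<forall>B0 D E. is_ball R B0 \<and> B0 \<noteq> R \<and> ball_compl R B0 D E \<longrightarrow>
              \<iota> (lower_cut R B0) = upper_cut UNIV D \<and> \<iota> (upper_cut R B0) = lower_cut UNIV E"
    and P3: "\<iota> ({}, R) = lower_cut UNIV R"
    and P4: "\<iota> (R, {}) = upper_cut UNIV R"
begin

lemma ball_vals:
  assumes B: "is_ball R B" and nf: "B \<noteq> R"
  shows "\<iota> (lower_cut R B) = upper_cut UNIV (bD R B)" "\<iota> (upper_cut R B) = lower_cut UNIV (bE R B)"
proof -
  obtain a S where "ball_compl R B (bD R B) (bE R B)" using ball_data[OF R B nf] by blast
  thus "\<iota> (lower_cut R B) = upper_cut UNIV (bD R B)" "\<iota> (upper_cut R B) = lower_cut UNIV (bE R B)"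
    using P2 B nf by blast+
qed

lemma cls: "C \<in> cuts R \<Longrightarrow> \<iota> C = lo C \<or> \<iota> C = hi C"
proof -
  assume C: "C \<in> cuts R"
  obtain D E where DE: "C = (D, E)" by (cases C)
  show ?thesis
  proof (cases "ball_cut R C")
    case False
    thus ?thesis using P1 C DE by (auto simp: lo_def hi_def)
  next
    case True
    then obtain B where B: "is_ball R B" "C = upper_cut R B \<or> C = lower_cut R B" by (auto simp: ball_cut_def)
    show ?thesis
    proof (cases "B = R")
      case True
      thus ?thesis using B(2) P3 P4 by (auto simp: lower_cut_self upper_cut_self lo_def hi_def)
    next
      case False
      obtain a S where d: "lower_cut R B = (bD R B, B \<union> bE R B)" "upper_cut R B = (bD R B \<union> B, bE R B)"
        using ball_data[OF R B(1) False] by blast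
      show ?thesis using B(2) ball_vals[OF B(1) False] d by (auto simp: lo_def hi_def)
    qed
  qed
qed

lemma compat: "C \<in> cuts R \<Longrightarrow> restrict_cut R (\<iota> C) = C"
  using cls restrict_lo restrict_hi by metis

lemma inj: "inj_on \<iota> (cuts R)"
proof (rule inj_onI)
  fix x y assume "x \<in> cuts R" "y \<in> cuts R" "\<iota> x = \<iota> y"
  thus "x = y" using compat by metis
qed

lemma eqv:
  assumes B: "is_ball R B"
  shows "\<exists>G. is_ball UNIV G \<and> \<iota> (lower_cut R B) = lower_cut UNIV G \<and> \<iota> (upper_cut R B) = upper_cut UNIV G"
proof (cases "B = R")
  case True
  obtain H where "is_ball UNIV H" "lower_cut UNIV H = lower_cut UNIV R" "upper_cut UNIV H = upper_cut UNIV R"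
    using hull_ball[OF R] by blast
  thus ?thesis using True P3 P4 by (simp add: lower_cut_self upper_cut_self) metis
next
  case False
  obtain a S where a: "a \<in> R" "final_seg R S" "B = ball_S R S a" "ball_compl R B (bD R B) (bE R B)"
    using ball_data[OF R B False] by blast
  obtain G where "is_ball UNIV G" "lower_cut UNIV G = upper_cut UNIV (bD R B)" "upper_cut UNIV G = lower_cut UNIV (bE R B)"
    using ball_hull[OF R a(2) a(1)] a(3,4) by metis
  thus ?thesis using ball_vals[OF B False] by metis
qed

lemma rkey:
  assumes C: "(D, E) \<in> cuts R" and ne: "E \<noteq> {}" and nm: "\<not> (\<exists>m\<in>E. \<forall>e\<in>E. m \<le> e)"
    and U: "full_set UNIV U" and X: "\<iota> (D, E) \<in> U"
  shows "hi (D, E) \<in> U"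
proof (cases "ball_cut R (D, E)")
  case False
  have "\<iota> (D, E) = lo (D, E) \<or> \<iota> (D, E) = hi (D, E)" using cls C by blast
  moreover
  { assume l: "\<iota> (D, E) = lo (D, E)"
    have ?thesis
    proof (cases "lo (D, E) = hi (D, E)")
      case True thus ?thesis using X l by simp
    next
      case F: False
      then obtain G where G: "is_ball UNIV G" "lower_cut UNIV G = lo (D, E)" "upper_cut UNIV G = hi (D, E)"
        using nonball_gap[OF R C False] by blast
      show ?thesis using fullD[OF U X hi_cuts] equivI[OF G(1)] G l by metis
    qed }
  ultimately show ?thesis using X by metis
next
  case True
  then obtain B where B: "is_ball R B" "(D, E) = upper_cut R B \<or> (D, E) = lower_cut R B" by (auto simp: ball_cut_def)
  show ?thesis
  proof (cases "B = R")
    case True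
    hence "(D, E) = ({}, R)" using B(2) ne by (auto simp: lower_cut_self upper_cut_self)
    thus ?thesis using X P3 by (simp add: hi_def)
  next
    case False
    obtain a S where a: "a \<in> R" "final_seg R S" "B = ball_S R S a" "ball_compl R B (bD R B) (bE R B)"
      "lower_cut R B = (bD R B, B \<union> bE R B)" "upper_cut R B = (bD R B \<union> B, bE R B)"
      using ball_data[OF R B(1) False] by blast
    show ?thesis using B(2)
    proof
      assume u: "(D, E) = upper_cut R B"
      thus ?thesis using X ball_vals[OF B(1) False] a(6) by (simp add: hi_def)
    next
      assume l: "(D, E) = lower_cut R B"
      hence E: "E = B \<union> bE R B" using a(5) by simp
      have "S \<noteq> {}"
      proof
        assume "S = {}"
        hence "B = {a}" using a(3) ball_singleton[OF a(1)] by simp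
        hence "a \<in> E" "\<forall>e\<in>E. a \<le> e" using E by (auto simp: bE_def)
        thus False using nm by blast
      qed
      hence "upper_cut UNIV (bD R B) = lower_cut UNIV (B \<union> bE R B)"
        using ball_lohi_lower[OF R cv a(2) a(1) _ _ ] a(3,4) False by blast
      thus ?thesis using X ball_vals[OF B(1) False] l a(5) by (simp add: hi_def)
    qed
  qed
qed

lemma lkey:
  assumes C: "(D, E) \<in> cuts R" and ne: "D \<noteq> {}" and nm: "\<not> (\<exists>m\<in>D. \<forall>d\<in>D. d \<le> m)"
    and U: "full_set UNIV U" and X: "\<iota> (D, E) \<in> U"
  shows "lo (D, E) \<in> U"
proof (cases "ball_cut R (D, E)")
  case False
  have "\<iota> (D, E) = lo (D, E) \<or> \<iota> (D, E) = hi (D, E)" using cls C by blast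
  moreover
  { assume l: "\<iota> (D, E) = hi (D, E)"
    have ?thesis
    proof (cases "lo (D, E) = hi (D, E)")
      case True thus ?thesis using X l by simp
    next
      case F: False
      then obtain G where G: "is_ball UNIV G" "lower_cut UNIV G = lo (D, E)" "upper_cut UNIV G = hi (D, E)"
        using nonball_gap[OF R C False] by blast
      show ?thesis using fullD[OF U X lo_cuts] equivI2[OF G(1)] G l by metis
    qed }
  ultimately show ?thesis using X by metis
next
  case True
  then obtain B where B: "is_ball R B" "(D, E) = upper_cut R B \<or> (D, E) = lower_cut R B" by (auto simp: ball_cut_def)
  show ?thesis
  proof (cases "B = R")
    case True
    hence "(D, E) = (R, {})" using B(2) ne by (auto simp: lower_cut_self upper_cut_self)
    thus ?thesis using X P4 by (simp add: lo_def)
  next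
    case False
    obtain a S where a: "a \<in> R" "final_seg R S" "B = ball_S R S a" "ball_compl R B (bD R B) (bE R B)"
      "lower_cut R B = (bD R B, B \<union> bE R B)" "upper_cut R B = (bD R B \<union> B, bE R B)"
      using ball_data[OF R B(1) False] by blast
    show ?thesis using B(2)
    proof
      assume l: "(D, E) = lower_cut R B"
      thus ?thesis using X ball_vals[OF B(1) False] a(5) by (simp add: lo_def)
    next
      assume u: "(D, E) = upper_cut R B"
      hence D: "D = bD R B \<union> B" using a(6) by simp
      have "S \<noteq> {}"
      proof
        assume "S = {}"
        hence "B = {a}" using a(3) ball_singleton[OF a(1)] by simp
        hence "a \<in> D" "\<forall>d\<in>D. d \<le> a" using D by (auto simp: bD_def)
        thus False using nm by blast
      qed
      hence "upper_cut UNIV (bD R B \<union> B) = lower_cut UNIV (bE R B)"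
        using ball_lohi_upper[OF R cv a(2) a(1) _ _ ] a(3,4) False by blast
      thus ?thesis using X ball_vals[OF B(1) False] u a(6) by (simp add: lo_def)
    qed
  qed
qed

end


context
  fixes R :: "'a::linordered_field set" and \<iota> :: "'a set \<times> 'a set \<Rightarrow> 'a set \<times> 'a set"
  assumes R: "subfield R" and cv: "val_convex R" and im: "\<iota> \<in> cuts R \<rightarrow> cuts UNIV"
    and P1: "\<forall>D E. (D, E) \<in> cuts R \<and> \<not> ball_cut R (D, E) \<longrightarrow>
              \<iota> (D, E) = upper_cut UNIV D \<or> \<iota> (D, E) = lower_cut UNIV E"
    and P2: "\<forall>B0 D E. is_ball R B0 \<and> B0 \<noteq> R \<and> ball_compl R B0 D E \<longrightarrow>
              \<iota> (lower_cut R B0) = upper_cut UNIV D \<and> \<iota> (upper_cut R B0) = lower_cut UNIV E"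
    and P3: "\<iota> ({}, R) = lower_cut UNIV R"
    and P4: "\<iota> (R, {}) = upper_cut UNIV R"
begin

lemmas ctx = R cv im P1 P2 P3 P4

lemma imC: "C \<in> cuts R \<Longrightarrow> \<iota> C \<in> cuts UNIV" using im by blast

lemma fstI: "C \<in> cuts R \<Longrightarrow> r \<in> fst C \<Longrightarrow> r \<in> fst (\<iota> C)"
  using compat[OF ctx] by (metis IntE fst_conv restrict_cut_def)
lemma sndI: "C \<in> cuts R \<Longrightarrow> r \<in> snd C \<Longrightarrow> r \<in> snd (\<iota> C)"
  using compat[OF ctx] by (metis IntE snd_conv restrict_cut_def)

lemma cont: "continuous_map (full_top R) (full_top UNIV) \<iota>"
proof -
  have Rne: "R \<noteq> {}" using sf_0[OF R] by blast
  have tR: "topspace (full_top R) = cuts R" using topspace_full_top[OF Rne] .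
  have tF: "topspace (full_top (UNIV::'a set)) = cuts UNIV" using topspace_full_top[of "UNIV::'a set"] by simp
  show ?thesis unfolding continuous_map_def tR tF
  proof (intro conjI allI impI)
    show "\<iota> \<in> cuts R \<rightarrow> cuts UNIV" using im .
    fix U :: "('a set \<times> 'a set) set" assume "openin (full_top UNIV) U"
    hence Uo: "openin (interval_top UNIV) U" and Uf: "full_set UNIV U" by (auto simp: openin_full_top)
    have Up: "U \<subseteq> cuts UNIV" "rightopen UNIV U" "leftopen UNIV U" using open_props[OF Uo] by blast+
    let ?P = "{x \<in> cuts R. \<iota> x \<in> U}"
    have full: "full_set R ?P"
      unfolding full_set_def
    proof (intro conjI ballI impI)
      show "?P \<subseteq> cuts R" by blast
      fix C1 C2 assume C1: "C1 \<in> ?P" and C2: "C2 \<in> cuts R" and eq: "cut_equiv R C1 C2"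
      show "C2 \<in> ?P"
      proof (cases "C1 = C2")
        case True thus ?thesis using C1 by simp
      next
        case False
        then obtain B where B: "is_ball R B" "{C1, C2} = {lower_cut R B, upper_cut R B}"
          using eq by (auto simp: cut_equiv_def)
        obtain G where G: "is_ball UNIV G" "\<iota> (lower_cut R B) = lower_cut UNIV G" "\<iota> (upper_cut R B) = upper_cut UNIV G"
          using eqv[OF ctx B(1)] by blast
        have "cut_equiv UNIV (\<iota> C1) (\<iota> C2)"
          using B(2) G equivI[OF G(1)] equivI2[OF G(1)] False by (auto simp: doubleton_eq_iff)
        hence "\<iota> C2 \<in> U" using fullD[OF Uf _ imC[OF C2]] C1 by blast
        thus ?thesis using C2 by blast
      qed
    qed
    have op: "openin (interval_top R) ?P"
    proof (rule open_intro[OF Rne])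
      show "?P \<subseteq> cuts R" by blast
    next
      fix X assume XP: "X \<in> ?P" and nt: "fst X \<noteq> R"
      obtain D E where X: "X = (D, E)" by (cases X)
      have C: "(D, E) \<in> cuts R" using XP X by blast
      have XU: "\<iota> (D, E) \<in> U" using XP X by blast
      have DE: "D \<union> E = R" "\<forall>d\<in>D. \<forall>e\<in>E. d < e" using C by (auto simp: cuts_def)
      have Ene: "E \<noteq> {}" using nt X DE by auto
      show "\<exists>C2\<in>cuts R. fst X \<subset> fst C2 \<and> (\<forall>Z\<in>cuts R. fst X \<subseteq> fst Z \<and> fst Z \<subset> fst C2 \<longrightarrow> Z \<in> ?P)"
      proof (cases "\<exists>m\<in>E. \<forall>e\<in>E. m \<le> e")
        case True
        then obtain m where m: "m \<in> E" "\<forall>e\<in>E. m \<le> e" by blast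
        have mR: "m \<in> R" using m DE by blast
        have Dm: "D = {x\<in>R. x < m}" using arg_cong[OF min_cut[OF C m], of fst] by (simp add: fst_lower_single)
        have "fst X \<subset> fst (upper_cut R {m})" using Dm mR X by (auto simp: fst_upper_single)
        moreover have "Z \<in> ?P" if Z: "Z \<in> cuts R" "fst X \<subseteq> fst Z" "fst Z \<subset> fst (upper_cut R {m})" for Z
        proof -
          have "fst Z = D"
          proof (rule ccontr)
            assume "fst Z \<noteq> D"
            then obtain z where z: "z \<in> fst Z" "z \<notin> D" using Z(2) X by auto
            have zR: "z \<in> R" using z cutsD[OF Z(1)] by blast
            have "z \<le> m" using Z(3) z by (auto simp: fst_upper_single)
            moreover have "z \<in> E" using z zR DE by blast
            ultimately have zm: "z = m" using m by force
            have "fst (upper_cut R {m}) \<subseteq> fst Z"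
            proof
              fix w assume "w \<in> fst (upper_cut R {m})"
              hence w: "w \<in> R" "w \<le> m" by (auto simp: fst_upper_single)
              thus "w \<in> fst Z" using cut_down[OF Z(1) z(1)] zm by blast
            qed
            thus False using Z(3) by blast
          qed
          hence "Z = X" using cut_eqI[OF Z(1), of X] C X by simp
          thus ?thesis using XP by simp
        qed
        ultimately show ?thesis using upper_cut_cuts by blast
      next
        case False
        have hU: "hi (D, E) \<in> U" using rkey[OF ctx C Ene False Uf XU] .
        have nth: "fst (hi (D, E)) \<noteq> UNIV"
        proof -
          obtain e where "e \<in> E" using Ene by blast
          thus ?thesis by (auto simp: fst_hi)
        qed
        obtain C2' where C2': "C2' \<in> cuts UNIV" "fst (hi (D, E)) \<subset> fst C2'"
          "\<forall>Z\<in>cuts UNIV. fst (hi (D, E)) \<subseteq> fst Z \<and> fst Z \<subset> fst C2' \<longrightarrow> Z \<in> U"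
          using rightopenD[OF Up(2) hU nth] by blast
        obtain y where y: "y \<in> fst C2'" "y \<notin> fst (hi (D, E))" using C2'(2) by blast
        then obtain e where e: "e \<in> E" "e \<le> y" by (auto simp: fst_hi not_less)
        have eC2: "e \<in> fst C2'" using cut_down[OF C2'(1) y(1), of e] e by simp
        obtain e' where e': "e' \<in> E" "e' < e" using False e by (meson not_le)
        have eR: "e \<in> R" "e' \<in> R" using e e' DE by blast+
        have "fst X \<subset> fst (lower_cut R {e})"
        proof -
          have "D \<subseteq> {x\<in>R. x < e}" using DE e by auto
          moreover have "e' \<in> {x\<in>R. x < e}" "e' \<notin> D" using e' eR DE by force+
          ultimately show ?thesis using X by (auto simp: fst_lower_single)
        qed
        moreover have "Z \<in> ?P" if Z: "Z \<in> cuts R" "fst X \<subseteq> fst Z" "fst Z \<subset> fst (lower_cut R {e})" for Z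
        proof (cases "fst Z = D")
          case True
          hence "Z = X" using cut_eqI[OF Z(1), of X] C X by simp
          thus ?thesis using XP by simp
        next
          case F: False
          then obtain r where r: "r \<in> fst Z" "r \<notin> D" using Z(2) X by auto
          have rR: "r \<in> R" using r cutsD[OF Z(1)] by blast
          hence rE: "r \<in> E" using r DE by blast
          have "r \<in> snd (hi (D, E))" using rE by (auto simp: hi_def snd_lower_cut uc_def)
          hence l1: "fst (hi (D, E)) \<subset> fst (\<iota> Z)" using fst_mono_strict[OF hi_cuts imC[OF Z(1)] _ fstI[OF Z(1) r(1)]] by blast
          have "e \<notin> fst Z" using Z(3) by (auto simp: fst_lower_single)
          hence "e \<in> snd Z" using cutsD[OF Z(1)] eR by blast
          hence l2: "fst (\<iota> Z) \<subset> fst C2'" using fst_mono_strict[OF imC[OF Z(1)] C2'(1) sndI[OF Z(1)] eC2] by blast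
          have "\<iota> Z \<in> U" using C2'(3) imC[OF Z(1)] l1 l2 by blast
          thus ?thesis using Z(1) by blast
        qed
        ultimately show ?thesis using lower_cut_cuts by blast
      qed
    next
      fix X assume XP: "X \<in> ?P" and nb: "fst X \<noteq> {}"
      obtain D E where X: "X = (D, E)" by (cases X)
      have C: "(D, E) \<in> cuts R" using XP X by blast
      have XU: "\<iota> (D, E) \<in> U" using XP X by blast
      have DE: "D \<union> E = R" "\<forall>d\<in>D. \<forall>e\<in>E. d < e" using C by (auto simp: cuts_def)
      have Dne: "D \<noteq> {}" using nb X by auto
      show "\<exists>L\<in>cuts R. fst L \<subset> fst X \<and> (\<forall>Z\<in>cuts R. fst L \<subset> fst Z \<and> fst Z \<subseteq> fst X \<longrightarrow> Z \<in> ?P)"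
      proof (cases "\<exists>m\<in>D. \<forall>d\<in>D. d \<le> m")
        case True
        then obtain m where m: "m \<in> D" "\<forall>d\<in>D. d \<le> m" by blast
        have mR: "m \<in> R" using m DE by blast
        have Dm: "D = {x\<in>R. x \<le> m}" using arg_cong[OF max_cut[OF C m], of fst] by (simp add: fst_upper_single)
        have "fst (lower_cut R {m}) \<subset> fst X" using Dm mR X by (auto simp: fst_lower_single)
        moreover have "Z \<in> ?P" if Z: "Z \<in> cuts R" "fst (lower_cut R {m}) \<subset> fst Z" "fst Z \<subseteq> fst X" for Z
        proof -
          have "fst Z = D"
          proof (rule ccontr)
            assume "fst Z \<noteq> D"
            hence "m \<notin> fst Z"
            proof -
              assume ne: "fst Z \<noteq> D"
              show "m \<notin> fst Z"
              proof
                assume mZ: "m \<in> fst Z"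
                have "D \<subseteq> fst Z" using Dm cut_down[OF Z(1) mZ] by blast
                thus False using ne Z(3) X by auto
              qed
            qed
            obtain z where z: "z \<in> fst Z" "z \<notin> fst (lower_cut R {m})" using Z(2) by blast
            have zR: "z \<in> R" using z cutsD[OF Z(1)] by blast
            hence "m \<le> z" using z by (auto simp: fst_lower_single)
            hence "m \<in> fst Z" using cut_down[OF Z(1) z(1) mR] by simp
            thus False using \<open>m \<notin> fst Z\<close> by blast
          qed
          hence "Z = X" using cut_eqI[OF Z(1), of X] C X by simp
          thus ?thesis using XP by simp
        qed
        ultimately show ?thesis using lower_cut_cuts by blast
      next
        case False
        have lU: "lo (D, E) \<in> U" using lkey[OF ctx C Dne False Uf XU] .
        have nbl: "fst (lo (D, E)) \<noteq> {}" using Dne by (auto simp: fst_lo)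
        obtain L' where L': "L' \<in> cuts UNIV" "fst L' \<subset> fst (lo (D, E))"
          "\<forall>Z\<in>cuts UNIV. fst L' \<subset> fst Z \<and> fst Z \<subseteq> fst (lo (D, E)) \<longrightarrow> Z \<in> U"
          using leftopenD[OF Up(3) lU nbl] by blast
        obtain y where y: "y \<in> fst (lo (D, E))" "y \<notin> fst L'" using L'(2) by blast
        then obtain d where d: "d \<in> D" "y \<le> d" by (auto simp: fst_lo)
        have dL: "d \<notin> fst L'" using cut_down[OF L'(1), of d y] y d by blast
        hence dL': "d \<in> snd L'" using cutsD[OF L'(1)] by blast
        obtain d' where d': "d' \<in> D" "d < d'" using False d by (meson not_le)
        have dR: "d \<in> R" "d' \<in> R" using d d' DE by blast+
        have "fst (upper_cut R {d}) \<subset> fst X"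
        proof -
          have "{x\<in>R. x \<le> d} \<subseteq> D" using cut_down[OF C, of d, unfolded fst_conv] d(1) by auto
          moreover have "d' \<notin> {x\<in>R. x \<le> d}" using d' by auto
          ultimately show ?thesis using X d' by (auto simp: fst_upper_single)
        qed
        moreover have "Z \<in> ?P" if Z: "Z \<in> cuts R" "fst (upper_cut R {d}) \<subset> fst Z" "fst Z \<subseteq> fst X" for Z
        proof (cases "fst Z = D")
          case True
          hence "Z = X" using cut_eqI[OF Z(1), of X] C X by simp
          thus ?thesis using XP by simp
        next
          case F: False
          then obtain r where r: "r \<in> D" "r \<notin> fst Z" using Z(3) X by auto
          have rR: "r \<in> R" using r DE by blast
          hence rs: "r \<in> snd Z" using r cutsD[OF Z(1)] by blast
          have "r \<in> fst (lo (D, E))" using r by (auto simp: fst_lo)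
          hence l1: "fst (\<iota> Z) \<subset> fst (lo (D, E))" using fst_mono_strict[OF imC[OF Z(1)] lo_cuts sndI[OF Z(1) rs]] by blast
          have "d \<in> fst Z" using Z(2) dR by (auto simp: fst_upper_single)
          hence l2: "fst L' \<subset> fst (\<iota> Z)" using fst_mono_strict[OF L'(1) imC[OF Z(1)] dL' fstI[OF Z(1)]] by blast
          have "\<iota> Z \<in> U" using L'(3) imC[OF Z(1)] l1 l2 by blast
          thus ?thesis using Z(1) by blast
        qed
        ultimately show ?thesis using upper_cut_cuts by blast
      qed
    qed
    show "openin (full_top R) ?P" using op full by (simp add: openin_full_top)
  qed
qed

end


context
  fixes R :: "'a::linordered_field set" and \<iota> :: "'a set \<times> 'a set \<Rightarrow> 'a set \<times> 'a set"
  assumes R: "subfield R" and cv: "val_convex R" and im: "\<iota> \<in> cuts R \<rightarrow> cuts UNIV"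
    and cont: "continuous_map (full_top R) (full_top UNIV) \<iota>"
    and cp: "\<forall>C\<in>cuts R. restrict_cut R (\<iota> C) = C"
begin

lemma imC': "C \<in> cuts R \<Longrightarrow> \<iota> C \<in> cuts UNIV" using im by blast

lemma fstI': "C \<in> cuts R \<Longrightarrow> r \<in> fst C \<Longrightarrow> r \<in> fst (\<iota> C)"
  using cp by (metis IntE fst_conv restrict_cut_def)
lemma sndI': "C \<in> cuts R \<Longrightarrow> r \<in> snd C \<Longrightarrow> r \<in> snd (\<iota> C)"
  using cp by (metis IntE snd_conv restrict_cut_def)

lemma sq: "C \<in> cuts R \<Longrightarrow> fst (lo C) \<subseteq> fst (\<iota> C) \<and> fst (\<iota> C) \<subseteq> fst (hi C)"
  using squeeze[OF _ imC'] cp by blast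

lemma preim:
  assumes "openin (full_top UNIV) U"
  shows "rightopen R {C\<in>cuts R. \<iota> C \<in> U} \<and> leftopen R {C\<in>cuts R. \<iota> C \<in> U}"
proof -
  have Rne: "R \<noteq> {}" using sf_0[OF R] by blast
  have "openin (full_top R) {x \<in> topspace (full_top R). \<iota> x \<in> U}"
    using cont assms unfolding continuous_map_def by blast
  hence "openin (interval_top R) {C\<in>cuts R. \<iota> C \<in> U}"
    using topspace_full_top[OF Rne] by (simp add: openin_full_top)
  thus ?thesis using open_props by blast
qed

lemma Q3: "\<iota> ({}, R) = lower_cut UNIV R"
proof (rule ccontr)
  assume ne: "\<iota> ({}, R) \<noteq> lower_cut UNIV R"
  have C0: "({}, R) \<in> cuts R" by (rule bot_cut)
  have s: "fst (\<iota> ({}, R)) \<subseteq> fst (lower_cut UNIV R)" using sq[OF C0] by (simp add: hi_def)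
  have s': "fst (\<iota> ({}, R)) \<subset> fst (lower_cut UNIV R)"
    using s ne cut_eqI[OF imC'[OF C0] lower_cut_cuts] by blast
  obtain H where H: "is_ball UNIV H" "lower_cut UNIV H = lower_cut UNIV R" "upper_cut UNIV H = upper_cut UNIV R"
    using hull_ball[OF R] by blast
  let ?P = "{C\<in>cuts R. \<iota> C \<in> out_set H}"
  have inP: "({}, R) \<in> ?P" using C0 imC'[OF C0] s' H(2) by (simp add: out_set_def cut_less_def)
  have ro: "rightopen R ?P" using preim[OF open_out_set[OF H(1)]] by blast
  have Rne: "R \<noteq> {}" using sf_0[OF R] by blast
  obtain C2 where C2: "C2 \<in> cuts R" "fst ({}, R) \<subset> fst C2"
      "\<forall>Z\<in>cuts R. fst ({}, R) \<subseteq> fst Z \<and> fst Z \<subset> fst C2 \<longrightarrow> Z \<in> ?P"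
    using rightopenD[OF ro inP] Rne by force
  obtain r where r: "r \<in> fst C2" using C2(2) by auto
  have rR: "r \<in> R" using r cutsD[OF C2(1)] by blast
  have r1: "r - 1 \<in> R" using sf_diff[OF R rR sf_1[OF R]] .
  let ?Z = "upper_cut R {r - 1}"
  have Zc: "?Z \<in> cuts R" by (rule upper_cut_cuts)
  have "fst ?Z \<subseteq> fst C2" using cut_down[OF C2(1) r] by (auto simp: fst_upper_single)
  moreover have "r \<notin> fst ?Z" by (simp add: fst_upper_single)
  ultimately have "fst ?Z \<subset> fst C2" using r by blast
  hence ZP: "\<iota> ?Z \<in> out_set H" using C2(3) Zc by auto
  have ne1: "fst ?Z \<noteq> {}" using r1 by (auto simp: fst_upper_single)
  have ne2: "snd ?Z \<noteq> {}" using rR by (auto simp: snd_upper_cut dc_def intro!: exI[of _ r])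
  have b: "fst (lower_cut UNIV R) \<subseteq> fst (\<iota> ?Z)" "fst (\<iota> ?Z) \<subseteq> fst (upper_cut UNIV R)"
    using mid_bounds[OF Zc ne1 ne2] sq[OF Zc] by blast+
  show False using ZP b H by (auto simp: out_set_def cut_less_def)
qed

lemma Q4: "\<iota> (R, {}) = upper_cut UNIV R"
proof (rule ccontr)
  assume ne: "\<iota> (R, {}) \<noteq> upper_cut UNIV R"
  have C0: "(R, {}) \<in> cuts R" by (rule top_cut)
  have s: "fst (upper_cut UNIV R) \<subseteq> fst (\<iota> (R, {}))" using sq[OF C0] by (simp add: lo_def)
  have s': "fst (upper_cut UNIV R) \<subset> fst (\<iota> (R, {}))"
    using s ne cut_eqI[OF imC'[OF C0] upper_cut_cuts] by blast
  obtain H where H: "is_ball UNIV H" "lower_cut UNIV H = lower_cut UNIV R" "upper_cut UNIV H = upper_cut UNIV R"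
    using hull_ball[OF R] by blast
  let ?P = "{C\<in>cuts R. \<iota> C \<in> out_set H}"
  have inP: "(R, {}) \<in> ?P" using C0 imC'[OF C0] s' H(3) by (simp add: out_set_def cut_less_def)
  have lo': "leftopen R ?P" using preim[OF open_out_set[OF H(1)]] by blast
  have Rne: "R \<noteq> {}" using sf_0[OF R] by blast
  obtain L where L: "L \<in> cuts R" "fst L \<subset> fst (R, {})"
      "\<forall>Z\<in>cuts R. fst L \<subset> fst Z \<and> fst Z \<subseteq> fst (R, {}) \<longrightarrow> Z \<in> ?P"
    using leftopenD[OF lo' inP] Rne by force
  obtain r where r: "r \<in> R" "r \<notin> fst L" using L(2) by auto
  have r1: "r + 1 \<in> R" using sf_add[OF R r(1) sf_1[OF R]] .
  let ?Z = "upper_cut R {r}"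
  have Zc: "?Z \<in> cuts R" by (rule upper_cut_cuts)
  have "fst L \<subseteq> fst ?Z"
  proof
    fix x assume x: "x \<in> fst L"
    have xR: "x \<in> R" using x cutsD[OF L(1)] by blast
    have "\<not> r \<le> x" using cut_down[OF L(1) x r(1)] r(2) by blast
    thus "x \<in> fst ?Z" using xR by (auto simp: fst_upper_single)
  qed
  moreover have "r \<in> fst ?Z" using r by (simp add: fst_upper_single)
  ultimately have "fst L \<subset> fst ?Z" using r by blast
  moreover have "fst ?Z \<subseteq> fst (R, {})" by (auto simp: fst_upper_single)
  ultimately have ZP: "\<iota> ?Z \<in> out_set H" using L(3) Zc by blast
  have ne1: "fst ?Z \<noteq> {}" using r by (auto simp: fst_upper_single)
  have ne2: "snd ?Z \<noteq> {}" using r1 by (auto simp: snd_upper_cut dc_def intro!: exI[of _ "r + 1"])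
  have b: "fst (lower_cut UNIV R) \<subseteq> fst (\<iota> ?Z)" "fst (\<iota> ?Z) \<subseteq> fst (upper_cut UNIV R)"
    using mid_bounds[OF Zc ne1 ne2] sq[OF Zc] by blast+
  show False using ZP b H by (auto simp: out_set_def cut_less_def)
qed

end


lemma mid_R: "subfield R \<Longrightarrow> x \<in> R \<Longrightarrow> y \<in> R \<Longrightarrow> (x + y) / 2 \<in> R"
proof -
  assume R: "subfield R" and x: "x \<in> R" and y: "y \<in> R"
  have "(2::'a) = 1 + 1" by simp
  hence "(2::'a) \<in> R" using sf_add[OF R sf_1[OF R] sf_1[OF R]] by simp
  thus ?thesis using sf_divide[OF R sf_add[OF R x y]] by blast
qed

context
  fixes R :: "'a::linordered_field set" and \<iota> :: "'a set \<times> 'a set \<Rightarrow> 'a set \<times> 'a set"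
  assumes R: "subfield R" and cv: "val_convex R" and im: "\<iota> \<in> cuts R \<rightarrow> cuts UNIV"
    and cont: "continuous_map (full_top R) (full_top UNIV) \<iota>"
    and cp: "\<forall>C\<in>cuts R. restrict_cut R (\<iota> C) = C"
begin

lemmas ctx2 = R cv im cont cp

lemma Q2s_lower:
  assumes aR: "a \<in> R"
  shows "\<iota> (lower_cut R {a}) = upper_cut UNIV {x\<in>R. x < a}"
proof (rule ccontr)
  assume ne: "\<iota> (lower_cut R {a}) \<noteq> upper_cut UNIV {x\<in>R. x < a}"
  let ?C = "lower_cut R {a}"
  have Cc: "?C \<in> cuts R" by (rule lower_cut_cuts)
  have fC: "fst ?C = {x\<in>R. x < a}" by (rule fst_lower_single)
  have sC: "a \<in> snd ?C" using aR by (simp add: snd_lower_cut uc_def)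
  obtain G where G: "is_ball UNIV G" "lower_cut UNIV G = upper_cut UNIV {x\<in>R. x < a}"
      "upper_cut UNIV G = lower_cut UNIV {x\<in>R. a < x}" using bmax_ball[OF R aR] by blast
  have s1: "fst (lower_cut UNIV G) \<subset> fst (\<iota> ?C)"
  proof -
    have "fst (lower_cut UNIV G) \<subseteq> fst (\<iota> ?C)" using sq[OF ctx2 Cc] G(2) fC by (simp add: lo_def)
    moreover have "fst (lower_cut UNIV G) \<noteq> fst (\<iota> ?C)"
    proof
      assume "fst (lower_cut UNIV G) = fst (\<iota> ?C)"
      hence "fst (\<iota> ?C) = fst (upper_cut UNIV {x\<in>R. x < a})" using G(2) by simp
      hence "\<iota> ?C = upper_cut UNIV {x\<in>R. x < a}" by (rule cut_eqI[OF imC'[OF ctx2 Cc] upper_cut_cuts])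
      thus False using ne by blast
    qed
    ultimately show ?thesis by blast
  qed
  have s2: "fst (\<iota> ?C) \<subset> fst (upper_cut UNIV G)"
  proof -
    have a1: "fst (\<iota> ?C) \<subseteq> {y. y < a}"
    proof
      fix y assume "y \<in> fst (\<iota> ?C)"
      hence "y \<in> fst (hi ?C)" using sq[OF ctx2 Cc] by blast
      thus "y \<in> {y. y < a}" using sC by (simp add: fst_hi)
    qed
    have a2: "{y. y \<le> a} \<subseteq> fst (upper_cut UNIV G)" using G(3) by (auto simp: fst_lower_cut uc_def)
    have "a \<in> fst (upper_cut UNIV G)" "a \<notin> fst (\<iota> ?C)" using a1 a2 by auto
    moreover have "fst (\<iota> ?C) \<subseteq> fst (upper_cut UNIV G)"
    proof
      fix x assume "x \<in> fst (\<iota> ?C)"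
      hence "x \<le> a" using a1 by auto
      thus "x \<in> fst (upper_cut UNIV G)" using a2 by blast
    qed
    ultimately show ?thesis by blast
  qed
  let ?P = "{C\<in>cuts R. \<iota> C \<in> int_set G}"
  have "\<iota> ?C \<in> int_set G" unfolding int_set_def cut_less_def using imC'[OF ctx2 Cc] s1 s2 by blast
  hence inP: "?C \<in> ?P" using Cc by blast
  have lo': "leftopen R ?P" using preim[OF ctx2 open_int_set[OF G(1)]] by blast
  have a1R: "a - 1 \<in> R" using sf_diff[OF R aR sf_1[OF R]] .
  have nb: "fst ?C \<noteq> {}" using fC a1R by auto
  obtain L where L: "L \<in> cuts R" "fst L \<subset> fst ?C"
      "\<forall>Z\<in>cuts R. fst L \<subset> fst Z \<and> fst Z \<subseteq> fst ?C \<longrightarrow> Z \<in> ?P"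
    using leftopenD[OF lo' inP nb] by blast
  obtain d where d: "d \<in> fst ?C" "d \<notin> fst L" using L(2) by blast
  have dR: "d \<in> R" "d < a" using d fC by auto
  let ?Z = "upper_cut R {d}"
  have Zc: "?Z \<in> cuts R" by (rule upper_cut_cuts)
  have "fst L \<subseteq> fst ?Z"
  proof
    fix x assume x: "x \<in> fst L"
    have xR: "x \<in> R" using x cutsD[OF L(1)] by blast
    have "\<not> d \<le> x" using cut_down[OF L(1) x dR(1)] d(2) by blast
    thus "x \<in> fst ?Z" using xR by (auto simp: fst_upper_single)
  qed
  moreover have "d \<in> fst ?Z" using dR by (simp add: fst_upper_single)
  ultimately have "fst L \<subset> fst ?Z" using d by blast
  moreover have "fst ?Z \<subseteq> fst ?C"
  proof
    fix x assume "x \<in> fst ?Z"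
    hence "x \<in> R" "x \<le> d" by (simp_all add: fst_upper_single)
    thus "x \<in> fst ?C" using dR fC by simp
  qed
  ultimately have "\<iota> ?Z \<in> int_set G" using L(3) Zc by blast
  hence c1: "fst (lower_cut UNIV G) \<subset> fst (\<iota> ?Z)" unfolding int_set_def cut_less_def by blast
  define m where "m = (d + a) / 2"
  have mR: "m \<in> R" using mid_R[OF R dR(1) aR] by (simp add: m_def)
  have mdm: "d < m" "m < a" using dR by (simp_all add: m_def field_simps)
  have "m \<in> snd ?Z" using mR mdm by (auto simp: snd_upper_cut dc_def)
  hence "m \<in> snd (\<iota> ?Z)" using sndI'[OF ctx2 Zc] by blast
  hence "fst (\<iota> ?Z) \<subseteq> {y. y < m}" using cut_lt[OF imC'[OF ctx2 Zc]] by blast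
  moreover have "{y. y < m} \<subseteq> fst (lower_cut UNIV G)"
  proof
    fix y assume "y \<in> {y. y < m}"
    hence "y \<le> m" by simp
    moreover have "m \<in> {x\<in>R. x < a}" using mR mdm by simp
    ultimately show "y \<in> fst (lower_cut UNIV G)" using G(2) by (auto simp: fst_upper_cut dc_def)
  qed
  ultimately show False using c1 by blast
qed

lemma Q2s_upper:
  assumes aR: "a \<in> R"
  shows "\<iota> (upper_cut R {a}) = lower_cut UNIV {x\<in>R. a < x}"
proof (rule ccontr)
  assume ne: "\<iota> (upper_cut R {a}) \<noteq> lower_cut UNIV {x\<in>R. a < x}"
  let ?C = "upper_cut R {a}"
  have Cc: "?C \<in> cuts R" by (rule upper_cut_cuts)
  have fC: "fst ?C = {x\<in>R. x \<le> a}" by (rule fst_upper_single)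
  have sC: "snd ?C = {x\<in>R. a < x}" using fC cutsD[OF Cc] by auto
  obtain G where G: "is_ball UNIV G" "lower_cut UNIV G = upper_cut UNIV {x\<in>R. x < a}"
      "upper_cut UNIV G = lower_cut UNIV {x\<in>R. a < x}" using bmax_ball[OF R aR] by blast
  have s2: "fst (\<iota> ?C) \<subset> fst (upper_cut UNIV G)"
  proof -
    have "fst (\<iota> ?C) \<subseteq> fst (upper_cut UNIV G)" using sq[OF ctx2 Cc] G(3) sC by (simp add: hi_def)
    moreover have "fst (\<iota> ?C) \<noteq> fst (upper_cut UNIV G)"
    proof
      assume "fst (\<iota> ?C) = fst (upper_cut UNIV G)"
      hence "fst (\<iota> ?C) = fst (lower_cut UNIV {x\<in>R. a < x})" using G(3) by simp
      hence "\<iota> ?C = lower_cut UNIV {x\<in>R. a < x}" by (rule cut_eqI[OF imC'[OF ctx2 Cc] lower_cut_cuts])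
      thus False using ne by blast
    qed
    ultimately show ?thesis by blast
  qed
  have s1: "fst (lower_cut UNIV G) \<subset> fst (\<iota> ?C)"
  proof -
    have a1: "a \<in> fst (\<iota> ?C)" using fstI'[OF ctx2 Cc] fC aR by blast
    have a2: "fst (lower_cut UNIV G) \<subseteq> {y. y < a}" using G(2) by (auto simp: fst_upper_cut dc_def)
    have a3: "fst (lower_cut UNIV G) \<subseteq> fst (\<iota> ?C)"
    proof
      fix y assume "y \<in> fst (lower_cut UNIV G)"
      hence "y \<le> a" using a2 by auto
      thus "y \<in> fst (\<iota> ?C)" using cut_down[OF imC'[OF ctx2 Cc] a1] by blast
    qed
    show ?thesis using a1 a2 a3 by blast
  qed
  let ?P = "{C\<in>cuts R. \<iota> C \<in> int_set G}"
  have "\<iota> ?C \<in> int_set G" unfolding int_set_def cut_less_def using imC'[OF ctx2 Cc] s1 s2 by blast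
  hence inP: "?C \<in> ?P" using Cc by blast
  have ro: "rightopen R ?P" using preim[OF ctx2 open_int_set[OF G(1)]] by blast
  have a1R: "a + 1 \<in> R" using sf_add[OF R aR sf_1[OF R]] .
  have nt: "fst ?C \<noteq> R"
  proof
    assume "fst ?C = R" hence "a + 1 \<in> fst ?C" using a1R by simp
    thus False using fC by simp
  qed
  obtain C2 where C2: "C2 \<in> cuts R" "fst ?C \<subset> fst C2"
      "\<forall>Z\<in>cuts R. fst ?C \<subseteq> fst Z \<and> fst Z \<subset> fst C2 \<longrightarrow> Z \<in> ?P"
    using rightopenD[OF ro inP nt] by blast
  obtain e where e: "e \<in> fst C2" "e \<notin> fst ?C" using C2(2) by blast
  have eR: "e \<in> R" using e cutsD[OF C2(1)] by blast
  hence ea: "a < e" using e fC by auto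
  let ?Z = "lower_cut R {e}"
  have Zc: "?Z \<in> cuts R" by (rule lower_cut_cuts)
  have "fst ?Z \<subseteq> fst C2"
  proof
    fix x assume "x \<in> fst ?Z"
    hence "x \<in> R" "x \<le> e" by (simp_all add: fst_lower_single)
    thus "x \<in> fst C2" using cut_down[OF C2(1) e(1)] by blast
  qed
  moreover have "e \<notin> fst ?Z" by (simp add: fst_lower_single)
  ultimately have "fst ?Z \<subset> fst C2" using e by blast
  moreover have "fst ?C \<subseteq> fst ?Z"
  proof
    fix x assume "x \<in> fst ?C"
    hence "x \<in> R" "x \<le> a" using fC by simp_all
    thus "x \<in> fst ?Z" using ea by (simp add: fst_lower_single)
  qed
  ultimately have "\<iota> ?Z \<in> int_set G" using C2(3) Zc by blast
  hence c1: "fst (\<iota> ?Z) \<subset> fst (upper_cut UNIV G)" unfolding int_set_def cut_less_def by blast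
  define m where "m = (a + e) / 2"
  have mR: "m \<in> R" using mid_R[OF R aR eR] by (simp add: m_def)
  have mdm: "a < m" "m < e" using ea by (simp_all add: m_def field_simps)
  have "m \<in> fst ?Z" using mR mdm by (simp add: fst_lower_single)
  hence mZ: "m \<in> fst (\<iota> ?Z)" using fstI'[OF ctx2 Zc] by blast
  have "fst (upper_cut UNIV G) \<subseteq> fst (\<iota> ?Z)"
  proof
    fix y assume "y \<in> fst (upper_cut UNIV G)"
    hence "y < m" using G(3) mR mdm by (auto simp: fst_lower_cut uc_def)
    thus "y \<in> fst (\<iota> ?Z)" using cut_down[OF imC'[OF ctx2 Zc] mZ] by simp
  qed
  thus False using c1 by blast
qed

lemma Q2:
  assumes B: "is_ball R B0" and nf: "B0 \<noteq> R" and bc: "ball_compl R B0 D E"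
  shows "\<iota> (lower_cut R B0) = upper_cut UNIV D \<and> \<iota> (upper_cut R B0) = lower_cut UNIV E"
proof -
  obtain a S where a: "a \<in> R" "final_seg R S" "B0 = ball_S R S a" "ball_compl R B0 (bD R B0) (bE R B0)"
      "lower_cut R B0 = (bD R B0, B0 \<union> bE R B0)" "upper_cut R B0 = (bD R B0 \<union> B0, bE R B0)"
    using ball_data[OF R B nf] by blast
  have ne: "B0 \<noteq> {}" using ball_nonempty[OF B] .
  have sub: "B0 \<subseteq> R" using a(3) ball_sub by blast
  have DE: "D = bD R B0" "E = bE R B0" using ball_compl_unique[OF bc ne sub] by blast+
  show ?thesis
  proof (cases "S = {}")
    case True
    hence B1: "B0 = {a}" using a(3) ball_singleton[OF a(1)] by simp
    have "D = {x\<in>R. x < a}" "E = {x\<in>R. a < x}" using DE B1 bD_single[of R a] bE_single[of R a] by simp_all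
    thus ?thesis using Q2s_lower[OF a(1)] Q2s_upper[OF a(1)] B1 by simp
  next
    case False
    have l: "upper_cut UNIV (bD R B0) = lower_cut UNIV (B0 \<union> bE R B0)"
      using ball_lohi_lower[OF R cv a(2) a(1) False] a(3,4) nf by blast
    have u: "upper_cut UNIV (bD R B0 \<union> B0) = lower_cut UNIV (bE R B0)"
      using ball_lohi_upper[OF R cv a(2) a(1) False] a(3,4) nf by blast
    let ?C = "lower_cut R B0" and ?C' = "upper_cut R B0"
    have Cc: "?C \<in> cuts R" "?C' \<in> cuts R" by (rule lower_cut_cuts, rule upper_cut_cuts)
    have "lo ?C = hi ?C" using l a(5) by (simp add: lo_def hi_def)
    hence "fst (\<iota> ?C) = fst (lo ?C)" using sq[OF ctx2 Cc(1)] by auto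
    moreover have "lo ?C = upper_cut UNIV D" using a(5) DE by (simp add: lo_def)
    ultimately have "fst (\<iota> ?C) = fst (upper_cut UNIV D)" by simp
    hence e1: "\<iota> ?C = upper_cut UNIV D" by (rule cut_eqI[OF imC'[OF ctx2 Cc(1)] upper_cut_cuts])
    have "lo ?C' = hi ?C'" using u a(6) by (simp add: lo_def hi_def)
    hence "fst (\<iota> ?C') = fst (hi ?C')" using sq[OF ctx2 Cc(2)] by auto
    moreover have "hi ?C' = lower_cut UNIV E" using a(6) DE by (simp add: hi_def)
    ultimately have "fst (\<iota> ?C') = fst (lower_cut UNIV E)" by simp
    hence e2: "\<iota> ?C' = lower_cut UNIV E" by (rule cut_eqI[OF imC'[OF ctx2 Cc(2)] lower_cut_cuts])
    show ?thesis using e1 e2 by blast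
  qed
qed

lemma Q1:
  assumes C: "(D, E) \<in> cuts R" and nb: "\<not> ball_cut R (D, E)"
  shows "\<iota> (D, E) = upper_cut UNIV D \<or> \<iota> (D, E) = lower_cut UNIV E"
proof -
  let ?X = "\<iota> (D, E)"
  have Xc: "?X \<in> cuts UNIV" using imC'[OF ctx2 C] .
  have s: "fst (lo (D, E)) \<subseteq> fst ?X" "fst ?X \<subseteq> fst (hi (D, E))" using sq[OF ctx2 C] by auto
  show ?thesis
  proof (cases "lo (D, E) = hi (D, E)")
    case True
    hence "fst ?X = fst (lo (D, E))" using s by auto
    hence "?X = lo (D, E)" using cut_eqI[OF Xc lo_cuts] by blast
    thus ?thesis by (simp add: lo_def)
  next
    case False
    then obtain G where G: "is_ball UNIV G" "lower_cut UNIV G = lo (D, E)" "upper_cut UNIV G = hi (D, E)"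
      using nonball_gap[OF R C nb] by blast
    show ?thesis
    proof (rule ccontr)
      assume nn: "\<not> ?thesis"
      have "fst (lo (D, E)) \<noteq> fst ?X"
      proof
        assume "fst (lo (D, E)) = fst ?X"
        hence "lo (D, E) = ?X" by (rule cut_eqI[OF lo_cuts Xc])
        thus False using nn by (simp add: lo_def)
      qed
      hence s1: "fst (lower_cut UNIV G) \<subset> fst ?X" using s(1) G(2) by auto
      have "fst (hi (D, E)) \<noteq> fst ?X"
      proof
        assume "fst (hi (D, E)) = fst ?X"
        hence "hi (D, E) = ?X" by (rule cut_eqI[OF hi_cuts Xc])
        thus False using nn by (simp add: hi_def)
      qed
      hence s2: "fst ?X \<subset> fst (upper_cut UNIV G)" using s(2) G(3) by auto
      let ?P = "{C\<in>cuts R. \<iota> C \<in> int_set G}"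
      have "\<iota> (D, E) \<in> int_set G" unfolding int_set_def cut_less_def using Xc s1 s2 by blast
      hence inP: "(D, E) \<in> ?P" using C by blast
      have ro: "rightopen R ?P" using preim[OF ctx2 open_int_set[OF G(1)]] by blast
      have Ene: "E \<noteq> {}" using not_ball_cut_ne[OF R C nb] by blast
      have DE: "D \<union> E = R" "\<forall>d\<in>D. \<forall>e\<in>E. d < e" using C by (auto simp: cuts_def)
      have nt: "fst (D, E) \<noteq> R" using Ene DE by auto
      obtain C2 where C2: "C2 \<in> cuts R" "fst (D, E) \<subset> fst C2"
          "\<forall>Z\<in>cuts R. fst (D, E) \<subseteq> fst Z \<and> fst Z \<subset> fst C2 \<longrightarrow> Z \<in> ?P"
        using rightopenD[OF ro inP nt] by blast
      obtain e where e: "e \<in> fst C2" "e \<notin> D" using C2(2) by auto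
      have eR: "e \<in> R" using e cutsD[OF C2(1)] by blast
      hence eE: "e \<in> E" using e DE by blast
      have nm: "\<not> (\<exists>m\<in>E. \<forall>e\<in>E. m \<le> e)"
      proof
        assume "\<exists>m\<in>E. \<forall>e\<in>E. m \<le> e"
        then obtain m where m: "m \<in> E" "\<forall>e\<in>E. m \<le> e" by blast
        have "(D, E) = lower_cut R {m}" using min_cut[OF C m] .
        moreover have "is_ball R {m}" using is_ball_single m DE by blast
        ultimately have "ball_cut R (D, E)" unfolding ball_cut_def by blast
        thus False using nb by blast
      qed
      obtain e' where e': "e' \<in> E" "e' < e" using nm eE by (meson not_le)
      have e'R: "e' \<in> R" using e' DE by blast
      let ?Z = "upper_cut R {e'}"
      have Zc: "?Z \<in> cuts R" by (rule upper_cut_cuts)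
      have "D \<subseteq> fst ?Z"
      proof
        fix x assume x: "x \<in> D"
        hence "x \<in> R" "x \<le> e'" using DE e' by (blast, meson less_imp_le)
        thus "x \<in> fst ?Z" by (simp add: fst_upper_single)
      qed
      moreover have "fst ?Z \<subset> fst C2"
      proof -
        have "fst ?Z \<subseteq> fst C2"
        proof
          fix x assume "x \<in> fst ?Z"
          hence "x \<in> R" "x \<le> e" using e' by (simp_all add: fst_upper_single)
          thus "x \<in> fst C2" using cut_down[OF C2(1) e(1)] by blast
        qed
        moreover have "e \<notin> fst ?Z" using e' by (auto simp: fst_upper_single)
        ultimately show ?thesis using e by blast
      qed
      ultimately have "\<iota> ?Z \<in> int_set G" using C2(3) Zc by auto
      hence c1: "fst (\<iota> ?Z) \<subset> fst (upper_cut UNIV G)" unfolding int_set_def cut_less_def by blast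
      have "e' \<in> snd (hi (D, E))" using e' by (auto simp: hi_def snd_lower_cut uc_def)
      moreover have "e' \<in> fst (\<iota> ?Z)" using fstI'[OF ctx2 Zc] e'R by (simp add: fst_upper_single)
      ultimately have "fst (hi (D, E)) \<subset> fst (\<iota> ?Z)" using fst_mono_strict[OF hi_cuts imC'[OF ctx2 Zc]] by blast
      thus False using c1 G(3) by auto
    qed
  qed
qed

end


theorem proposition4p8:
  fixes R :: "'a::linordered_field set"
    and \<iota> :: "'a set \<times> 'a set \<Rightarrow> 'a set \<times> 'a set"
  assumes "subfield R"
    and "val_convex R"
    and "\<iota> \<in> cuts R \<rightarrow> cuts UNIV"
  shows "(inj_on \<iota> (cuts R)
          \<and> continuous_map (full_top R) (full_top UNIV) \<iota>
          \<and> (\<forall>C\<in>cuts R. restrict_cut R (\<iota> C) = C))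
     \<longleftrightarrow>
         ((\<forall>D E. (D, E) \<in> cuts R \<and> \<not> ball_cut R (D, E) \<longrightarrow>
              \<iota> (D, E) = upper_cut UNIV D \<or> \<iota> (D, E) = lower_cut UNIV E)
          \<and> (\<forall>B0 D E. is_ball R B0 \<and> B0 \<noteq> R \<and> ball_compl R B0 D E \<longrightarrow>
              \<iota> (lower_cut R B0) = upper_cut UNIV D \<and> \<iota> (upper_cut R B0) = lower_cut UNIV E)
          \<and> \<iota> ({}, R) = lower_cut UNIV R
          \<and> \<iota> (R, {}) = upper_cut UNIV R)"
proof (rule iffI)
  assume H: "inj_on \<iota> (cuts R) \<and> continuous_map (full_top R) (full_top UNIV) \<iota>
          \<and> (\<forall>C\<in>cuts R. restrict_cut R (\<iota> C) = C)"
  have c: "continuous_map (full_top R) (full_top UNIV) \<iota>" and cp: "\<forall>C\<in>cuts R. restrict_cut R (\<iota> C) = C"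
    using H by blast+
  note ctx3 = assms(1,2,3) c cp
  show "(\<forall>D E. (D, E) \<in> cuts R \<and> \<not> ball_cut R (D, E) \<longrightarrow>
              \<iota> (D, E) = upper_cut UNIV D \<or> \<iota> (D, E) = lower_cut UNIV E)
          \<and> (\<forall>B0 D E. is_ball R B0 \<and> B0 \<noteq> R \<and> ball_compl R B0 D E \<longrightarrow>
              \<iota> (lower_cut R B0) = upper_cut UNIV D \<and> \<iota> (upper_cut R B0) = lower_cut UNIV E)
          \<and> \<iota> ({}, R) = lower_cut UNIV R
          \<and> \<iota> (R, {}) = upper_cut UNIV R"
  proof (intro conjI)
    show "\<forall>D E. (D, E) \<in> cuts R \<and> \<not> ball_cut R (D, E) \<longrightarrow>
              \<iota> (D, E) = upper_cut UNIV D \<or> \<iota> (D, E) = lower_cut UNIV E"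
      using Q1[OF ctx3] by blast
    show "\<forall>B0 D E. is_ball R B0 \<and> B0 \<noteq> R \<and> ball_compl R B0 D E \<longrightarrow>
              \<iota> (lower_cut R B0) = upper_cut UNIV D \<and> \<iota> (upper_cut R B0) = lower_cut UNIV E"
      using Q2[OF ctx3] by blast
    show "\<iota> ({}, R) = lower_cut UNIV R" using Q3[OF ctx3] .
    show "\<iota> (R, {}) = upper_cut UNIV R" using Q4[OF ctx3] .
  qed
next
  assume H: "(\<forall>D E. (D, E) \<in> cuts R \<and> \<not> ball_cut R (D, E) \<longrightarrow>
              \<iota> (D, E) = upper_cut UNIV D \<or> \<iota> (D, E) = lower_cut UNIV E)
          \<and> (\<forall>B0 D E. is_ball R B0 \<and> B0 \<noteq> R \<and> ball_compl R B0 D E \<longrightarrow>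
              \<iota> (lower_cut R B0) = upper_cut UNIV D \<and> \<iota> (upper_cut R B0) = lower_cut UNIV E)
          \<and> \<iota> ({}, R) = lower_cut UNIV R
          \<and> \<iota> (R, {}) = upper_cut UNIV R"
  have P1: "\<forall>D E. (D, E) \<in> cuts R \<and> \<not> ball_cut R (D, E) \<longrightarrow>
              \<iota> (D, E) = upper_cut UNIV D \<or> \<iota> (D, E) = lower_cut UNIV E" using H by blast
  have P2: "\<forall>B0 D E. is_ball R B0 \<and> B0 \<noteq> R \<and> ball_compl R B0 D E \<longrightarrow>
              \<iota> (lower_cut R B0) = upper_cut UNIV D \<and> \<iota> (upper_cut R B0) = lower_cut UNIV E" using H by blast
  have P3: "\<iota> ({}, R) = lower_cut UNIV R" and P4: "\<iota> (R, {}) = upper_cut UNIV R" using H by blast+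
  note ctx4 = assms(1,2,3) P1 P2 P3 P4
  have "inj_on \<iota> (cuts R)" by (rule inj[OF ctx4])
  moreover have "continuous_map (full_top R) (full_top UNIV) \<iota>" by (rule cont[OF ctx4])
  moreover have "\<forall>C\<in>cuts R. restrict_cut R (\<iota> C) = C" using compat[OF ctx4] by blast
  ultimately show "inj_on \<iota> (cuts R) \<and> continuous_map (full_top R) (full_top UNIV) \<iota>
          \<and> (\<forall>C\<in>cuts R. restrict_cut R (\<iota> C) = C)" by blast
qed

end
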